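(* Consider the VNF-node placement and capacity allocation problem P1 (defined in the context). The RP-MCA algorithm (defined in the context) outputs a feasible solution $(\mathcal{U},\boldsymbol{\lambda})$ whose value $J_1(\mathcal{U},\boldsymbol{\lambda})$ is at least $\frac12(1-1/e)\,OPT(P1)$, where $OPT(P1)$ is the optimal value of P1; i.e., RP-MCA has approximation ratio $\frac12(1-1/e)$ for P1.
   Context: Data: finite node set $\mathcal{V}$; finite flow set $\mathcal{F}$; each flow $f$ has rate $\lambda_f>0$ and path node set $\mathcal{V}_f\subseteq\mathcal{V}$; each node $v$ has capacity $c_v>0$ and cost $b_v>0$; budget $B$; it is assumed $\max_f\lambda_f\le\min_v c_v$. Problem P1: maximize $J_1(\mathcal{U},\boldsymbol{\lambda})=\sum_{f\in\mathcal{F}}\lambda_f\mathbf{1}\{\sum_{v\in\mathcal{V}_f\cap\mathcal{U}}\lambda_f^v\ge\lambda_f\}$ over $\mathcal{U}\subseteq\mathcal{V}$ and nonnegative $\boldsymbol{\lambda}=(\lambda_f^v)$ subject to $\sum_f\lambda_f^v\le c_v$ for $v\in\mathcal{U}$, $\lambda_f^v=0$ for $v\notin\mathcal{U}$, and $\sum_{v\in\mathcal{U}}b_v\le B$. Relaxed value: $R_3(\mathcal{U})$ is the optimal value of Q2 for $\mathcal{U}$: maximize $\sum_f\sum_{v\in\mathcal{V}_f\cap\mathcal{U}}\lambda_f^v$ over nonnegative $\boldsymbol{\lambda}$ with the same capacity constraints, $\lambda_f^v=0$ for $v\notin\mathcal{U}$, and $\sum_{v\in\mathcal{U}}\lambda_f^v\le\lambda_f$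 for all $f$. RP-MCA: (1) Placement: choose $\mathcal{U}$ by approximately maximizing $R_3(\mathcal{U})$ subject to $\sum_{v\in\mathcal{U}}b_v\le B$; if all costs equal $b$, use Submodular Greedy (start from $\emptyset$ and $\lfloor B/b\rfloor$ times add a node with the largest marginal increase of $R_3$, ties broken uniformly at random); in general use Enumeration-based Greedy: let $\mathcal{U}_1$ be the best (largest $R_3$) budget-feasible subset of cardinality one or two; for each budget-feasible subset of cardinality three, greedily augment it by repeatedly adding a node $u$ maximizing $(R_3(\mathcal{V}'\cup\{u\})-R_3(\mathcal{V}'))/b_u$ among those keeping the budget satisfied, and let $\mathcal{U}_2$ be the best augmented set; output the better of $\mathcal{U}_1,\mathcal{U}_2$. (2) Capacity allocation: apply the MCA algorithm to $\mathcal{U}$. MCA: write $\mathcal{U}_f=\mathcal{V}_f\cap\mathcal{U}$. Phase I: take an optimal basic solution of Q2 for $\mathcal{U}$, $y_f^v=\lambda_f^v/\lambda_f$; fully assign each flow with $y_f^v=1$ to $v$; form the bipartite forest $G'$ with edges $(f,v)$ of weight $y_f^v$ for $0<y_f^v<1$; until $G'$ is empty, repeat: Step 1 — while some node $v$ of $G'$ has a single incident edge $(f,v)$, with $r'_v$ the total rate of flows fully assigned to $v$: if $r'_v\ge\lambda_f^v$ set $y_f^v=0$ and delete $v$, else unassign the flows fully assigned to $v$, assign $f$ fully to $v$ (cancelling its other fractions) and delete $v,f$ and incident edges; Step 2 — pick a node $v_1$ of degree $\ge2$ and the longest paths $p_1,p_2$ from $v_1$ through two of its edges, change weights so that the rate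 changes $\lambda_f\Delta y_f^v$ along $p_1$ are $+\delta,-\delta,\dots$ and along $p_2$ are $-\delta,+\delta,\dots$, increase $\delta$ until some weight hits $0$ or $1$, delete zero edges and fully assign flows with weight $1$. Phase II: for each unassigned flow $f$ with total remaining capacity on $\mathcal{U}_f$ at least $\lambda_f$, split and fully assign it to nodes of $\mathcal{U}_f$. The output $\boldsymbol{\lambda}$ consists of the fully assigned flows. *)

theory Defs
  imports "HOL-Analysis.Analysis"
begin

text \<open>Problem data: node set V, flow set F, rates lam, pth node sets pth,
  capacities cap, costs cost, budget B.  An allocation x f v stands for the rate
  lambda_f^v of flow f processed at node v.\<close>

section \<open>Problem P1\<close>

definition J1 :: "'f set \<Rightarrow> ('f \<Rightarrow> real) \<Rightarrow> ('f \<Rightarrow> 'v set) \<Rightarrow> 'v set \<Rightarrow> ('f \<Rightarrow> 'v \<Rightarrow> real) \<Rightarrow> real" where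
  "J1 F lam pth U x =
     (\<Sum>f\<in>F. lam f * (if (\<Sum>v\<in>pth f \<inter> U. x f v) \<ge> lam f then 1 else 0))"

definition feasible_P1 ::
  "'v set \<Rightarrow> 'f set \<Rightarrow> ('v \<Rightarrow> real) \<Rightarrow> ('v \<Rightarrow> real) \<Rightarrow> real \<Rightarrow> 'v set \<Rightarrow> ('f \<Rightarrow> 'v \<Rightarrow> real) \<Rightarrow> bool" where
  "feasible_P1 V F cap cost B U x \<longleftrightarrow>
     U \<subseteq> V \<and>
     (\<forall>f\<in>F. \<forall>v\<in>V. 0 \<le> x f v) \<and>
     (\<forall>v\<in>U. (\<Sum>f\<in>F. x f v) \<le> cap v) \<and>
     (\<forall>f\<in>F. \<forall>v\<in>V - U. x f v = 0) \<and>
     (\<Sum>v\<in>U. cost v) \<le> B"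

definition OPT_P1 ::
  "'v set \<Rightarrow> 'f set \<Rightarrow> ('f \<Rightarrow> real) \<Rightarrow> ('f \<Rightarrow> 'v set) \<Rightarrow> ('v \<Rightarrow> real) \<Rightarrow> ('v \<Rightarrow> real) \<Rightarrow> real \<Rightarrow> real" where
  "OPT_P1 V F lam pth cap cost B =
     Sup {J1 F lam pth U x | U x. feasible_P1 V F cap cost B U x}"

section \<open>Relaxed problem Q2 and R3\<close>

text \<open>The LP variables are lambda_f^v for f in F and v in U intersected with
  the pth of f; all other entries are zero.\<close>

definition feasible_Q2 ::
  "'v set \<Rightarrow> 'f set \<Rightarrow> ('f \<Rightarrow> real) \<Rightarrow> ('f \<Rightarrow> 'v set) \<Rightarrow> ('v \<Rightarrow> real) \<Rightarrow> 'v set \<Rightarrow> ('f \<Rightarrow> 'v \<Rightarrow> real) \<Rightarrow> bool" where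
  "feasible_Q2 V F lam pth cap U x \<longleftrightarrow>
     (\<forall>f\<in>F. \<forall>v\<in>V. 0 \<le> x f v) \<and>
     (\<forall>v\<in>U. (\<Sum>f\<in>F. x f v) \<le> cap v) \<and>
     (\<forall>f\<in>F. \<forall>v\<in>V. v \<notin> U \<inter> pth f \<longrightarrow> x f v = 0) \<and>
     (\<forall>f\<in>F. (\<Sum>v\<in>U. x f v) \<le> lam f)"

definition Q2_obj :: "'f set \<Rightarrow> ('f \<Rightarrow> 'v set) \<Rightarrow> 'v set \<Rightarrow> ('f \<Rightarrow> 'v \<Rightarrow> real) \<Rightarrow> real" where
  "Q2_obj F pth U x = (\<Sum>f\<in>F. \<Sum>v\<in>pth f \<inter> U. x f v)"

definition R3 ::
  "'v set \<Rightarrow> 'f set \<Rightarrow> ('f \<Rightarrow> real) \<Rightarrow> ('f \<Rightarrow> 'v set) \<Rightarrow> ('v \<Rightarrow> real) \<Rightarrow> 'v set \<Rightarrow> real" where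
  "R3 V F lam pth cap U = Sup (Q2_obj F pth U ` {x. feasible_Q2 V F lam pth cap U x})"

text \<open>Basic (feasible) solution of Q2: feasible, and the constraints active at x
  have full rank, i.e. the only direction d (on the LP variables) annihilated by
  all active constraints is d = 0.\<close>

definition basic_Q2 ::
  "'v set \<Rightarrow> 'f set \<Rightarrow> ('f \<Rightarrow> real) \<Rightarrow> ('f \<Rightarrow> 'v set) \<Rightarrow> ('v \<Rightarrow> real) \<Rightarrow> 'v set \<Rightarrow> ('f \<Rightarrow> 'v \<Rightarrow> real) \<Rightarrow> bool" where
  "basic_Q2 V F lam pth cap U x \<longleftrightarrow>
     feasible_Q2 V F lam pth cap U x \<and>
     (\<forall>d::'f \<Rightarrow> 'v \<Rightarrow> real.
        (\<forall>f\<in>F. \<forall>v\<in>V. v \<notin> U \<inter> pth f \<longrightarrow> d f v = 0) \<and>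
        (\<forall>f\<in>F. \<forall>v\<in>U \<inter> pth f. x f v = 0 \<longrightarrow> d f v = 0) \<and>
        (\<forall>v\<in>U. (\<Sum>f\<in>F. x f v) = cap v \<longrightarrow> (\<Sum>f\<in>F. d f v) = 0) \<and>
        (\<forall>f\<in>F. (\<Sum>v\<in>U. x f v) = lam f \<longrightarrow> (\<Sum>v\<in>U. d f v) = 0)
        \<longrightarrow> (\<forall>f\<in>F. \<forall>v\<in>V. d f v = 0))"

definition optimal_basic_Q2 ::
  "'v set \<Rightarrow> 'f set \<Rightarrow> ('f \<Rightarrow> real) \<Rightarrow> ('f \<Rightarrow> 'v set) \<Rightarrow> ('v \<Rightarrow> real) \<Rightarrow> 'v set \<Rightarrow> ('f \<Rightarrow> 'v \<Rightarrow> real) \<Rightarrow> bool" where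
  "optimal_basic_Q2 V F lam pth cap U x \<longleftrightarrow>
     basic_Q2 V F lam pth cap U x \<and> Q2_obj F pth U x = R3 V F lam pth cap U"

section \<open>Placement\<close>

text \<open>Submodular greedy (equal costs): greedy_reach k W means W can be the set
  after k greedy iterations (any tie-breaking).\<close>

inductive greedy_reach ::
  "'v set \<Rightarrow> 'f set \<Rightarrow> ('f \<Rightarrow> real) \<Rightarrow> ('f \<Rightarrow> 'v set) \<Rightarrow> ('v \<Rightarrow> real) \<Rightarrow> nat \<Rightarrow> 'v set \<Rightarrow> bool"
  for V F lam pth cap where
  start: "greedy_reach V F lam pth cap 0 {}"
| step: "greedy_reach V F lam pth cap k W \<Longrightarrow> u \<in> V - W \<Longrightarrow>
     (\<forall>w\<in>V - W. R3 V F lam pth cap (insert w W) - R3 V F lam pth cap W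
                \<le> R3 V F lam pth cap (insert u W) - R3 V F lam pth cap W) \<Longrightarrow>
     greedy_reach V F lam pth cap (Suc k) (insert u W)"

text \<open>floor(B/b) iterations; if the nodes run out earlier, the greedy stops.\<close>

definition submodular_greedy ::
  "'v set \<Rightarrow> 'f set \<Rightarrow> ('f \<Rightarrow> real) \<Rightarrow> ('f \<Rightarrow> 'v set) \<Rightarrow> ('v \<Rightarrow> real) \<Rightarrow> real \<Rightarrow> real \<Rightarrow> 'v set \<Rightarrow> bool" where
  "submodular_greedy V F lam pth cap b B U \<longleftrightarrow>
     greedy_reach V F lam pth cap (min (nat \<lfloor>B / b\<rfloor>) (card V)) U"

inductive aug_reach ::
  "'v set \<Rightarrow> 'f set \<Rightarrow> ('f \<Rightarrow> real) \<Rightarrow> ('f \<Rightarrow> 'v set) \<Rightarrow> ('v \<Rightarrow> real) \<Rightarrow> ('v \<Rightarrow> real) \<Rightarrow> real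
     \<Rightarrow> 'v set \<Rightarrow> 'v set \<Rightarrow> bool"
  for V F lam pth cap cost B where
  start: "aug_reach V F lam pth cap cost B S S"
| step: "aug_reach V F lam pth cap cost B S W \<Longrightarrow> u \<in> V - W \<Longrightarrow> sum cost W + cost u \<le> B \<Longrightarrow>
     (\<forall>w\<in>V - W. sum cost W + cost w \<le> B \<longrightarrow>
         (R3 V F lam pth cap (insert w W) - R3 V F lam pth cap W) / cost w
       \<le> (R3 V F lam pth cap (insert u W) - R3 V F lam pth cap W) / cost u) \<Longrightarrow>
     aug_reach V F lam pth cap cost B S (insert u W)"

definition aug_final ::
  "'v set \<Rightarrow> 'f set \<Rightarrow> ('f \<Rightarrow> real) \<Rightarrow> ('f \<Rightarrow> 'v set) \<Rightarrow> ('v \<Rightarrow> real) \<Rightarrow> ('v \<Rightarrow> real) \<Rightarrow> real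
     \<Rightarrow> 'v set \<Rightarrow> 'v set \<Rightarrow> bool" where
  "aug_final V F lam pth cap cost B S W \<longleftrightarrow>
     aug_reach V F lam pth cap cost B S W \<and> \<not> (\<exists>u\<in>V - W. sum cost W + cost u \<le> B)"

definition best_in ::
  "'v set \<Rightarrow> 'f set \<Rightarrow> ('f \<Rightarrow> real) \<Rightarrow> ('f \<Rightarrow> 'v set) \<Rightarrow> ('v \<Rightarrow> real) \<Rightarrow> 'v set set \<Rightarrow> 'v set \<Rightarrow> bool" where
  "best_in V F lam pth cap C U \<longleftrightarrow>
     U \<in> C \<and> (\<forall>W\<in>C. R3 V F lam pth cap W \<le> R3 V F lam pth cap U)"

text \<open>Enumeration-based greedy.  If no budget-feasible set of cardinality one or
  two exists (and hence none of cardinality three), the output is the empty set.\<close>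

definition enum_greedy ::
  "'v set \<Rightarrow> 'f set \<Rightarrow> ('f \<Rightarrow> real) \<Rightarrow> ('f \<Rightarrow> 'v set) \<Rightarrow> ('v \<Rightarrow> real) \<Rightarrow> ('v \<Rightarrow> real) \<Rightarrow> real
     \<Rightarrow> 'v set \<Rightarrow> bool" where
  "enum_greedy V F lam pth cap cost B U \<longleftrightarrow>
     (let S12 = {S. S \<subseteq> V \<and> card S \<in> {1, 2} \<and> sum cost S \<le> B};
          T3 = {S. S \<subseteq> V \<and> card S = 3 \<and> sum cost S \<le> B}
      in \<exists>aug. (\<forall>S\<in>T3. aug_final V F lam pth cap cost B S (aug S)) \<and>
           ((S12 = {} \<and> aug ` T3 = {} \<and> U = {}) \<or>
            (S12 \<noteq> {} \<and> aug ` T3 = {} \<and> best_in V F lam pth cap S12 U) \<or>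
            (S12 = {} \<and> aug ` T3 \<noteq> {} \<and> best_in V F lam pth cap (aug ` T3) U) \<or>
            (\<exists>U1 U2. best_in V F lam pth cap S12 U1 \<and> best_in V F lam pth cap (aug ` T3) U2 \<and>
               U \<in> {U1, U2} \<and>
               R3 V F lam pth cap U = max (R3 V F lam pth cap U1) (R3 V F lam pth cap U2))))"

definition placement ::
  "'v set \<Rightarrow> 'f set \<Rightarrow> ('f \<Rightarrow> real) \<Rightarrow> ('f \<Rightarrow> 'v set) \<Rightarrow> ('v \<Rightarrow> real) \<Rightarrow> ('v \<Rightarrow> real) \<Rightarrow> real
     \<Rightarrow> 'v set \<Rightarrow> bool" where
  "placement V F lam pth cap cost B U \<longleftrightarrow>
     (if \<exists>b. \<forall>v\<in>V. cost v = b
      then \<exists>b. (\<forall>v\<in>V. cost v = b) \<and> submodular_greedy V F lam pth cap b B U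
      else enum_greedy V F lam pth cap cost B U)"

section \<open>MCA, Phase I\<close>

text \<open>State: (asg, y), asg f = Some v iff f is fully assigned to v; y are the
  weights.  The bipartite graph G' has the edges (f,v) with 0 < y f v < 1.\<close>

definition Gedges :: "'f set \<Rightarrow> ('f \<Rightarrow> 'v set) \<Rightarrow> 'v set \<Rightarrow> ('f \<Rightarrow> 'v \<Rightarrow> real) \<Rightarrow> ('f \<times> 'v) set" where
  "Gedges F pth U y = {(f, v). f \<in> F \<and> v \<in> U \<inter> pth f \<and> 0 < y f v \<and> y f v < 1}"

text \<open>Vertices of G' are Inl f (flows) and Inr v (VNF nodes).\<close>

definition adjG :: "('f \<times> 'v) set \<Rightarrow> 'f + 'v \<Rightarrow> 'f + 'v \<Rightarrow> bool" where
  "adjG E a b \<longleftrightarrow>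
     (isl a \<and> \<not> isl b \<and> (projl a, projr b) \<in> E) \<or> (\<not> isl a \<and> isl b \<and> (projl b, projr a) \<in> E)"

definition Gedge_of :: "'f + 'v \<Rightarrow> 'f + 'v \<Rightarrow> 'f \<times> 'v" where
  "Gedge_of a b = (if isl a then (projl a, projr b) else (projl b, projr a))"

definition is_Gpath :: "('f \<times> 'v) set \<Rightarrow> 'v \<Rightarrow> 'f \<Rightarrow> ('f + 'v) list \<Rightarrow> bool" where
  "is_Gpath E v1 f1 xs \<longleftrightarrow>
     2 \<le> length xs \<and> xs ! 0 = Inr v1 \<and> xs ! 1 = Inl f1 \<and> distinct xs \<and>
     (\<forall>i. Suc i < length xs \<longrightarrow> adjG E (xs ! i) (xs ! Suc i))"

definition longest_Gpath :: "('f \<times> 'v) set \<Rightarrow> 'v \<Rightarrow> 'f \<Rightarrow> ('f + 'v) list \<Rightarrow> bool" where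
  "longest_Gpath E v1 f1 xs \<longleftrightarrow>
     is_Gpath E v1 f1 xs \<and> (\<forall>ys. is_Gpath E v1 f1 ys \<longrightarrow> length ys \<le> length xs)"

text \<open>Rate change on edge (f,v) caused by the alternating pattern s, -s, s, ...
  along the pth xs.\<close>

definition rate_change :: "('f + 'v) list \<Rightarrow> real \<Rightarrow> 'f \<Rightarrow> 'v \<Rightarrow> real" where
  "rate_change xs s f v =
     (\<Sum>i<length xs - 1. if Gedge_of (xs ! i) (xs ! Suc i) = (f, v) then s * (-1) ^ i else 0)"

definition assigned_rate :: "'f set \<Rightarrow> ('f \<Rightarrow> real) \<Rightarrow> ('f \<Rightarrow> 'v option) \<Rightarrow> 'v \<Rightarrow> real" where
  "assigned_rate F lam asg v = (\<Sum>g\<in>{g\<in>F. asg g = Some v}. lam g)"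

inductive mca1_step ::
  "'f set \<Rightarrow> ('f \<Rightarrow> real) \<Rightarrow> ('f \<Rightarrow> 'v set) \<Rightarrow> 'v set
     \<Rightarrow> ('f \<Rightarrow> 'v option) \<times> ('f \<Rightarrow> 'v \<Rightarrow> real) \<Rightarrow> ('f \<Rightarrow> 'v option) \<times> ('f \<Rightarrow> 'v \<Rightarrow> real) \<Rightarrow> bool"
  for F lam pth U where
  step1_drop:
    "{g. (g, v) \<in> Gedges F pth U y} = {f} \<Longrightarrow>
     assigned_rate F lam asg v \<ge> lam f * y f v \<Longrightarrow>
     mca1_step F lam pth U (asg, y) (asg, y(f := (y f)(v := 0)))"
| step1_swap:
    "{g. (g, v) \<in> Gedges F pth U y} = {f} \<Longrightarrow>
     assigned_rate F lam asg v < lam f * y f v \<Longrightarrow>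
     asg' = (\<lambda>g. if g = f then Some v else if asg g = Some v then None else asg g) \<Longrightarrow>
     mca1_step F lam pth U (asg, y) (asg', y(f := (\<lambda>_. 0)))"
| step2:
    "\<not> (\<exists>v f. {g. (g, v) \<in> Gedges F pth U y} = {f}) \<Longrightarrow>
     (f1, v1) \<in> Gedges F pth U y \<Longrightarrow> (f2, v1) \<in> Gedges F pth U y \<Longrightarrow> f1 \<noteq> f2 \<Longrightarrow>
     longest_Gpath (Gedges F pth U y) v1 f1 p1 \<Longrightarrow>
     longest_Gpath (Gedges F pth U y) v1 f2 p2 \<Longrightarrow>
     0 < \<delta> \<Longrightarrow>
     y' = (\<lambda>f v. y f v + \<delta> * (rate_change p1 1 f v + rate_change p2 (-1) f v) / lam f) \<Longrightarrow>
     (\<forall>(f, v)\<in>Gedges F pth U y. 0 \<le> y' f v \<and> y' f v \<le> 1) \<Longrightarrow>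
     (\<exists>(f, v)\<in>Gedges F pth U y. y' f v = 0 \<or> y' f v = 1) \<Longrightarrow>
     H = {g. \<exists>v. (g, v) \<in> Gedges F pth U y \<and> y' g v = 1} \<Longrightarrow>
     (\<forall>g. if g \<in> H then (\<exists>v. (g, v) \<in> Gedges F pth U y \<and> y' g v = 1 \<and> asg' g = Some v)
          else asg' g = asg g) \<Longrightarrow>
     y'' = (\<lambda>g. if g \<in> H then (\<lambda>_. 0) else y' g) \<Longrightarrow>
     mca1_step F lam pth U (asg, y) (asg', y'')"

section \<open>MCA, Phase II\<close>

definition remaining_cap :: "'f set \<Rightarrow> ('v \<Rightarrow> real) \<Rightarrow> ('f \<Rightarrow> 'v \<Rightarrow> real) \<Rightarrow> 'v \<Rightarrow> real" where
  "remaining_cap F cap x v = cap v - (\<Sum>g\<in>F. x g v)"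

inductive mca2_step ::
  "'f set \<Rightarrow> ('f \<Rightarrow> real) \<Rightarrow> ('f \<Rightarrow> 'v set) \<Rightarrow> ('v \<Rightarrow> real) \<Rightarrow> 'v set
     \<Rightarrow> ('f \<Rightarrow> 'v \<Rightarrow> real) \<times> 'f set \<Rightarrow> ('f \<Rightarrow> 'v \<Rightarrow> real) \<times> 'f set \<Rightarrow> bool"
  for F lam pth cap U where
  assign:
    "f \<in> T \<Longrightarrow>
     (\<Sum>v\<in>U \<inter> pth f. remaining_cap F cap x v) \<ge> lam f \<Longrightarrow>
     (\<forall>v\<in>U \<inter> pth f. 0 \<le> s v \<and> s v \<le> remaining_cap F cap x v) \<Longrightarrow>
     (\<forall>v. v \<notin> U \<inter> pth f \<longrightarrow> s v = 0) \<Longrightarrow>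
     (\<Sum>v\<in>U \<inter> pth f. s v) = lam f \<Longrightarrow>
     mca2_step F lam pth cap U (x, T) (x(f := s), T - {f})"
| skip:
    "f \<in> T \<Longrightarrow>
     (\<Sum>v\<in>U \<inter> pth f. remaining_cap F cap x v) < lam f \<Longrightarrow>
     mca2_step F lam pth cap U (x, T) (x, T - {f})"

section \<open>MCA and RP-MCA\<close>

text \<open>MCA V F lam pth cap U x: x is a possible output of MCA applied to U
  (for some optimal basic solution and some sequence of choices).\<close>

definition MCA ::
  "'v set \<Rightarrow> 'f set \<Rightarrow> ('f \<Rightarrow> real) \<Rightarrow> ('f \<Rightarrow> 'v set) \<Rightarrow> ('v \<Rightarrow> real) \<Rightarrow> 'v set
     \<Rightarrow> ('f \<Rightarrow> 'v \<Rightarrow> real) \<Rightarrow> bool" where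
  "MCA V F lam pth cap U x \<longleftrightarrow>
     (\<exists>x0 y0 asg0 y1 asg y.
        optimal_basic_Q2 V F lam pth cap U x0 \<and>
        y0 = (\<lambda>f v. x0 f v / lam f) \<and>
        (\<forall>f. if f \<in> F \<and> (\<exists>v\<in>U \<inter> pth f. y0 f v = 1)
             then (\<exists>v\<in>U \<inter> pth f. y0 f v = 1 \<and> asg0 f = Some v)
             else asg0 f = None) \<and>
        y1 = (\<lambda>f. if asg0 f \<noteq> None then (\<lambda>_. 0) else y0 f) \<and>
        (mca1_step F lam pth U)\<^sup>*\<^sup>* (asg0, y1) (asg, y) \<and>
        Gedges F pth U y = {} \<and>
        (mca2_step F lam pth cap U)\<^sup>*\<^sup>*
           (\<lambda>f v. if f \<in> F \<and> asg f = Some v then lam f else 0, {f\<in>F. asg f = None})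
           (x, {}))"

definition RP_MCA ::
  "'v set \<Rightarrow> 'f set \<Rightarrow> ('f \<Rightarrow> real) \<Rightarrow> ('f \<Rightarrow> 'v set) \<Rightarrow> ('v \<Rightarrow> real) \<Rightarrow> ('v \<Rightarrow> real) \<Rightarrow> real
     \<Rightarrow> 'v set \<Rightarrow> ('f \<Rightarrow> 'v \<Rightarrow> real) \<Rightarrow> bool" where
  "RP_MCA V F lam pth cap cost B U x \<longleftrightarrow>
     placement V F lam pth cap cost B U \<and> MCA V F lam pth cap U x"

end

theory Submission
  imports Defs
begin


locale net =
  fixes V :: "'v set" and F :: "'f set" and lam :: "'f \<Rightarrow> real" and pth :: "'f \<Rightarrow> 'v set"
    and cap :: "'v \<Rightarrow> real"
  assumes finV: "finite V" and finF: "finite F"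
    and lam_pos: "\<And>f. f \<in> F \<Longrightarrow> 0 < lam f"
    and pth_sub: "\<And>f. f \<in> F \<Longrightarrow> pth f \<subseteq> V"
    and cap_pos: "\<And>v. v \<in> V \<Longrightarrow> 0 < cap v"
begin

abbreviation feas where "feas U x \<equiv> feasible_Q2 V F lam pth cap U x"
abbreviation obj where "obj U x \<equiv> Q2_obj F pth U x"
abbreviation R where "R U \<equiv> R3 V F lam pth cap U"

definition load :: "('f \<Rightarrow> 'v \<Rightarrow> real) \<Rightarrow> 'v \<Rightarrow> real" where
  "load x v = (\<Sum>f\<in>F. x f v)"
definition fsum :: "'v set \<Rightarrow> ('f \<Rightarrow> 'v \<Rightarrow> real) \<Rightarrow> 'f \<Rightarrow> real" where
  "fsum U x f = (\<Sum>v\<in>U. x f v)"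
definition supp :: "'v set \<Rightarrow> ('f \<Rightarrow> 'v \<Rightarrow> real) \<Rightarrow> bool" where
  "supp U x \<longleftrightarrow> (\<forall>f\<in>F. \<forall>v\<in>V. v \<notin> U \<inter> pth f \<longrightarrow> x f v = 0)"

lemma feas_def2: "feas U x \<longleftrightarrow> (\<forall>f\<in>F. \<forall>v\<in>V. 0 \<le> x f v) \<and> (\<forall>v\<in>U. load x v \<le> cap v)
   \<and> supp U x \<and> (\<forall>f\<in>F. fsum U x f \<le> lam f)"
  unfolding feasible_Q2_def load_def fsum_def supp_def by blast

lemma finU: "U \<subseteq> V \<Longrightarrow> finite U" using finV finite_subset by blast

lemma obj_fsum:
  assumes "U \<subseteq> V" "supp U x"
  shows "obj U x = (\<Sum>f\<in>F. fsum U x f)"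
  unfolding Q2_obj_def fsum_def
proof (rule sum.cong[OF refl])
  fix f assume f: "f \<in> F"
  have "(\<Sum>v\<in>U. x f v) = (\<Sum>v\<in>U \<inter> pth f. x f v) + (\<Sum>v\<in>U - pth f. x f v)"
    using finU[OF assms(1)] by (metis Diff_eq sum.Int_Diff)
  also have "(\<Sum>v\<in>U - pth f. x f v) = 0"
    using assms f unfolding supp_def by (intro sum.neutral) auto
  finally show "(\<Sum>v\<in>pth f \<inter> U. x f v) = (\<Sum>v\<in>U. x f v)" by (simp add: Int_commute)
qed

lemma obj_load:
  assumes "U \<subseteq> V" "supp U x"
  shows "obj U x = (\<Sum>v\<in>U. load x v)"
  unfolding obj_fsum[OF assms] fsum_def load_def by (rule sum.swap)

lemma obj_lin: "obj U (\<lambda>f v. x f v + t * d f v) = obj U x + t * obj U d"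
  unfolding Q2_obj_def by (simp add: sum.distrib sum_distrib_left)

lemma load_lin: "load (\<lambda>f v. x f v + t * d f v) v = load x v + t * load d v"
  unfolding load_def by (simp add: sum.distrib sum_distrib_left)

lemma fsum_lin: "fsum U (\<lambda>f v. x f v + t * d f v) f = fsum U x f + t * fsum U d f"
  unfolding fsum_def by (simp add: sum.distrib sum_distrib_left)

lemma feas_zero: "U \<subseteq> V \<Longrightarrow> feas U (\<lambda>f v. 0)"
  unfolding feasible_Q2_def using lam_pos cap_pos by (auto intro: less_imp_le)

lemma obj_bound:
  assumes "U \<subseteq> V" "feas U x"
  shows "obj U x \<le> (\<Sum>f\<in>F. lam f)"
proof -
  have "obj U x = (\<Sum>f\<in>F. fsum U x f)" using assms obj_fsum feas_def2 by blast
  also have "\<dots> \<le> (\<Sum>f\<in>F. lam f)" using assms(2) unfolding feas_def2 by (intro sum_mono) auto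
  finally show ?thesis .
qed

lemma R_upper:
  assumes "U \<subseteq> V" "feas U x"
  shows "obj U x \<le> R U"
  unfolding R3_def
  by (rule cSup_upper) (use assms obj_bound in \<open>auto intro!: bdd_aboveI[where M="\<Sum>f\<in>F. lam f"]\<close>)

lemma R_least:
  assumes "U \<subseteq> V" "\<And>x. feas U x \<Longrightarrow> obj U x \<le> M"
  shows "R U \<le> M"
  unfolding R3_def
  by (rule cSup_least) (use assms feas_zero in auto)

end


context net begin

definition dcond :: "'v set \<Rightarrow> ('f \<Rightarrow> 'v \<Rightarrow> real) \<Rightarrow> ('f \<Rightarrow> 'v \<Rightarrow> real) \<Rightarrow> bool" where
  "dcond U x d \<longleftrightarrow> supp U d \<and> (\<forall>f\<in>F. \<forall>v\<in>U \<inter> pth f. x f v = 0 \<longrightarrow> d f v = 0) \<and>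
     (\<forall>v\<in>U. load x v = cap v \<longrightarrow> load d v = 0) \<and> (\<forall>f\<in>F. fsum U x f = lam f \<longrightarrow> fsum U d f = 0)"

abbreviation basic where "basic U x \<equiv> basic_Q2 V F lam pth cap U x"

lemma basic_iff: "basic U x \<longleftrightarrow> feas U x \<and> (\<forall>d. dcond U x d \<longrightarrow> (\<forall>f\<in>F. \<forall>v\<in>V. d f v = 0))"
  unfolding basic_Q2_def dcond_def supp_def load_def fsum_def by blast

definition EE :: "'v set \<Rightarrow> ('f \<times> 'v) set" where "EE U = Sigma F (\<lambda>f. U \<inter> pth f)"
definition ZZ where "ZZ U x = {p \<in> EE U. x (fst p) (snd p) = 0}"
definition TN where "TN U x = {v\<in>U. load x v = cap v}"
definition TF where "TF U x = {f\<in>F. fsum U x f = lam f}"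
definition nact where "nact U x = card (ZZ U x) + card (TN U x) + card (TF U x)"

lemma finEE: "U \<subseteq> V \<Longrightarrow> finite (EE U)"
  unfolding EE_def using finF finU by (intro finite_SigmaI) auto

lemma nact_le: "U \<subseteq> V \<Longrightarrow> nact U x \<le> card (EE U) + card U + card F"
proof -
  assume U: "U \<subseteq> V"
  have "card (ZZ U x) \<le> card (EE U)" unfolding ZZ_def by (rule card_mono[OF finEE[OF U]]) auto
  moreover have "card (TN U x) \<le> card U" unfolding TN_def by (rule card_mono[OF finU[OF U]]) auto
  moreover have "card (TF U x) \<le> card F" unfolding TF_def by (rule card_mono[OF finF]) auto
  ultimately show ?thesis unfolding nact_def by simp
qed

lemma push:
  assumes U: "U \<subseteq> V" and fx: "feas U x" and dc: "dcond U x e" and E0: "(f0, v0) \<in> EE U"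
    and ne: "e f0 v0 \<noteq> 0" and oe: "0 \<le> obj U e"
  shows "\<exists>x'. feas U x' \<and> obj U x \<le> obj U x' \<and> nact U x < nact U x'"
proof -
  have fx': "(\<forall>f\<in>F. \<forall>v\<in>V. 0 \<le> x f v)" "(\<forall>v\<in>U. load x v \<le> cap v)" "supp U x" "(\<forall>f\<in>F. fsum U x f \<le> lam f)"
    using fx unfolding feas_def2 by auto
  have dc': "supp U e" "\<And>f v. f \<in> F \<Longrightarrow> v \<in> U \<inter> pth f \<Longrightarrow> x f v = 0 \<Longrightarrow> e f v = 0"
     "\<And>v. v \<in> U \<Longrightarrow> load x v = cap v \<Longrightarrow> load e v = 0"
     "\<And>f. f \<in> F \<Longrightarrow> fsum U x f = lam f \<Longrightarrow> fsum U e f = 0"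
    using dc unfolding dcond_def by auto
  have EEi: "p \<in> EE U \<longleftrightarrow> fst p \<in> F \<and> snd p \<in> U \<inter> pth (fst p)" for p
    unfolding EE_def by (cases p) auto
  define S1 where "S1 = (\<lambda>p. x (fst p) (snd p) / (- e (fst p) (snd p))) ` {p \<in> EE U. e (fst p) (snd p) < 0}"
  define S2 where "S2 = (\<lambda>v. (cap v - load x v) / load e v) ` {v\<in>U. load e v > 0}"
  define S3 where "S3 = (\<lambda>f. (lam f - fsum U x f) / fsum U e f) ` {f\<in>F. fsum U e f > 0}"
  define S where "S = S1 \<union> S2 \<union> S3"
  have finS: "finite S" unfolding S_def S1_def S2_def S3_def using finEE[OF U] finU[OF U] finF by auto
  have neS: "S \<noteq> {}"
  proof (cases "\<exists>p\<in>EE U. e (fst p) (snd p) < 0")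
    case True then show ?thesis unfolding S_def S1_def by auto
  next
    case False
    then have nn: "\<And>p. p \<in> EE U \<Longrightarrow> 0 \<le> e (fst p) (snd p)" by force
    have f0: "f0 \<in> F" "v0 \<in> U" "v0 \<in> pth f0" using E0 EEi[of "(f0,v0)"] by auto
    have "0 < e f0 v0" using nn[OF E0] ne by simp
    also have "e f0 v0 \<le> fsum U e f0" unfolding fsum_def
    proof (rule member_le_sum[OF f0(2) _ finU[OF U]])
      fix v assume v: "v \<in> U - {v0}"
      show "0 \<le> e f0 v"
      proof (cases "v \<in> pth f0")
        case True then show ?thesis using nn[of "(f0,v)"] EEi[of "(f0,v)"] f0 v by auto
      next
        case False then show ?thesis using dc'(1) f0 v U unfolding supp_def by auto
      qed
    qed
    finally show ?thesis unfolding S_def S3_def using f0 by auto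
  qed
  define t where "t = Min S"
  have tS: "t \<in> S" unfolding t_def using finS neS by simp
  have tle: "\<And>s. s \<in> S \<Longrightarrow> t \<le> s" unfolding t_def using finS by simp
  have Sge: "\<And>s. s \<in> S \<Longrightarrow> 0 \<le> s"
  proof -
    fix s assume "s \<in> S"
    then consider (a) "s \<in> S1" | (b) "s \<in> S2" | (c) "s \<in> S3" unfolding S_def by blast
    then show "0 \<le> s"
    proof cases
      case a
      then obtain p where p: "p \<in> EE U" "e (fst p) (snd p) < 0" "s = x (fst p) (snd p) / (- e (fst p) (snd p))"
        unfolding S1_def by auto
      have "0 \<le> x (fst p) (snd p)" using fx'(1) p(1) EEi[of p] U by auto
      then show ?thesis using p by (simp add: divide_nonneg_neg)
    next
      case b then show ?thesis unfolding S2_def using fx'(2) by auto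
    next
      case c then show ?thesis unfolding S3_def using fx'(4) by auto
    qed
  qed
  have t0: "0 \<le> t" using Sge tS by blast
  define x' where "x' = (\<lambda>f v. x f v + t * e f v)"
  have ld': "load x' v = load x v + t * load e v" for v unfolding x'_def by (rule load_lin)
  have fs': "fsum U x' f = fsum U x f + t * fsum U e f" for f unfolding x'_def by (rule fsum_lin)
  have feas': "feas U x'"
    unfolding feas_def2
  proof (intro conjI ballI)
    fix f v assume f: "f \<in> F" and v: "v \<in> V"
    show "0 \<le> x' f v"
    proof (cases "(f, v) \<in> EE U")
      case True
      show ?thesis
      proof (cases "e f v < 0")
        case True
        then have "x f v / (- e f v) \<in> S" unfolding S_def S1_def using \<open>(f,v) \<in> EE U\<close>
          by (auto intro!: image_eqI[where x="(f,v)"])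
        then have "t \<le> x f v / (- e f v)" by (rule tle)
        then have "t * (- e f v) \<le> x f v" using True pos_le_divide_eq[of "- e f v" t "x f v"] by linarith
        then show ?thesis unfolding x'_def by simp
      next
        case False
        then show ?thesis unfolding x'_def using t0 fx'(1) f v by auto
      qed
    next
      case False
      then have "v \<notin> U \<inter> pth f" using EEi[of "(f,v)"] f by auto
      then show ?thesis using fx'(3) dc'(1) f v unfolding supp_def x'_def by auto
    qed
  next
    fix v assume v: "v \<in> U"
    show "load x' v \<le> cap v"
    proof (cases "load e v > 0")
      case True
      then have "(cap v - load x v) / load e v \<in> S" unfolding S_def S2_def using v by auto
      then have "t \<le> (cap v - load x v) / load e v" by (rule tle)
      then show ?thesis unfolding ld' using True by (simp add: pos_le_divide_eq)
    next
      case False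
      then have "t * load e v \<le> 0" using t0 by (simp add: mult_nonneg_nonpos)
      then show ?thesis unfolding ld' using fx'(2) v by auto
    qed
  next
    show "supp U x'" using fx'(3) dc'(1) unfolding supp_def x'_def by auto
  next
    fix f assume f: "f \<in> F"
    show "fsum U x' f \<le> lam f"
    proof (cases "fsum U e f > 0")
      case True
      then have "(lam f - fsum U x f) / fsum U e f \<in> S" unfolding S_def S3_def using f by auto
      then have "t \<le> (lam f - fsum U x f) / fsum U e f" by (rule tle)
      then show ?thesis unfolding fs' using True by (simp add: pos_le_divide_eq)
    next
      case False
      then have "t * fsum U e f \<le> 0" using t0 by (simp add: mult_nonneg_nonpos)
      then show ?thesis unfolding fs' using fx'(4) f by auto
    qed
  qed
  have obj': "obj U x \<le> obj U x'" unfolding x'_def obj_lin using t0 oe by simp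
  have Zsub: "ZZ U x \<subseteq> ZZ U x'"
    unfolding ZZ_def x'_def using dc'(2) EEi by auto
  have Nsub: "TN U x \<subseteq> TN U x'" unfolding TN_def ld' using dc'(3) by auto
  have Fsub: "TF U x \<subseteq> TF U x'" unfolding TF_def fs' using dc'(4) by auto
  have finZ: "finite (ZZ U x')" unfolding ZZ_def using finEE[OF U] by auto
  have finN: "finite (TN U x')" unfolding TN_def using finU[OF U] by auto
  have finFF: "finite (TF U x')" unfolding TF_def using finF by auto
  have c1: "card (ZZ U x) \<le> card (ZZ U x')" by (rule card_mono[OF finZ Zsub])
  have c2: "card (TN U x) \<le> card (TN U x')" by (rule card_mono[OF finN Nsub])
  have c3: "card (TF U x) \<le> card (TF U x')" by (rule card_mono[OF finFF Fsub])
  have strict: "card (ZZ U x) < card (ZZ U x') \<or> card (TN U x) < card (TN U x') \<or> card (TF U x) < card (TF U x')"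
  proof -
    consider (a) "t \<in> S1" | (b) "t \<in> S2" | (c) "t \<in> S3" using tS unfolding S_def by blast
    then show ?thesis
    proof cases
      case a
      then obtain p where p: "p \<in> EE U" "e (fst p) (snd p) < 0" "t = x (fst p) (snd p) / (- e (fst p) (snd p))"
        unfolding S1_def by auto
      have "x' (fst p) (snd p) = 0" unfolding x'_def p(3) using p(2) by (simp add: field_simps)
      then have "p \<in> ZZ U x'" unfolding ZZ_def using p by auto
      moreover have "p \<notin> ZZ U x" unfolding ZZ_def using dc'(2) p EEi[of p] by auto
      ultimately have "ZZ U x \<subset> ZZ U x'" using Zsub by blast
      then show ?thesis using psubset_card_mono[OF finZ] by blast
    next
      case b
      then obtain v where v: "v \<in> U" "load e v > 0" "t = (cap v - load x v) / load e v"
        unfolding S2_def by auto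
      have "load x' v = cap v" unfolding ld' v(3) using v(2) by (simp add: field_simps)
      then have "v \<in> TN U x'" unfolding TN_def using v by auto
      moreover have "v \<notin> TN U x" unfolding TN_def using dc'(3) v by auto
      ultimately have "TN U x \<subset> TN U x'" using Nsub by blast
      then show ?thesis using psubset_card_mono[OF finN] by blast
    next
      case c
      then obtain f where f: "f \<in> F" "fsum U e f > 0" "t = (lam f - fsum U x f) / fsum U e f"
        unfolding S3_def by auto
      have "fsum U x' f = lam f" unfolding fs' f(3) using f(2) by (simp add: field_simps)
      then have "f \<in> TF U x'" unfolding TF_def using f by auto
      moreover have "f \<notin> TF U x" unfolding TF_def using dc'(4) f by auto
      ultimately have "TF U x \<subset> TF U x'" using Fsub by blast
      then show ?thesis using psubset_card_mono[OF finFF] by blast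
    qed
  qed
  have "nact U x < nact U x'" unfolding nact_def using c1 c2 c3 strict by linarith
  then show ?thesis using feas' obj' by blast
qed


lemma dcond_neg: "dcond U x d \<Longrightarrow> dcond U x (\<lambda>f v. - d f v)"
  unfolding dcond_def supp_def load_def fsum_def by (auto simp: sum_negf)

lemma obj_neg: "obj U (\<lambda>f v. - d f v) = - obj U d"
  unfolding Q2_obj_def by (simp add: sum_negf)

lemma exists_basic_ge:
  assumes U: "U \<subseteq> V" and fx: "feas U x"
  shows "\<exists>x'. basic U x' \<and> obj U x \<le> obj U x'"
  using fx
proof (induction "card (EE U) + card U + card F - nact U x" arbitrary: x rule: less_induct)
  case (less x)
  show ?case
  proof (cases "basic U x")
    case True then show ?thesis by blast
  next
    case False
    then obtain d f0 v0 where d: "dcond U x d" "f0 \<in> F" "v0 \<in> V" "d f0 v0 \<noteq> 0"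
      using less.prems unfolding basic_iff by blast
    have E0: "(f0, v0) \<in> EE U"
      using d unfolding dcond_def supp_def EE_def by auto
    define e where "e = (if 0 \<le> obj U d then d else (\<lambda>f v. - d f v))"
    have e: "dcond U x e" "e f0 v0 \<noteq> 0" "0 \<le> obj U e"
      unfolding e_def using d dcond_neg[OF d(1)] obj_neg[of U d] by auto
    obtain x' where x': "feas U x'" "obj U x \<le> obj U x'" "nact U x < nact U x'"
      using push[OF U less.prems e(1) E0 e(2) e(3)] by blast
    have "card (EE U) + card U + card F - nact U x' < card (EE U) + card U + card F - nact U x"
      using x'(3) nact_le[OF U, of x'] by linarith
    from less.hyps[OF this x'(1)] obtain y where "basic U y" "obj U x' \<le> obj U y" by blast
    then show ?thesis using x'(2) by force
  qed
qed

lemma basic_feas: "basic U x \<Longrightarrow> feas U x" unfolding basic_Q2_def by blast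

lemma basic_act_eq:
  assumes U: "U \<subseteq> V" and b: "basic U x" "basic U y"
    and eq: "ZZ U x = ZZ U y" "TN U x = TN U y" "TF U x = TF U y"
  shows "obj U x = obj U y"
proof -
  have fx: "feas U x" "feas U y" using b basic_feas by auto
  define d where "d = (\<lambda>f v. x f v - y f v)"
  have "dcond U x d"
    unfolding dcond_def
  proof (intro conjI ballI impI)
    show "supp U d" using fx unfolding feas_def2 supp_def d_def by auto
  next
    fix f v assume f: "f \<in> F" and v: "v \<in> U \<inter> pth f" and x0: "x f v = 0"
    then have "(f, v) \<in> ZZ U x" unfolding ZZ_def EE_def by auto
    then have "(f, v) \<in> ZZ U y" using eq by simp
    then show "d f v = 0" unfolding ZZ_def d_def using x0 by auto
  next
    fix v assume v: "v \<in> U" and t: "load x v = cap v"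
    then have "v \<in> TN U y" using eq unfolding TN_def by blast
    then show "load d v = 0" unfolding d_def load_def TN_def using t by (simp add: sum_subtractf load_def)
  next
    fix f assume f: "f \<in> F" and t: "fsum U x f = lam f"
    then have "f \<in> TF U y" using eq unfolding TF_def by blast
    then show "fsum U d f = 0" unfolding d_def fsum_def TF_def using t by (simp add: sum_subtractf fsum_def)
  qed
  then have z: "\<forall>f\<in>F. \<forall>v\<in>V. d f v = 0" using b(1) unfolding basic_iff by blast
  show ?thesis unfolding Q2_obj_def
  proof (rule sum.cong[OF refl], rule sum.cong[OF refl])
    fix f v assume "f \<in> F" "v \<in> pth f \<inter> U"
    then show "x f v = y f v" using z pth_sub unfolding d_def by force
  qed
qed

lemma basic_vals_finite:
  assumes U: "U \<subseteq> V"
  shows "finite {obj U x | x. basic U x}"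
proof -
  define act where "act x = (ZZ U x, TN U x, TF U x)" for x
  define g where "g A = obj U (SOME x. basic U x \<and> act x = A)" for A
  have "{obj U x | x. basic U x} \<subseteq> g ` (Pow (EE U) \<times> Pow U \<times> Pow F)"
  proof
    fix r assume "r \<in> {obj U x | x. basic U x}"
    then obtain x where x: "basic U x" "r = obj U x" by blast
    define y where "y = (SOME y. basic U y \<and> act y = act x)"
    have y: "basic U y \<and> act y = act x" unfolding y_def by (rule someI[of _ x]) (use x in auto)
    have "obj U y = obj U x"
      by (rule basic_act_eq[OF U]) (use y x in \<open>auto simp: act_def\<close>)
    moreover have "act x \<in> Pow (EE U) \<times> Pow U \<times> Pow F"
      unfolding act_def ZZ_def TN_def TF_def by auto
    ultimately show "r \<in> g ` (Pow (EE U) \<times> Pow U \<times> Pow F)"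
      using x unfolding g_def y_def by (auto intro!: image_eqI[where x="act x"])
  qed
  moreover have "finite (Pow (EE U) \<times> Pow U \<times> Pow F)"
    using finEE[OF U] finU[OF U] finF by auto
  ultimately show ?thesis using finite_surj by blast
qed

lemma opt_basic_exists:
  assumes U: "U \<subseteq> V"
  shows "\<exists>x. basic U x \<and> obj U x = R U"
proof -
  let ?W = "{obj U x | x. basic U x}"
  obtain x0 where "basic U x0" using exists_basic_ge[OF U feas_zero[OF U]] by blast
  then have ne: "?W \<noteq> {}" by blast
  have fin: "finite ?W" by (rule basic_vals_finite[OF U])
  have "Max ?W \<in> ?W" using fin ne by (rule Max_in)
  then obtain xb where xb: "basic U xb" "obj U xb = Max ?W" by auto
  have "R U \<le> Max ?W"
  proof (rule R_least[OF U])
    fix x assume "feas U x"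
    then obtain y where y: "basic U y" "obj U x \<le> obj U y" using exists_basic_ge[OF U] by blast
    then have "obj U y \<le> Max ?W" using fin by (intro Max_ge) auto
    then show "obj U x \<le> Max ?W" using y by linarith
  qed
  moreover have "Max ?W \<le> R U" using R_upper[OF U basic_feas[OF xb(1)]] xb(2) by simp
  ultimately show ?thesis using xb by auto
qed

end


lemma ev_lt: "(a::real) < c \<Longrightarrow> eventually (\<lambda>t. a + t * b < c) (at_right 0)"
proof -
  assume "a < c"
  have "((\<lambda>t. a + t * b) \<longlongrightarrow> a + 0 * b) (at_right 0)"
    by (intro tendsto_intros)
  then have "((\<lambda>t. a + t * b) \<longlongrightarrow> a) (at_right 0)" by simp
  then show ?thesis using \<open>a < c\<close> by (rule order_tendstoD(2))
qed

lemma ev_gt: "(c::real) < a \<Longrightarrow> eventually (\<lambda>t. c < a + t * b) (at_right 0)"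
proof -
  assume "c < a"
  have "((\<lambda>t. a + t * b) \<longlongrightarrow> a + 0 * b) (at_right 0)"
    by (intro tendsto_intros)
  then have "((\<lambda>t. a + t * b) \<longlongrightarrow> a) (at_right 0)" by simp
  then show ?thesis using \<open>c < a\<close> by (rule order_tendstoD(1))
qed

context net begin

definition cutv :: "'v set \<Rightarrow> 'v set \<Rightarrow> real" where
  "cutv U T = sum cap T + sum lam {f\<in>F. pth f \<inter> (U - T) \<noteq> {}}"

lemma weak_cut:
  assumes U: "U \<subseteq> V" and T: "T \<subseteq> U" and fx: "feas U x"
  shows "obj U x \<le> cutv U T"
proof -
  have fx': "(\<forall>f\<in>F. \<forall>v\<in>V. 0 \<le> x f v)" "(\<forall>v\<in>U. load x v \<le> cap v)" "supp U x" "(\<forall>f\<in>F. fsum U x f \<le> lam f)"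
    using fx unfolding feas_def2 by auto
  define N where "N = {f\<in>F. pth f \<inter> (U - T) \<noteq> {}}"
  have finUU: "finite U" using finU[OF U] .
  have "obj U x = (\<Sum>v\<in>U. load x v)" by (rule obj_load[OF U fx'(3)])
  also have "\<dots> = (\<Sum>v\<in>T. load x v) + (\<Sum>v\<in>U - T. load x v)"
    using finUU T by (metis sum.subset_diff add.commute)
  also have "(\<Sum>v\<in>T. load x v) \<le> sum cap T" using fx'(2) T by (intro sum_mono) auto
  also have "(\<Sum>v\<in>U - T. load x v) = (\<Sum>f\<in>F. \<Sum>v\<in>U - T. x f v)"
    unfolding load_def by (rule sum.swap)
  also have "\<dots> = (\<Sum>f\<in>N. \<Sum>v\<in>U - T. x f v)"
  proof (rule sum.mono_neutral_right[OF finF])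
    show "N \<subseteq> F" unfolding N_def by auto
    show "\<forall>f\<in>F - N. (\<Sum>v\<in>U - T. x f v) = 0"
    proof
      fix f assume f: "f \<in> F - N"
      show "(\<Sum>v\<in>U - T. x f v) = 0"
        using f fx'(3) U unfolding supp_def N_def by (intro sum.neutral) blast
    qed
  qed
  also have "\<dots> \<le> (\<Sum>f\<in>N. lam f)"
  proof (rule sum_mono)
    fix f assume f: "f \<in> N"
    have "(\<Sum>v\<in>U - T. x f v) \<le> (\<Sum>v\<in>U. x f v)"
      using f fx'(1) U finUU unfolding N_def by (intro sum_mono2) auto
    also have "\<dots> \<le> lam f" using fx'(4) f unfolding N_def fsum_def by auto
    finally show "(\<Sum>v\<in>U - T. x f v) \<le> lam f" .
  qed
  finally show ?thesis unfolding cutv_def N_def by simp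
qed

lemma R_le_cut: "U \<subseteq> V \<Longrightarrow> T \<subseteq> U \<Longrightarrow> R U \<le> cutv U T"
  by (rule R_least) (auto intro: weak_cut)

inductive rch :: "'v set \<Rightarrow> ('f \<Rightarrow> 'v \<Rightarrow> real) \<Rightarrow> 'f + 'v \<Rightarrow> bool" for U x where
  src: "f \<in> F \<Longrightarrow> fsum U x f < lam f \<Longrightarrow> rch U x (Inl f)"
| fwd: "rch U x (Inl f) \<Longrightarrow> f \<in> F \<Longrightarrow> v \<in> U \<inter> pth f \<Longrightarrow> rch U x (Inr v)"
| bwd: "rch U x (Inr v) \<Longrightarrow> g \<in> F \<Longrightarrow> v \<in> U \<inter> pth g \<Longrightarrow> 0 < x g v \<Longrightarrow> rch U x (Inl g)"

definition good :: "'v set \<Rightarrow> ('f \<Rightarrow> 'v \<Rightarrow> real) \<Rightarrow> 'f + 'v \<Rightarrow> ('f \<Rightarrow> 'v \<Rightarrow> real) \<Rightarrow> bool" where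
  "good U x a d \<longleftrightarrow> supp U d \<and> (\<forall>f\<in>F. \<forall>v\<in>U \<inter> pth f. x f v = 0 \<longrightarrow> 0 \<le> d f v) \<and>
     (\<forall>w\<in>U. load d w = (if a = Inr w then 1 else 0)) \<and>
     (\<forall>h\<in>F. fsum U x h = lam h \<longrightarrow> fsum U d h + (if a = Inl h then 1 else 0) \<le> 0)"

lemma rch_good:
  assumes U: "U \<subseteq> V"
  shows "rch U x a \<Longrightarrow> \<exists>d. good U x a d"
proof (induction rule: rch.induct)
  case (src f)
  show ?case
    by (rule exI[of _ "\<lambda>f v. 0"]) (use src in \<open>auto simp: good_def supp_def load_def fsum_def\<close>)
next
  case (fwd f v)
  then obtain d where d: "good U x (Inl f) d" by blast
  define d' where "d' = (\<lambda>g w. d g w + (if g = f \<and> w = v then 1 else 0))"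
  have ld: "load d' w = load d w + (if w = v then 1 else 0)" for w
    unfolding d'_def load_def using fwd(2) finF by (simp add: sum.distrib)
  have fs: "fsum U d' h = fsum U d h + (if h = f then 1 else 0)" for h
    unfolding d'_def fsum_def using fwd(3) finU[OF U] by (simp add: sum.distrib)
  have "good U x (Inr v) d'"
    using d fwd(2,3) unfolding good_def ld fs
    by (auto simp: supp_def d'_def)
  then show ?case by blast
next
  case (bwd v g)
  then obtain d where d: "good U x (Inr v) d" by blast
  define d' where "d' = (\<lambda>h w. d h w - (if h = g \<and> w = v then 1 else 0))"
  have ld: "load d' w = load d w - (if w = v then 1 else 0)" for w
    unfolding d'_def load_def using bwd(2) finF by (simp add: sum_subtractf)
  have fs: "fsum U d' h = fsum U d h - (if h = g then 1 else 0)" for h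
    unfolding d'_def fsum_def using bwd(3) finU[OF U] by (simp add: sum_subtractf)
  have "good U x (Inl g) d'"
    using d bwd(2,3,4) unfolding good_def ld fs
    by (auto simp: supp_def d'_def)
  then show ?case by blast
qed

lemma rch_no_slack:
  assumes U: "U \<subseteq> V" and fx: "feas U x" and opt: "obj U x = R U"
    and r: "rch U x (Inr v)" and vU: "v \<in> U"
  shows "load x v = cap v"
proof (rule ccontr)
  assume ne: "load x v \<noteq> cap v"
  have fx': "(\<forall>f\<in>F. \<forall>v\<in>V. 0 \<le> x f v)" "(\<forall>v\<in>U. load x v \<le> cap v)" "supp U x" "(\<forall>f\<in>F. fsum U x f \<le> lam f)"
    using fx unfolding feas_def2 by auto
  have slack: "load x v < cap v" using ne fx'(2) vU by force
  obtain d where d: "good U x (Inr v) d" using rch_good[OF U r] by blast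
  have d': "supp U d" "\<And>f w. f \<in> F \<Longrightarrow> w \<in> U \<inter> pth f \<Longrightarrow> x f w = 0 \<Longrightarrow> 0 \<le> d f w"
    "\<And>w. w \<in> U \<Longrightarrow> load d w = (if w = v then 1 else 0)"
    "\<And>h. h \<in> F \<Longrightarrow> fsum U x h = lam h \<Longrightarrow> fsum U d h \<le> 0"
    using d unfolding good_def by auto
  have objd: "obj U d = 1"
  proof -
    have "obj U d = (\<Sum>w\<in>U. load d w)" by (rule obj_load[OF U d'(1)])
    also have "\<dots> = (\<Sum>w\<in>U. if w = v then 1 else 0)" using d'(3) by (intro sum.cong) auto
    also have "\<dots> = 1" using vU finU[OF U] by simp
    finally show ?thesis .
  qed
  define x' where "x' t = (\<lambda>f w. x f w + t * d f w)" for t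
  have ev1: "eventually (\<lambda>t. \<forall>p\<in>F \<times> V. 0 \<le> x' t (fst p) (snd p)) (at_right 0)"
  proof (rule eventually_ball_finite)
    show "finite (F \<times> V)" using finF finV by auto
    show "\<forall>p\<in>F \<times> V. eventually (\<lambda>t. 0 \<le> x' t (fst p) (snd p)) (at_right 0)"
    proof
      fix p assume p: "p \<in> F \<times> V"
      obtain f w where pw: "p = (f, w)" by (cases p)
      have fw: "f \<in> F" "w \<in> V" using p pw by auto
      show "eventually (\<lambda>t. 0 \<le> x' t (fst p) (snd p)) (at_right 0)"
      proof (cases "w \<in> U \<inter> pth f")
        case True
        show ?thesis
        proof (cases "x f w = 0")
          case True
          have dn: "0 \<le> d f w" using d'(2) fw \<open>w \<in> U \<inter> pth f\<close> True by auto
          show ?thesis using eventually_at_right_less[of 0] unfolding pw x'_def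
            by eventually_elim (use True dn in auto)
        next
          case False
          then have "0 < x f w" using fx'(1) fw by force
          from ev_gt[OF this, of "d f w"] show ?thesis unfolding pw x'_def
            by eventually_elim auto
        qed
      next
        case False
        then have "x f w = 0" "d f w = 0" using fx'(3) d'(1) fw unfolding supp_def by auto
        then show ?thesis unfolding pw x'_def by simp
      qed
    qed
  qed
  have ev2: "eventually (\<lambda>t. \<forall>w\<in>U. load (x' t) w \<le> cap w) (at_right 0)"
  proof (rule eventually_ball_finite[OF finU[OF U]], rule ballI)
    fix w assume w: "w \<in> U"
    have ldx: "load (x' t) w = load x w + t * load d w" for t unfolding x'_def by (rule load_lin)
    show "eventually (\<lambda>t. load (x' t) w \<le> cap w) (at_right 0)"
    proof (cases "w = v")
      case True
      from ev_lt[OF slack, of "load d w"] show ?thesis unfolding ldx by eventually_elim (use True in auto)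
    next
      case False
      then have "load d w = 0" using d'(3)[OF w] by auto
      then show ?thesis unfolding ldx using fx'(2) w by simp
    qed
  qed
  have ev3: "eventually (\<lambda>t. \<forall>h\<in>F. fsum U (x' t) h \<le> lam h) (at_right 0)"
  proof (rule eventually_ball_finite[OF finF], rule ballI)
    fix h assume h: "h \<in> F"
    have fsx: "fsum U (x' t) h = fsum U x h + t * fsum U d h" for t unfolding x'_def by (rule fsum_lin)
    show "eventually (\<lambda>t. fsum U (x' t) h \<le> lam h) (at_right 0)"
    proof (cases "fsum U x h = lam h")
      case True
      have dn: "fsum U d h \<le> 0" using d'(4) h True by auto
      show ?thesis using eventually_at_right_less[of 0] unfolding fsx
        by eventually_elim (use True dn in \<open>auto simp: mult_nonneg_nonpos\<close>)
    next
      case False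
      then have "fsum U x h < lam h" using fx'(4) h by force
      from ev_lt[OF this, of "fsum U d h"] show ?thesis unfolding fsx by eventually_elim auto
    qed
  qed
  have "eventually (\<lambda>t. 0 < t \<and> feas U (x' t)) (at_right 0)"
    using ev1 ev2 ev3 eventually_at_right_less[of "0::real"]
  proof eventually_elim
    case (elim t)
    have "supp U (x' t)" using fx'(3) d'(1) unfolding supp_def x'_def by auto
    then show ?case using elim unfolding feas_def2 by auto
  qed
  then obtain t where t: "0 < t" "feas U (x' t)"
    using eventually_happens[of _ "at_right (0::real)"] by force
  have "obj U (x' t) = obj U x + t" unfolding x'_def obj_lin objd by simp
  moreover have "obj U (x' t) \<le> R U" by (rule R_upper[OF U t(2)])
  ultimately show False using opt t(1) by linarith
qed

lemma strong_cut:
  assumes U: "U \<subseteq> V"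
  shows "\<exists>T\<subseteq>U. R U = cutv U T"
proof -
  obtain x where xb: "basic U x" and opt: "obj U x = R U" using opt_basic_exists[OF U] by blast
  have fx: "feas U x" using basic_feas[OF xb] .
  have fx': "(\<forall>f\<in>F. \<forall>v\<in>V. 0 \<le> x f v)" "(\<forall>v\<in>U. load x v \<le> cap v)" "supp U x" "(\<forall>f\<in>F. fsum U x f \<le> lam f)"
    using fx unfolding feas_def2 by auto
  define T where "T = {v\<in>U. rch U x (Inr v)}"
  define N where "N = {f\<in>F. pth f \<inter> (U - T) \<noteq> {}}"
  have finUU: "finite U" using finU[OF U] .
  have TU: "T \<subseteq> U" unfolding T_def by auto
  have satT: "\<And>v. v \<in> T \<Longrightarrow> load x v = cap v"
    using rch_no_slack[OF U fx opt] unfolding T_def by auto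
  have Nnr: "\<And>f. f \<in> N \<Longrightarrow> \<not> rch U x (Inl f)"
  proof
    fix f assume f: "f \<in> N" and r: "rch U x (Inl f)"
    then obtain v where v: "v \<in> pth f" "v \<in> U" "v \<notin> T" unfolding N_def by auto
    have "rch U x (Inr v)" using rch.fwd[OF r] f v unfolding N_def by auto
    then show False using v unfolding T_def by auto
  qed
  have Nsat: "\<And>f. f \<in> N \<Longrightarrow> fsum U x f = lam f"
    using Nnr rch.src fx'(4) unfolding N_def by force
  have NT0: "\<And>f v. f \<in> N \<Longrightarrow> v \<in> T \<Longrightarrow> x f v = 0"
  proof (rule ccontr)
    fix f v assume f: "f \<in> N" and v: "v \<in> T" and nz: "x f v \<noteq> 0"
    have fF: "f \<in> F" using f unfolding N_def by auto
    have vV: "v \<in> V" using v TU U by auto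
    have vp: "v \<in> U \<inter> pth f" using fx'(3) nz fF vV unfolding supp_def by auto
    have "0 < x f v" using fx'(1) fF vV nz by force
    then have "rch U x (Inl f)" using rch.bwd[of U x v f] v fF vp unfolding T_def by auto
    then show False using Nnr f by auto
  qed
  have "obj U x = (\<Sum>v\<in>U. load x v)" by (rule obj_load[OF U fx'(3)])
  also have "\<dots> = (\<Sum>v\<in>T. load x v) + (\<Sum>v\<in>U - T. load x v)"
    using finUU TU by (metis sum.subset_diff add.commute)
  also have "(\<Sum>v\<in>T. load x v) = sum cap T" using satT by simp
  also have "(\<Sum>v\<in>U - T. load x v) = (\<Sum>f\<in>F. \<Sum>v\<in>U - T. x f v)"
    unfolding load_def by (rule sum.swap)
  also have "\<dots> = (\<Sum>f\<in>N. \<Sum>v\<in>U - T. x f v)"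
  proof (rule sum.mono_neutral_right[OF finF])
    show "N \<subseteq> F" unfolding N_def by auto
    show "\<forall>f\<in>F - N. (\<Sum>v\<in>U - T. x f v) = 0"
    proof
      fix f assume f: "f \<in> F - N"
      show "(\<Sum>v\<in>U - T. x f v) = 0"
        using f fx'(3) U unfolding supp_def N_def by (intro sum.neutral) blast
    qed
  qed
  also have "\<dots> = (\<Sum>f\<in>N. lam f)"
  proof (rule sum.cong[OF refl])
    fix f assume f: "f \<in> N"
    have "(\<Sum>v\<in>U. x f v) = (\<Sum>v\<in>T. x f v) + (\<Sum>v\<in>U - T. x f v)"
      using finUU TU by (metis sum.subset_diff add.commute)
    also have "(\<Sum>v\<in>T. x f v) = 0" using NT0 f by simp
    finally show "(\<Sum>v\<in>U - T. x f v) = lam f" using Nsat[OF f] unfolding fsum_def by simp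
  qed
  finally have "R U = cutv U T" unfolding cutv_def N_def opt by simp
  then show ?thesis using TU by blast
qed

end


context net begin

definition cov :: "'v set \<Rightarrow> real" where "cov X = sum lam {f\<in>F. pth f \<inter> X \<noteq> {}}"

lemma cov_mono: "X \<subseteq> Y \<Longrightarrow> cov X \<le> cov Y"
  unfolding cov_def using finF lam_pos by (intro sum_mono2) (auto intro: less_imp_le)

lemma cov_submod: "cov (P \<union> Q) + cov (P \<inter> Q) \<le> cov P + cov Q"
proof -
  let ?N = "\<lambda>X. {f\<in>F. pth f \<inter> X \<noteq> {}}"
  have fin: "finite (?N X)" for X using finF by auto
  have u: "?N (P \<union> Q) = ?N P \<union> ?N Q" by auto
  have i: "?N (P \<inter> Q) \<subseteq> ?N P \<inter> ?N Q" by auto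
  have "cov (P \<inter> Q) \<le> sum lam (?N P \<inter> ?N Q)"
    unfolding cov_def using i fin lam_pos by (intro sum_mono2) (auto intro: less_imp_le)
  moreover have "sum lam (?N P \<union> ?N Q) + sum lam (?N P \<inter> ?N Q) = cov P + cov Q"
    unfolding cov_def by (rule sum.union_inter[OF fin fin])
  ultimately show ?thesis unfolding cov_def u by linarith
qed

lemma cutv_cov: "cutv U T = sum cap T + cov (U - T)"
  unfolding cutv_def cov_def by simp

lemma R_submod:
  assumes A: "A \<subseteq> V" and B: "B \<subseteq> V"
  shows "R (A \<union> B) + R (A \<inter> B) \<le> R A + R B"
proof -
  obtain TA where TA: "TA \<subseteq> A" "R A = cutv A TA" using strong_cut[OF A] by blast
  obtain TB where TB: "TB \<subseteq> B" "R B = cutv B TB" using strong_cut[OF B] by blast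
  define T1 where "T1 = (TA \<inter> TB) \<union> (TA - B) \<union> (TB - A)"
  define T2 where "T2 = (TA \<union> TB) \<inter> A \<inter> B"
  have AB: "A \<union> B \<subseteq> V" "A \<inter> B \<subseteq> V" using A B by auto
  have T1s: "T1 \<subseteq> A \<union> B" unfolding T1_def using TA TB by auto
  have T2s: "T2 \<subseteq> A \<inter> B" unfolding T2_def by auto
  have r1: "R (A \<union> B) \<le> cutv (A \<union> B) T1" by (rule R_le_cut[OF AB(1) T1s])
  have r2: "R (A \<inter> B) \<le> cutv (A \<inter> B) T2" by (rule R_le_cut[OF AB(2) T2s])
  have finTA: "finite TA" using TA A finU by (meson finite_subset finV)
  have finTB: "finite TB" using TB B finU by (meson finite_subset finV)
  have un: "T1 \<union> T2 = TA \<union> TB" unfolding T1_def T2_def using TA TB by auto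
  have it: "T1 \<inter> T2 = TA \<inter> TB" unfolding T1_def T2_def using TA TB by auto
  have fin1: "finite T1" unfolding T1_def using finTA finTB by auto
  have fin2: "finite T2" unfolding T2_def using finTA finTB by auto
  have capeq: "sum cap T1 + sum cap T2 = sum cap TA + sum cap TB"
    using sum.union_inter[OF fin1 fin2, of cap] sum.union_inter[OF finTA finTB, of cap] un it by simp
  have X1: "(A \<union> B) - T1 \<subseteq> (A - TA) \<union> (B - TB)" unfolding T1_def by auto
  have X2: "(A \<inter> B) - T2 \<subseteq> (A - TA) \<inter> (B - TB)" unfolding T2_def by auto
  have "cov ((A \<union> B) - T1) + cov ((A \<inter> B) - T2) \<le> cov ((A - TA) \<union> (B - TB)) + cov ((A - TA) \<inter> (B - TB))"
    using cov_mono[OF X1] cov_mono[OF X2] by linarith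
  also have "\<dots> \<le> cov (A - TA) + cov (B - TB)" by (rule cov_submod)
  finally show ?thesis using r1 r2 capeq TA(2) TB(2) unfolding cutv_cov by linarith
qed

lemma R_mono:
  assumes AB: "A \<subseteq> B" and B: "B \<subseteq> V"
  shows "R A \<le> R B"
proof -
  have A: "A \<subseteq> V" using AB B by auto
  show ?thesis
  proof (rule R_least[OF A])
    show "obj A x \<le> R B" if fx: "feas A x" for x
    proof -
      have fx': "(\<forall>f\<in>F. \<forall>v\<in>V. 0 \<le> x f v)" "(\<forall>v\<in>A. load x v \<le> cap v)" "supp A x" "(\<forall>f\<in>F. fsum A x f \<le> lam f)"
        using fx unfolding feas_def2 by auto
      have z: "\<And>f v. f \<in> F \<Longrightarrow> v \<in> B - A \<Longrightarrow> x f v = 0" using fx'(3) B unfolding supp_def by auto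
      have fseq: "fsum B x f = fsum A x f" if f: "f \<in> F" for f
        unfolding fsum_def using z f AB finU[OF B] by (intro sum.mono_neutral_right) auto
      have fB: "feas B x"
        unfolding feas_def2
      proof (intro conjI ballI)
        show "\<And>f v. f \<in> F \<Longrightarrow> v \<in> V \<Longrightarrow> 0 \<le> x f v" using fx'(1) by auto
        fix v assume v: "v \<in> B"
        show "load x v \<le> cap v"
        proof (cases "v \<in> A")
          case True then show ?thesis using fx'(2) by auto
        next
          case False
          then have "load x v = 0" unfolding load_def using z v by auto
          then show ?thesis using cap_pos v B by force
        qed
      next
        show "supp B x" using fx'(3) AB unfolding supp_def by auto
      next
        fix f assume "f \<in> F" then show "fsum B x f \<le> lam f" using fseq fx'(4) by auto
      qed
      have "obj A x = obj B x"
        using obj_fsum[OF A fx'(3)] obj_fsum[OF B] fB fseq unfolding feas_def2 by auto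
      then show ?thesis using R_upper[OF B fB] by simp
    qed
  qed
qed

lemma R_nonneg: "U \<subseteq> V \<Longrightarrow> 0 \<le> R U"
  using R_upper[OF _ feas_zero, of U] by (simp add: Q2_obj_def)

lemma R_empty: "R {} = 0"
proof -
  have "R {} \<le> cutv {} {}" by (rule R_le_cut) auto
  moreover have "cutv {} {} = 0" unfolding cutv_def by simp
  ultimately show ?thesis using R_nonneg[of "{}"] by simp
qed

lemma R_marg:
  assumes AS: "A \<subseteq> S" and S: "S \<subseteq> V" and u: "u \<in> V" "u \<notin> S"
  shows "R (insert u S) - R S \<le> R (insert u A) - R A"
proof -
  have "R (insert u A \<union> S) + R (insert u A \<inter> S) \<le> R (insert u A) + R S"
    by (rule R_submod) (use AS S u in auto)
  moreover have "insert u A \<union> S = insert u S" using AS by auto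
  moreover have "insert u A \<inter> S = A" using AS u by auto
  ultimately show ?thesis by simp
qed

lemma R_sum_marg:
  assumes S: "S \<subseteq> V" and X: "X \<subseteq> V" "X \<inter> S = {}"
  shows "R (S \<union> X) \<le> R S + (\<Sum>u\<in>X. R (insert u S) - R S)"
proof -
  have finX: "finite X" using X finV finite_subset by blast
  show ?thesis using finX X
  proof (induction X rule: finite_induct)
    case empty then show ?case by simp
  next
    case (insert u X)
    have IH: "R (S \<union> X) \<le> R S + (\<Sum>u\<in>X. R (insert u S) - R S)" using insert by auto
    have "R (insert u (S \<union> X)) - R (S \<union> X) \<le> R (insert u S) - R S"
      by (rule R_marg) (use insert S in auto)
    then show ?case using IH insert(1,2) by simp
  qed
qed

lemma R_bound_marg:
  assumes S: "S \<subseteq> V" and Ob: "Ob \<subseteq> V"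
  shows "R Ob \<le> R S + (\<Sum>u\<in>Ob - S. R (insert u S) - R S)"
proof -
  have "R Ob \<le> R (S \<union> (Ob - S))" by (rule R_mono) (use S Ob in auto)
  also have "\<dots> \<le> R S + (\<Sum>u\<in>Ob - S. R (insert u S) - R S)"
    by (rule R_sum_marg) (use S Ob in auto)
  finally show ?thesis .
qed

lemma R_marg_nonneg: "S \<subseteq> V \<Longrightarrow> u \<in> V \<Longrightarrow> 0 \<le> R (insert u S) - R S"
  using R_mono[of S "insert u S"] by auto

end


lemma ex_max_real: "finite A \<Longrightarrow> A \<noteq> {} \<Longrightarrow> \<exists>x\<in>A. \<forall>y\<in>A. (f y :: real) \<le> f x"
proof -
  assume "finite A" "A \<noteq> {}"
  then have "Max (f ` A) \<in> f ` A" by simp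
  then obtain x where "x \<in> A" "f x = Max (f ` A)" by auto
  then show ?thesis using \<open>finite A\<close> by (metis Max_ge finite_imageI image_eqI)
qed

lemma pow_exp_bound:
  assumes K: "0 < K"
  shows "(1 - 1 / real K) ^ K \<le> exp (-1)"
proof -
  have a: "0 \<le> 1 - 1 / real K" using K by (simp add: field_simps)
  have b: "1 - 1 / real K \<le> exp (- (1 / real K))" using exp_ge_add_one_self[of "- (1 / real K)"] by simp
  have "(1 - 1 / real K) ^ K \<le> exp (- (1 / real K)) ^ K" by (rule power_mono[OF b a])
  also have "\<dots> = exp (real K * (- (1 / real K)))" by (rule exp_of_nat_mult[symmetric])
  also have "real K * (- (1 / real K)) = -1" using K by (simp add: field_simps)
  finally show ?thesis .
qed

lemma one_minus_le_exp: "(g::real) \<ge> 0 \<Longrightarrow> g * (1 - a) \<le> g * exp (- a)"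
  using exp_ge_add_one_self[of "-a"] by (intro mult_left_mono) auto

context net begin

lemma greedy_inv:
  "greedy_reach V F lam pth cap k W \<Longrightarrow> W \<subseteq> V \<and> finite W \<and> card W = k"
proof (induction rule: greedy_reach.induct)
  case start then show ?case by simp
next
  case (step k W u) then show ?case by auto
qed

lemma greedy_gap:
  assumes gr: "greedy_reach V F lam pth cap k W" and Ob: "Ob \<subseteq> V" "card Ob \<le> K" and K: "0 < K"
  shows "R Ob - R W \<le> (1 - 1 / real K) ^ k * R Ob"
  using gr
proof (induction rule: greedy_reach.induct)
  case start then show ?case using R_empty by simp
next
  case (step k W u)
  have W: "W \<subseteq> V" "finite W" using greedy_inv[OF step(1)] by auto
  have uV: "u \<in> V" using step(2) by auto
  let ?D = "R (insert u W) - R W"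
  have Dn: "0 \<le> ?D" using R_marg_nonneg[OF W(1) uV] .
  have "R Ob \<le> R W + (\<Sum>w\<in>Ob - W. R (insert w W) - R W)" by (rule R_bound_marg[OF W(1) Ob(1)])
  also have "(\<Sum>w\<in>Ob - W. R (insert w W) - R W) \<le> (\<Sum>w\<in>Ob - W. ?D)"
    using step(3) Ob(1) by (intro sum_mono) auto
  also have "\<dots> = real (card (Ob - W)) * ?D" by simp
  also have "\<dots> \<le> real K * ?D"
  proof (rule mult_right_mono[OF _ Dn])
    have "card (Ob - W) \<le> card Ob" using Ob(1) finV by (intro card_mono) (auto intro: finite_subset)
    then show "real (card (Ob - W)) \<le> real K" using Ob(2) by simp
  qed
  finally have g: "R Ob - R W \<le> real K * ?D" by simp
  have "R Ob - R (insert u W) = (R Ob - R W) - ?D" by simp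
  also have "\<dots> \<le> (R Ob - R W) * (1 - 1 / real K)"
    using g K by (simp add: field_simps)
  also have "\<dots> \<le> ((1 - 1 / real K) ^ k * R Ob) * (1 - 1 / real K)"
    by (rule mult_right_mono[OF step(4)]) (use K in \<open>simp add: field_simps\<close>)
  also have "\<dots> = (1 - 1 / real K) ^ Suc k * R Ob" by simp
  finally show ?case .
qed

lemma subgreedy_bound:
  assumes b: "0 < b" and B0: "0 \<le> B" and cb: "\<forall>v\<in>V. cost v = b" and sg: "submodular_greedy V F lam pth cap b B U"
  shows "U \<subseteq> V \<and> sum cost U \<le> B \<and>
    (\<forall>Ob. Ob \<subseteq> V \<and> sum cost Ob \<le> B \<longrightarrow> (1 - exp (-1)) * R Ob \<le> R U)"
proof -
  define K where "K = min (nat \<lfloor>B / b\<rfloor>) (card V)"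
  have gr: "greedy_reach V F lam pth cap K U" using sg unfolding submodular_greedy_def K_def .
  have U: "U \<subseteq> V" "finite U" "card U = K" using greedy_inv[OF gr] by auto
  have cU: "sum cost U = real K * b" using U cb by (simp add: subset_iff)
  have "real K \<le> B / b"
  proof -
    have "real K \<le> real (nat \<lfloor>B / b\<rfloor>)" unfolding K_def by simp
    also have "\<dots> \<le> B / b"
    proof (cases "0 \<le> \<lfloor>B / b\<rfloor>")
      case True then show ?thesis by simp
    next
      case False then show ?thesis using B0 b by simp
    qed
    finally show ?thesis .
  qed
  then have "sum cost U \<le> B" unfolding cU using b by (simp add: field_simps)
  moreover have "(1 - exp (-1)) * R Ob \<le> R U" if Ob: "Ob \<subseteq> V" "sum cost Ob \<le> B" for Ob
  proof -
    have finOb: "finite Ob" using Ob finV finite_subset by blast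
    have cOb: "sum cost Ob = real (card Ob) * b" using Ob cb by (simp add: subset_iff)
    have "real (card Ob) \<le> B / b" using Ob(2) b unfolding cOb by (simp add: field_simps)
    then have "card Ob \<le> nat \<lfloor>B / b\<rfloor>" by (metis le_nat_floor floor_of_nat nat_int of_int_of_nat_eq le_floor_iff)
    moreover have "card Ob \<le> card V" using Ob finV by (intro card_mono) auto
    ultimately have cK: "card Ob \<le> K" unfolding K_def by simp
    have RO: "0 \<le> R Ob" using R_nonneg[OF Ob(1)] .
    show ?thesis
    proof (cases "K = 0")
      case True
      then have "Ob = {}" using cK finOb by simp
      then show ?thesis using R_empty R_nonneg[OF U(1)] by simp
    next
      case False
      then have Kp: "0 < K" by simp
      have "R Ob - R U \<le> (1 - 1 / real K) ^ K * R Ob" by (rule greedy_gap[OF gr Ob(1) cK Kp])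
      also have "\<dots> \<le> exp (-1) * R Ob" by (rule mult_right_mono[OF pow_exp_bound[OF Kp] RO])
      finally show ?thesis by (simp add: algebra_simps)
    qed
  qed
  ultimately show ?thesis using U by blast
qed

end


context net begin

lemma aug_inv:
  assumes cpos: "\<forall>v\<in>V. 0 < cost v"
  shows "aug_reach V F lam pth cap cost B S W \<Longrightarrow> S \<subseteq> V \<Longrightarrow> sum cost S \<le> B \<Longrightarrow>
    S \<subseteq> W \<and> W \<subseteq> V \<and> sum cost W \<le> B"
proof (induction rule: aug_reach.induct)
  case start then show ?case by simp
next
  case (step S W u)
  then have W: "S \<subseteq> W" "W \<subseteq> V" "sum cost W \<le> B" by auto
  have "finite W" using W(2) finV finite_subset by blast
  then have "sum cost (insert u W) = sum cost W + cost u" using step(2) by simp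
  then show ?case using W step(2,3) by auto
qed

lemma top3:
  assumes Ob: "Ob \<subseteq> V" and c3: "3 \<le> card Ob"
  shows "\<exists>Y\<subseteq>Ob. card Y = 3 \<and>
     (\<forall>u\<in>Ob - Y. \<forall>S. Y \<subseteq> S \<longrightarrow> S \<subseteq> V \<longrightarrow> u \<notin> S \<longrightarrow> 3 * (R (insert u S) - R S) \<le> R Y)"
proof -
  have finOb: "finite Ob" using Ob finV finite_subset by blast
  have ne1: "Ob \<noteq> {}" using c3 by auto
  obtain o1 where o1: "o1 \<in> Ob" "\<forall>y\<in>Ob. R {y} \<le> R {o1}"
    using ex_max_real[OF finOb ne1, of "\<lambda>y. R {y}"] by blast
  have c2: "card (Ob - {o1}) \<ge> 2" using c3 o1(1) finOb by (simp add: card_Diff_singleton)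
  have ne2: "Ob - {o1} \<noteq> {}"
  proof
    assume "Ob - {o1} = {}" then have "card (Ob - {o1}) = 0" by (simp only: card.empty)
    with c2 show False by simp
  qed
  obtain o2 where o2: "o2 \<in> Ob - {o1}" "\<forall>y\<in>Ob - {o1}. R {y, o1} \<le> R {o2, o1}"
    using ex_max_real[OF _ ne2, of "\<lambda>y. R {y, o1}"] finOb by blast
  have c12: "card {o1, o2} = 2" using o2(1) by auto
  have s12: "{o1, o2} \<subseteq> Ob" using o1(1) o2(1) by auto
  have c1: "card (Ob - {o1, o2}) \<ge> 1" using c3 c12 card_Diff_subset[OF _ s12] by simp
  have ne3: "Ob - {o1, o2} \<noteq> {}"
  proof
    assume "Ob - {o1, o2} = {}" then have "card (Ob - {o1, o2}) = 0" by (simp only: card.empty)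
    with c1 show False by simp
  qed
  obtain o3 where o3: "o3 \<in> Ob - {o1, o2}" "\<forall>y\<in>Ob - {o1, o2}. R {y, o1, o2} \<le> R {o3, o1, o2}"
    using ex_max_real[OF _ ne3, of "\<lambda>y. R {y, o1, o2}"] finOb by blast
  define Y where "Y = {o3, o1, o2}"
  have YO: "Y \<subseteq> Ob" unfolding Y_def using o1 o2 o3 by auto
  have cY: "card Y = 3" unfolding Y_def using o2 o3 by auto
  have OV: "o1 \<in> V" "o2 \<in> V" "o3 \<in> V" using o1 o2 o3 Ob by auto
  have "3 * (R (insert u S) - R S) \<le> R Y" if u: "u \<in> Ob - Y" and S: "Y \<subseteq> S" "S \<subseteq> V" "u \<notin> S" for u S
  proof -
    have uV: "u \<in> V" using u Ob by auto
    have m1: "R (insert u S) - R S \<le> R (insert u {}) - R {}"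
      by (rule R_marg) (use S uV in auto)
    have m2: "R (insert u S) - R S \<le> R (insert u {o1}) - R {o1}"
      by (rule R_marg) (use S uV Y_def in auto)
    have m3: "R (insert u S) - R S \<le> R (insert u {o1, o2}) - R {o1, o2}"
      by (rule R_marg) (use S uV Y_def in auto)
    have a1: "R {u} \<le> R {o1}" using o1(2) u by auto
    have a2: "R {u, o1} \<le> R {o2, o1}" using o2(2) u Y_def by auto
    have a3: "R {u, o1, o2} \<le> R {o3, o1, o2}" using o3(2) u Y_def by auto
    have e2: "{o2, o1} = {o1, o2}" by auto
    show ?thesis using m1 m2 m3 a1 a2 a3 R_empty unfolding Y_def e2 by simp
  qed
  then show ?thesis using YO cY by blast
qed

lemma aug_bound:
  assumes cpos: "\<forall>v\<in>V. 0 < cost v" and Ob: "Ob \<subseteq> V" "sum cost Ob \<le> B"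
    and YO: "Y \<subseteq> Ob"
    and top: "\<forall>u\<in>Ob - Y. \<forall>S. Y \<subseteq> S \<longrightarrow> S \<subseteq> V \<longrightarrow> u \<notin> S \<longrightarrow> 3 * (R (insert u S) - R S) \<le> R Y"
    and fin: "aug_final V F lam pth cap cost B Y Wf"
  shows "(1 - exp (-1)) * R Ob \<le> R Wf"
proof -
  let ?c = "sum cost"
  let ?e = "exp (-1::real)"
  have finOb: "finite Ob" using Ob finV finite_subset by blast
  have YV: "Y \<subseteq> V" using YO Ob by auto
  have finY: "finite Y" using finOb YO finite_subset by blast
  have cnn: "\<And>X. X \<subseteq> V \<Longrightarrow> 0 \<le> ?c X" using cpos by (intro sum_nonneg) (auto intro: less_imp_le)
  have cOb: "?c Ob = ?c Y + ?c (Ob - Y)" using sum.subset_diff[OF YO finOb, of cost] by simp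
  have cY: "?c Y \<le> B" using cOb cnn[of "Ob - Y"] Ob by force
  have fr: "aug_reach V F lam pth cap cost B Y Wf" and nofit: "\<not> (\<exists>u\<in>V - Wf. ?c Wf + cost u \<le> B)"
    using fin unfolding aug_final_def by auto
  have ROb: "0 \<le> R Ob" using R_nonneg[OF Ob(1)] .
  have eb: "?e \<le> 1" by simp
  have e3: "1 / 3 \<le> ?e"
  proof -
    have "exp 1 \<le> (3::real)" by (rule exp_le)
    then have "1 / 3 \<le> 1 / exp (1::real)" by (simp add: field_simps)
    then show ?thesis by (simp add: exp_minus inverse_eq_divide)
  qed
  show ?thesis
  proof (cases "Ob - Y = {}")
    case True
    have WI: "Y \<subseteq> Wf" "Wf \<subseteq> V" using aug_inv[OF cpos fr YV cY] by auto
    have "R Ob \<le> R Wf" by (rule R_mono) (use True WI in auto)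
    then show ?thesis using ROb eb by (smt (verit) mult_left_le_one_le exp_gt_zero)
  next
    case False
    define O' where "O' = Ob - Y"
    define Bp where "Bp = B - ?c Y"
    define g0 where "g0 = R Ob - R Y"
    have g0: "0 \<le> g0" unfolding g0_def using R_mono[OF YO Ob(1)] by simp
    have cO'pos: "0 < ?c O'"
      unfolding O'_def using False cpos Ob finOb by (intro sum_pos) auto
    have cO'B: "?c O' \<le> Bp" unfolding O'_def Bp_def using cOb Ob(2) by simp
    have Bp: "0 < Bp" using cO'pos cO'B by simp
    have RY: "0 \<le> R Y" using R_nonneg[OF YV] .
    define rat where "rat W u = (R (insert u W) - R W) / cost u" for W u
    have an: "\<exists>z\<in>O' - W. (\<forall>o'\<in>O' - W. rat W o' \<le> rat W z) \<and>
        (?c W + cost z > B \<longrightarrow> (1 - ?e) * R Ob \<le> R W) \<and>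
        (\<forall>u. u \<in> V - W \<longrightarrow> ?c W + cost u \<le> B \<longrightarrow> rat W z \<le> rat W u \<longrightarrow>
            R Ob - R (insert u W) \<le> exp (- ((?c W + cost u - ?c Y) / Bp)) * g0)"
      if W: "Y \<subseteq> W" "W \<subseteq> V" "?c W \<le> B"
        and gap: "R Ob - R W \<le> exp (- ((?c W - ?c Y) / Bp)) * g0"
        and ne: "O' - W \<noteq> {}" for W
    proof -
      have finO': "finite (O' - W)" using finOb unfolding O'_def by auto
      obtain z where z: "z \<in> O' - W" "\<forall>o'\<in>O' - W. rat W o' \<le> rat W z"
        using ex_max_real[OF finO' ne, of "rat W"] by blast
      have zV: "z \<in> V" using z(1) Ob unfolding O'_def by auto
      have cz: "0 < cost z" using cpos zV by auto
      define g where "g = R Ob - R W"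
      define rho where "rho = rat W z"
      have mz: "R (insert z W) - R W = rho * cost z" unfolding rho_def rat_def using cz by simp
      have rho0: "0 \<le> rho" unfolding rho_def rat_def using R_marg_nonneg[OF W(2) zV] cz by simp
      have ga: "g \<le> Bp * rho"
      proof -
        have "R Ob \<le> R W + (\<Sum>o'\<in>Ob - W. R (insert o' W) - R W)" by (rule R_bound_marg[OF W(2) Ob(1)])
        also have "Ob - W = O' - W" unfolding O'_def using W(1) by auto
        also have "(\<Sum>o'\<in>O' - W. R (insert o' W) - R W) \<le> (\<Sum>o'\<in>O' - W. rho * cost o')"
        proof (rule sum_mono)
          fix o' assume o': "o' \<in> O' - W"
          have co: "0 < cost o'" using cpos o' Ob unfolding O'_def by auto
          have "rat W o' \<le> rho" using z(2) o' unfolding rho_def by auto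
          then have "rat W o' * cost o' \<le> rho * cost o'" using co by (intro mult_right_mono) auto
          then show "R (insert o' W) - R W \<le> rho * cost o'" unfolding rat_def using co by simp
        qed
        also have "\<dots> = rho * ?c (O' - W)" by (simp add: sum_distrib_left)
        also have "\<dots> \<le> rho * Bp"
        proof (rule mult_left_mono[OF _ rho0])
          have "?c (O' - W) \<le> ?c O'" using finOb cpos Ob unfolding O'_def
            by (intro sum_mono2) (auto intro: less_imp_le)
          then show "?c (O' - W) \<le> Bp" using cO'B by simp
        qed
        finally show ?thesis unfolding g_def by (simp add: algebra_simps)
      qed
      have rho_g: "g / Bp \<le> rho" using ga Bp by (simp add: field_simps)
      have cW0: "0 \<le> ?c W - ?c Y"
      proof -
        have "finite W" using W(2) finV finite_subset by blast
        then have "?c W = ?c Y + ?c (W - Y)" using sum.subset_diff[OF W(1) \<open>finite W\<close>, of cost] by simp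
        then show ?thesis using cnn[of "W - Y"] W(2) by auto
      qed
      have partb: "(1 - ?e) * R Ob \<le> R W" if nf: "?c W + cost z > B"
      proof (cases "g < 0")
        case True
        then show ?thesis unfolding g_def using ROb eb
          by (smt (verit) mult_left_le_one_le exp_gt_zero)
      next
        case False
        then have g0': "0 \<le> g" by simp
        have "R Ob - R (insert z W) = g - rho * cost z" unfolding g_def using mz by simp
        also have "\<dots> \<le> g - g / Bp * cost z" using mult_right_mono[OF rho_g, of "cost z"] cz by simp
        also have "\<dots> = g * (1 - cost z / Bp)" by (simp add: algebra_simps)
        also have "\<dots> \<le> g * exp (- (cost z / Bp))" by (rule one_minus_le_exp[OF g0'])
        also have "\<dots> \<le> exp (- ((?c W - ?c Y) / Bp)) * g0 * exp (- (cost z / Bp))"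
          using gap unfolding g_def by (intro mult_right_mono) auto
        also have "\<dots> = exp (- ((?c W - ?c Y + cost z) / Bp)) * g0"
          by (simp add: exp_add[symmetric] add_divide_distrib diff_divide_distrib algebra_simps)
        also have "\<dots> \<le> ?e * g0"
        proof (rule mult_right_mono[OF _ g0])
          have "1 \<le> (?c W - ?c Y + cost z) / Bp" using nf Bp unfolding Bp_def by (simp add: field_simps)
          then show "exp (- ((?c W - ?c Y + cost z) / Bp)) \<le> ?e" by simp
        qed
        finally have h1: "R Ob - R (insert z W) \<le> ?e * g0" .
        have zO: "z \<in> Ob - Y" "z \<notin> W" using z(1) unfolding O'_def by auto
        have h2: "3 * (R (insert z W) - R W) \<le> R Y" using top zO W by auto
        have "1 * R Y \<le> (3 * ?e) * R Y" by (rule mult_right_mono) (use e3 RY in auto)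
        then have "(1 - ?e) * R Ob \<le> R Ob - ?e * g0 - R Y / 3"
          unfolding g0_def by (simp add: algebra_simps)
        also have "\<dots> \<le> R W" using h1 h2 by simp
        finally show ?thesis .
      qed
      have partc: "R Ob - R (insert u W) \<le> exp (- ((?c W + cost u - ?c Y) / Bp)) * g0"
        if u: "u \<in> V - W" "?c W + cost u \<le> B" "rat W z \<le> rat W u" for u
      proof -
        have cu: "0 < cost u" using cpos u by auto
        have mu: "rho * cost u \<le> R (insert u W) - R W"
          using u(3) cu unfolding rho_def rat_def by (simp add: field_simps)
        show ?thesis
        proof (cases "g < 0")
          case True
          have "R Ob - R (insert u W) \<le> g" unfolding g_def using R_marg_nonneg[OF W(2)] u by auto
          also have "\<dots> \<le> 0" using True by simp
          also have "0 \<le> exp (- ((?c W + cost u - ?c Y) / Bp)) * g0" using g0 by simp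
          finally show ?thesis .
        next
          case False
          then have g0': "0 \<le> g" by simp
          have "R Ob - R (insert u W) \<le> g - rho * cost u" unfolding g_def using mu by simp
          also have "\<dots> \<le> g - g / Bp * cost u" using mult_right_mono[OF rho_g, of "cost u"] cu by simp
          also have "\<dots> = g * (1 - cost u / Bp)" by (simp add: algebra_simps)
          also have "\<dots> \<le> g * exp (- (cost u / Bp))" by (rule one_minus_le_exp[OF g0'])
          also have "\<dots> \<le> exp (- ((?c W - ?c Y) / Bp)) * g0 * exp (- (cost u / Bp))"
            using gap unfolding g_def by (intro mult_right_mono) auto
          also have "\<dots> = exp (- ((?c W + cost u - ?c Y) / Bp)) * g0"
            by (simp add: exp_add[symmetric] add_divide_distrib diff_divide_distrib algebra_simps)
          finally show ?thesis .
        qed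
      qed
      show ?thesis using z partb partc unfolding rho_def by blast
    qed
    have inv0: "S = Y \<Longrightarrow> Y \<subseteq> W \<and> W \<subseteq> V \<and> ?c W \<le> B \<and>
       ((1 - ?e) * R Ob \<le> R W \<or> R Ob - R W \<le> exp (- ((?c W - ?c Y) / Bp)) * g0)"
      if ar: "aug_reach V F lam pth cap cost B S W" for S W
      using ar
    proof (induction rule: aug_reach.induct)
      case (start S) then show ?case unfolding g0_def using YV cY by simp
    next
      case (step S W u)
      have W: "Y \<subseteq> W" "W \<subseteq> V" "?c W \<le> B" using step.IH step.prems by auto
      have finW: "finite W" using W(2) finV finite_subset by blast
      have cI: "?c (insert u W) = ?c W + cost u" using finW step.hyps(2) by simp
      have uV: "u \<in> V" using step.hyps(2) by auto
      have base: "Y \<subseteq> insert u W \<and> insert u W \<subseteq> V \<and> ?c (insert u W) \<le> B"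
        using W uV cI step.hyps(3) by auto
      have "(1 - ?e) * R Ob \<le> R (insert u W) \<or>
            R Ob - R (insert u W) \<le> exp (- ((?c (insert u W) - ?c Y) / Bp)) * g0"
      proof (cases "(1 - ?e) * R Ob \<le> R W")
        case True
        have "R W \<le> R (insert u W)" using R_mono[of W "insert u W"] base by auto
        then show ?thesis using True by linarith
      next
        case False
        then have gap: "R Ob - R W \<le> exp (- ((?c W - ?c Y) / Bp)) * g0" using step.IH step.prems by auto
        show ?thesis
        proof (cases "O' - W = {}")
          case True
          then have "Ob \<subseteq> W" using W unfolding O'_def by auto
          then have "R Ob \<le> R W" using R_mono[OF _ W(2)] by blast
          then have "(1 - ?e) * R Ob \<le> R W" using ROb eb by (smt (verit) mult_left_le_one_le exp_gt_zero)
          then show ?thesis using False by auto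
        next
          case ne: False
          obtain z where z: "z \<in> O' - W"
            "?c W + cost z > B \<longrightarrow> (1 - ?e) * R Ob \<le> R W"
            "\<forall>u. u \<in> V - W \<longrightarrow> ?c W + cost u \<le> B \<longrightarrow> rat W z \<le> rat W u \<longrightarrow>
               R Ob - R (insert u W) \<le> exp (- ((?c W + cost u - ?c Y) / Bp)) * g0"
            using an[OF W gap ne] by blast
          have zV: "z \<in> V - W" using z(1) Ob unfolding O'_def by auto
          have fitz: "?c W + cost z \<le> B" using z(2) False by linarith
          have "rat W z \<le> rat W u" unfolding rat_def using bspec[OF step.hyps(4) zV] fitz by simp
          then have "R Ob - R (insert u W) \<le> exp (- ((?c W + cost u - ?c Y) / Bp)) * g0"
            using z(3) step.hyps(2,3) by blast
          then show ?thesis unfolding cI by (simp add: algebra_simps)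
        qed
      qed
      then show ?case using base by blast
    qed
    have I: "Y \<subseteq> Wf" "Wf \<subseteq> V" "?c Wf \<le> B"
      "(1 - ?e) * R Ob \<le> R Wf \<or> R Ob - R Wf \<le> exp (- ((?c Wf - ?c Y) / Bp)) * g0"
      using inv0[OF fr] by auto
    show ?thesis
    proof (cases "(1 - ?e) * R Ob \<le> R Wf")
      case True then show ?thesis .
    next
      case False
      then have gap: "R Ob - R Wf \<le> exp (- ((?c Wf - ?c Y) / Bp)) * g0" using I(4) by auto
      show ?thesis
      proof (cases "O' - Wf = {}")
        case True
        then have "Ob \<subseteq> Wf" using I unfolding O'_def by auto
        then have "R Ob \<le> R Wf" using R_mono[OF _ I(2)] by blast
        then show ?thesis using ROb eb by (smt (verit) mult_left_le_one_le exp_gt_zero)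
      next
        case ne: False
        obtain z where z: "z \<in> O' - Wf" "?c Wf + cost z > B \<longrightarrow> (1 - ?e) * R Ob \<le> R Wf"
          using an[OF I(1-3) gap ne] by blast
        have "z \<in> V - Wf" using z(1) Ob unfolding O'_def by auto
        then have "?c Wf + cost z > B" using nofit by force
        then show ?thesis using z(2) by blast
      qed
    qed
  qed
qed

end


context net begin

lemma best_in_exists: "finite C \<Longrightarrow> C \<noteq> {} \<Longrightarrow> \<exists>U. best_in V F lam pth cap C U"
  unfolding best_in_def using ex_max_real[of C "\<lambda>W. R W"] by blast

lemma enum_bound:
  assumes cpos: "\<forall>v\<in>V. 0 < cost v" and B0: "0 \<le> B" and eg: "enum_greedy V F lam pth cap cost B U"
  shows "U \<subseteq> V \<and> sum cost U \<le> B \<and>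
    (\<forall>Ob. Ob \<subseteq> V \<and> sum cost Ob \<le> B \<longrightarrow> (1 - exp (-1)) * R Ob \<le> R U)"
proof -
  define S12 where "S12 = {S. S \<subseteq> V \<and> card S \<in> {1, 2} \<and> sum cost S \<le> B}"
  define T3 where "T3 = {S. S \<subseteq> V \<and> card S = 3 \<and> sum cost S \<le> B}"
  have ex: "\<exists>aug. (\<forall>S\<in>T3. aug_final V F lam pth cap cost B S (aug S)) \<and> ((S12 = {} \<and> aug ` T3 = {} \<and> U = {}) \<or>
            (S12 \<noteq> {} \<and> aug ` T3 = {} \<and> best_in V F lam pth cap S12 U) \<or>
            (S12 = {} \<and> aug ` T3 \<noteq> {} \<and> best_in V F lam pth cap (aug ` T3) U) \<or>
            (\<exists>U1 U2. best_in V F lam pth cap S12 U1 \<and> best_in V F lam pth cap (aug ` T3) U2 \<and>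
               U \<in> {U1, U2} \<and> R U = max (R U1) (R U2)))"
    using eg unfolding enum_greedy_def Let_def S12_def[symmetric] T3_def[symmetric] .
  obtain aug where augcs: "(\<forall>S\<in>T3. aug_final V F lam pth cap cost B S (aug S)) \<and> ((S12 = {} \<and> aug ` T3 = {} \<and> U = {}) \<or>
            (S12 \<noteq> {} \<and> aug ` T3 = {} \<and> best_in V F lam pth cap S12 U) \<or>
            (S12 = {} \<and> aug ` T3 \<noteq> {} \<and> best_in V F lam pth cap (aug ` T3) U) \<or>
            (\<exists>U1 U2. best_in V F lam pth cap S12 U1 \<and> best_in V F lam pth cap (aug ` T3) U2 \<and>
               U \<in> {U1, U2} \<and> R U = max (R U1) (R U2)))"
    using ex by (rule exE)
  have aug: "\<forall>S\<in>T3. aug_final V F lam pth cap cost B S (aug S)" using augcs by (rule conjunct1)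
  have cs: "(S12 = {} \<and> aug ` T3 = {} \<and> U = {}) \<or>
            (S12 \<noteq> {} \<and> aug ` T3 = {} \<and> best_in V F lam pth cap S12 U) \<or>
            (S12 = {} \<and> aug ` T3 \<noteq> {} \<and> best_in V F lam pth cap (aug ` T3) U) \<or>
            (\<exists>U1 U2. best_in V F lam pth cap S12 U1 \<and> best_in V F lam pth cap (aug ` T3) U2 \<and>
               U \<in> {U1, U2} \<and> R U = max (R U1) (R U2))" using augcs by (rule conjunct2)
  have augok: "aug S \<subseteq> V \<and> sum cost (aug S) \<le> B" if ST: "S \<in> T3" for S
  proof -
    have ar: "aug_reach V F lam pth cap cost B S (aug S)" using aug ST unfolding aug_final_def by blast
    have "S \<subseteq> V" "sum cost S \<le> B" using ST unfolding T3_def by auto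
    then show ?thesis using aug_inv[OF cpos ar] by blast
  qed
  have S12ok: "S \<subseteq> V \<and> sum cost S \<le> B" if "S \<in> S12" for S using that unfolding S12_def by auto
  have Uok: "U \<subseteq> V \<and> sum cost U \<le> B"
    using cs
  proof (elim disjE exE conjE)
    assume "U = {}" then show ?thesis using B0 by simp
  next
    assume "best_in V F lam pth cap S12 U" then show ?thesis using S12ok unfolding best_in_def by blast
  next
    assume "best_in V F lam pth cap (aug ` T3) U" then show ?thesis using augok unfolding best_in_def by blast
  next
    fix U1 U2 assume "best_in V F lam pth cap S12 U1" "best_in V F lam pth cap (aug ` T3) U2" "U \<in> {U1, U2}"
    then show ?thesis using S12ok augok unfolding best_in_def by blast
  qed
  have "(1 - exp (-1)) * R Ob \<le> R U" if Ob: "Ob \<subseteq> V" "sum cost Ob \<le> B" for Ob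
  proof -
    have finOb: "finite Ob" using Ob finV finite_subset by blast
    have RO: "0 \<le> R Ob" using R_nonneg[OF Ob(1)] .
    have RU: "0 \<le> R U" using R_nonneg Uok by auto
    have le1: "(1 - exp (-1)) * R Ob \<le> R Ob" using RO by (simp add: mult_left_le_one_le)
    consider (z) "card Ob = 0" | (s) "card Ob = 1 \<or> card Ob = 2" | (b) "3 \<le> card Ob" by linarith
    then show ?thesis
    proof cases
      case z
      then have "Ob = {}" using finOb by simp
      then show ?thesis using R_empty RU by simp
    next
      case s
      then have ObS: "Ob \<in> S12" unfolding S12_def using Ob by auto
      have "R Ob \<le> R U"
        using cs
      proof (elim disjE exE conjE)
        assume "S12 = {}" then show ?thesis using ObS by auto
      next
        assume "best_in V F lam pth cap S12 U" then show ?thesis using ObS unfolding best_in_def by auto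
      next
        assume "S12 = {}" then show ?thesis using ObS by auto
      next
        fix U1 U2 assume "best_in V F lam pth cap S12 U1" "R U = max (R U1) (R U2)"
        then show ?thesis using ObS unfolding best_in_def by auto
      qed
      then show ?thesis using le1 by linarith
    next
      case b
      obtain Y where Y: "Y \<subseteq> Ob" "card Y = 3"
        "\<forall>u\<in>Ob - Y. \<forall>S. Y \<subseteq> S \<longrightarrow> S \<subseteq> V \<longrightarrow> u \<notin> S \<longrightarrow> 3 * (R (insert u S) - R S) \<le> R Y"
        using top3[OF Ob(1) b] by blast
      have "sum cost Y \<le> sum cost Ob" using finOb Y(1) cpos Ob(1)
        by (intro sum_mono2) (auto intro: less_imp_le)
      then have YT: "Y \<in> T3" unfolding T3_def using Y Ob by auto
      have "(1 - exp (-1)) * R Ob \<le> R (aug Y)"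
        by (rule aug_bound[OF cpos Ob Y(1) Y(3)]) (use aug YT in auto)
      moreover have "R (aug Y) \<le> R U"
        using cs
      proof (elim disjE exE conjE)
        assume "aug ` T3 = {}" then show ?thesis using YT by auto
      next
        assume "aug ` T3 = {}" then show ?thesis using YT by auto
      next
        assume "best_in V F lam pth cap (aug ` T3) U" then show ?thesis using YT unfolding best_in_def by auto
      next
        fix U1 U2 assume "best_in V F lam pth cap (aug ` T3) U2" "R U = max (R U1) (R U2)"
        then show ?thesis using YT unfolding best_in_def by auto
      qed
      ultimately show ?thesis by linarith
    qed
  qed
  then show ?thesis using Uok by blast
qed

lemma placement_bound:
  assumes cpos: "\<forall>v\<in>V. 0 < cost v" and B0: "0 \<le> B" and pl: "placement V F lam pth cap cost B U"
  shows "U \<subseteq> V \<and> sum cost U \<le> B \<and>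
    (\<forall>Ob. Ob \<subseteq> V \<and> sum cost Ob \<le> B \<longrightarrow> (1 - exp (-1)) * R Ob \<le> R U)"
proof (cases "\<exists>b. \<forall>v\<in>V. cost v = b")
  case True
  then obtain b where b: "\<forall>v\<in>V. cost v = b" "submodular_greedy V F lam pth cap b B U"
    using pl unfolding placement_def by auto
  show ?thesis
  proof (cases "V = {}")
    case True
    have "greedy_reach V F lam pth cap 0 U" using b(2) True unfolding submodular_greedy_def by simp
    then have "finite U" "card U = 0" "U \<subseteq> V" using greedy_inv by auto
    then have U0: "U = {}" by simp
    have "(1 - exp (-1)) * R Ob \<le> R U" if "Ob \<subseteq> V" for Ob
    proof -
      have "Ob = {}" using that True by auto
      then show ?thesis using U0 R_empty by simp
    qed
    then show ?thesis using U0 B0 by auto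
  next
    case False
    then obtain v where "v \<in> V" by auto
    then have "0 < b" using b(1) cpos by auto
    then show ?thesis using subgreedy_bound[OF _ B0 b(1) b(2)] by blast
  qed
next
  case False
  then have "enum_greedy V F lam pth cap cost B U" using pl unfolding placement_def by auto
  then show ?thesis using enum_bound[OF cpos B0] by blast
qed

lemma greedy_exists: "k \<le> card V \<Longrightarrow> \<exists>W. greedy_reach V F lam pth cap k W"
proof (induction k)
  case 0 then show ?case using greedy_reach.start by blast
next
  case (Suc k)
  then obtain W where W: "greedy_reach V F lam pth cap k W" by auto
  have Wi: "W \<subseteq> V" "finite W" "card W = k" using greedy_inv[OF W] by auto
  have "V - W \<noteq> {}"
  proof
    assume "V - W = {}" then have "V \<subseteq> W" by auto
    then have "card V \<le> card W" using Wi by (intro card_mono) auto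
    then show False using Suc.prems Wi by simp
  qed
  then obtain u where u: "u \<in> V - W"
      "\<forall>w\<in>V - W. R (insert w W) - R W \<le> R (insert u W) - R W"
    using ex_max_real[of "V - W" "\<lambda>w. R (insert w W) - R W"] finV by blast
  then show ?case using greedy_reach.step[OF W u(1)] by blast
qed

lemma aug_exists_from:
  assumes cpos: "\<forall>v\<in>V. 0 < cost v"
  shows "aug_reach V F lam pth cap cost B S W \<Longrightarrow> \<exists>W'. aug_final V F lam pth cap cost B S W'"
proof (induction "card (V - W)" arbitrary: W rule: less_induct)
  case less
  show ?case
  proof (cases "\<exists>u\<in>V - W. sum cost W + cost u \<le> B")
    case False
    then show ?thesis using less.prems unfolding aug_final_def by blast
  next
    case True
    define Fit where "Fit = {u\<in>V - W. sum cost W + cost u \<le> B}"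
    have "finite Fit" "Fit \<noteq> {}" unfolding Fit_def using finV True by auto
    then obtain u where u: "u \<in> Fit"
      "\<forall>w\<in>Fit. (R (insert w W) - R W) / cost w \<le> (R (insert u W) - R W) / cost u"
      using ex_max_real[of Fit "\<lambda>w. (R (insert w W) - R W) / cost w"] by blast
    have st: "aug_reach V F lam pth cap cost B S (insert u W)"
      by (rule aug_reach.step[OF less.prems]) (use u in \<open>auto simp: Fit_def\<close>)
    have "card (V - insert u W) < card (V - W)"
      using u(1) finV unfolding Fit_def by (intro psubset_card_mono) auto
    then show ?thesis using less.hyps st by blast
  qed
qed

lemma placement_exists:
  assumes cpos: "\<forall>v\<in>V. 0 < cost v"
  shows "\<exists>U. placement V F lam pth cap cost B U"
proof (cases "\<exists>b. \<forall>v\<in>V. cost v = b")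
  case True
  then obtain b where b: "\<forall>v\<in>V. cost v = b" by auto
  obtain U where "greedy_reach V F lam pth cap (min (nat \<lfloor>B / b\<rfloor>) (card V)) U"
    using greedy_exists[of "min (nat \<lfloor>B / b\<rfloor>) (card V)"] by auto
  then have "submodular_greedy V F lam pth cap b B U" unfolding submodular_greedy_def .
  then show ?thesis unfolding placement_def using True b by auto
next
  case False
  define S12 where "S12 = {S. S \<subseteq> V \<and> card S \<in> {1, 2} \<and> sum cost S \<le> B}"
  define T3 where "T3 = {S. S \<subseteq> V \<and> card S = 3 \<and> sum cost S \<le> B}"
  have "\<forall>S\<in>T3. \<exists>W. aug_final V F lam pth cap cost B S W"
    using aug_exists_from[OF cpos] aug_reach.start by blast
  then obtain aug where aug: "\<forall>S\<in>T3. aug_final V F lam pth cap cost B S (aug S)" by metis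
  have finS12: "finite S12" unfolding S12_def using finV by (auto intro: finite_subset[of _ "Pow V"])
  have finT3: "finite (aug ` T3)" unfolding T3_def using finV by (auto intro: finite_subset[of _ "Pow V"])
  have "\<exists>U. (S12 = {} \<and> aug ` T3 = {} \<and> U = {}) \<or>
            (S12 \<noteq> {} \<and> aug ` T3 = {} \<and> best_in V F lam pth cap S12 U) \<or>
            (S12 = {} \<and> aug ` T3 \<noteq> {} \<and> best_in V F lam pth cap (aug ` T3) U) \<or>
            (\<exists>U1 U2. best_in V F lam pth cap S12 U1 \<and> best_in V F lam pth cap (aug ` T3) U2 \<and>
               U \<in> {U1, U2} \<and> R U = max (R U1) (R U2))"
  proof (cases "S12 = {}"; cases "aug ` T3 = {}")
    assume "S12 = {}" "aug ` T3 = {}" then show ?thesis by blast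
  next
    assume "S12 = {}" "aug ` T3 \<noteq> {}" then show ?thesis using best_in_exists[OF finT3] by blast
  next
    assume "S12 \<noteq> {}" "aug ` T3 = {}" then show ?thesis using best_in_exists[OF finS12] by blast
  next
    assume a: "S12 \<noteq> {}" "aug ` T3 \<noteq> {}"
    obtain U1 where U1: "best_in V F lam pth cap S12 U1" using best_in_exists[OF finS12 a(1)] by blast
    obtain U2 where U2: "best_in V F lam pth cap (aug ` T3) U2" using best_in_exists[OF finT3 a(2)] by blast
    define U where "U = (if R U2 \<le> R U1 then U1 else U2)"
    have "U \<in> {U1, U2} \<and> R U = max (R U1) (R U2)" unfolding U_def by auto
    then show ?thesis using U1 U2 by blast
  qed
  then obtain U where "(S12 = {} \<and> aug ` T3 = {} \<and> U = {}) \<or>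
            (S12 \<noteq> {} \<and> aug ` T3 = {} \<and> best_in V F lam pth cap S12 U) \<or>
            (S12 = {} \<and> aug ` T3 \<noteq> {} \<and> best_in V F lam pth cap (aug ` T3) U) \<or>
            (\<exists>U1 U2. best_in V F lam pth cap S12 U1 \<and> best_in V F lam pth cap (aug ` T3) U2 \<and>
               U \<in> {U1, U2} \<and> R U = max (R U1) (R U2))" by blast
  then have "enum_greedy V F lam pth cap cost B U"
    unfolding enum_greedy_def Let_def S12_def[symmetric] T3_def[symmetric] using aug
    by (intro exI[of _ aug] conjI)
  then show ?thesis unfolding placement_def using False by auto
qed

end


definition walk :: "('f \<times> 'v) set \<Rightarrow> ('f + 'v) list \<Rightarrow> bool" where
  "walk E ws \<longleftrightarrow> (\<forall>i. Suc i < length ws \<longrightarrow> adjG E (ws ! i) (ws ! Suc i))"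

lemma adj_cases:
  assumes "adjG E a b"
  shows "(\<exists>f v. a = Inl f \<and> b = Inr v \<and> (f, v) \<in> E \<and> Gedge_of a b = (f, v)) \<or>
         (\<exists>f v. a = Inr v \<and> b = Inl f \<and> (f, v) \<in> E \<and> Gedge_of a b = (f, v))"
  using assms unfolding adjG_def Gedge_of_def
  by (cases a; cases b) auto

lemma adj_sym: "adjG E a b \<Longrightarrow> adjG E b a"
  unfolding adjG_def by auto

lemma adj_isl: "adjG E a b \<Longrightarrow> isl a \<noteq> isl b"
  unfolding adjG_def by auto

lemma adj_edge: "adjG E a b \<Longrightarrow> Gedge_of a b \<in> E"
  using adj_cases[of E a b] by auto

lemma walk_alt:
  assumes w: "walk E ws" and i: "i < length ws"
  shows "isl (ws ! i) = (if even i then isl (ws ! 0) else \<not> isl (ws ! 0))"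
  using i
proof (induction i)
  case 0 then show ?case by simp
next
  case (Suc i)
  have "adjG E (ws ! i) (ws ! Suc i)" using w Suc.prems unfolding walk_def by auto
  then have "isl (ws ! Suc i) = (\<not> isl (ws ! i))" using adj_isl by blast
  then show ?case using Suc by auto
qed

lemma telescope_ind:
  fixes ws :: "'a list" and a :: 'a
  shows "(\<Sum>i<n. ((if ws ! i = a then 1 else 0) + (if ws ! Suc i = a then 1 else 0)) * (-1::real) ^ i)
     = (if ws ! 0 = a then 1 else 0) - (if ws ! n = a then (-1) ^ n else 0)"
  by (induction n) (auto simp: algebra_simps)

definition inc :: "('f + 'v) list \<Rightarrow> 'f + 'v \<Rightarrow> real" where
  "inc ws a = (if ws ! 0 = a then 1 else 0) - (if ws ! (length ws - 1) = a then (-1) ^ (length ws - 1) else 0)"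

lemma rc_node_sum:
  assumes w: "walk E ws" and EF: "\<forall>p\<in>E. fst p \<in> F" and finF: "finite F" and ne: "ws \<noteq> []"
  shows "(\<Sum>f\<in>F. rate_change ws s f v) = s * inc ws (Inr v)"
proof -
  let ?n = "length ws - 1"
  have "(\<Sum>f\<in>F. rate_change ws s f v) =
      (\<Sum>i<?n. \<Sum>f\<in>F. if Gedge_of (ws ! i) (ws ! Suc i) = (f, v) then s * (-1) ^ i else 0)"
    unfolding rate_change_def by (rule sum.swap)
  also have "\<dots> = (\<Sum>i<?n. s * (((if ws ! i = Inr v then 1 else 0) + (if ws ! Suc i = Inr v then 1 else 0)) * (-1) ^ i))"
  proof (rule sum.cong[OF refl])
    fix i assume i: "i \<in> {..<?n}"
    then have adj: "adjG E (ws ! i) (ws ! Suc i)" using w unfolding walk_def by auto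
    from adj_cases[OF adj] obtain g u where gu: "(ws ! i = Inl g \<and> ws ! Suc i = Inr u) \<or> (ws ! i = Inr u \<and> ws ! Suc i = Inl g)"
      "(g, u) \<in> E" "Gedge_of (ws ! i) (ws ! Suc i) = (g, u)" by blast
    have gF: "g \<in> F" using EF gu(2) by auto
    have "(\<Sum>f\<in>F. if Gedge_of (ws ! i) (ws ! Suc i) = (f, v) then s * (-1) ^ i else 0) =
          (\<Sum>f\<in>F. if f = g then (if u = v then s * (-1) ^ i else 0) else 0)"
      using gu(3) by (intro sum.cong) auto
    also have "\<dots> = (if u = v then s * (-1) ^ i else 0)" using gF finF by simp
    finally show "(\<Sum>f\<in>F. if Gedge_of (ws ! i) (ws ! Suc i) = (f, v) then s * (-1) ^ i else 0) =
        s * (((if ws ! i = Inr v then 1 else 0) + (if ws ! Suc i = Inr v then 1 else 0)) * (-1) ^ i)"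
      using gu(1) by auto
  qed
  also have "\<dots> = s * inc ws (Inr v)"
    unfolding inc_def sum_distrib_left[symmetric] telescope_ind by simp
  finally show ?thesis .
qed

lemma rc_flow_sum:
  assumes w: "walk E ws" and EU: "\<forall>p\<in>E. snd p \<in> U" and finU: "finite U" and ne: "ws \<noteq> []"
  shows "(\<Sum>v\<in>U. rate_change ws s f v) = s * inc ws (Inl f)"
proof -
  let ?n = "length ws - 1"
  have "(\<Sum>v\<in>U. rate_change ws s f v) =
      (\<Sum>i<?n. \<Sum>v\<in>U. if Gedge_of (ws ! i) (ws ! Suc i) = (f, v) then s * (-1) ^ i else 0)"
    unfolding rate_change_def by (rule sum.swap)
  also have "\<dots> = (\<Sum>i<?n. s * (((if ws ! i = Inl f then 1 else 0) + (if ws ! Suc i = Inl f then 1 else 0)) * (-1) ^ i))"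
  proof (rule sum.cong[OF refl])
    fix i assume i: "i \<in> {..<?n}"
    then have adj: "adjG E (ws ! i) (ws ! Suc i)" using w unfolding walk_def by auto
    from adj_cases[OF adj] obtain g u where gu: "(ws ! i = Inl g \<and> ws ! Suc i = Inr u) \<or> (ws ! i = Inr u \<and> ws ! Suc i = Inl g)"
      "(g, u) \<in> E" "Gedge_of (ws ! i) (ws ! Suc i) = (g, u)" by blast
    have uU: "u \<in> U" using EU gu(2) by auto
    have "(\<Sum>v\<in>U. if Gedge_of (ws ! i) (ws ! Suc i) = (f, v) then s * (-1) ^ i else 0) =
          (\<Sum>v\<in>U. if v = u then (if g = f then s * (-1) ^ i else 0) else 0)"
      using gu(3) by (intro sum.cong) auto
    also have "\<dots> = (if g = f then s * (-1) ^ i else 0)" using uU finU by simp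
    finally show "(\<Sum>v\<in>U. if Gedge_of (ws ! i) (ws ! Suc i) = (f, v) then s * (-1) ^ i else 0) =
        s * (((if ws ! i = Inl f then 1 else 0) + (if ws ! Suc i = Inl f then 1 else 0)) * (-1) ^ i)"
      using gu(1) by auto
  qed
  also have "\<dots> = s * inc ws (Inl f)"
    unfolding inc_def sum_distrib_left[symmetric] telescope_ind by simp
  finally show ?thesis .
qed

lemma rc_support:
  assumes w: "walk E ws" and nz: "rate_change ws s f v \<noteq> 0"
  shows "(f, v) \<in> E"
proof -
  obtain i where i0: "i \<in> {..<length ws - 1}"
      "(if Gedge_of (ws ! i) (ws ! Suc i) = (f, v) then s * (-1) ^ i else 0) \<noteq> (0::real)"
    using sum.not_neutral_contains_not_neutral[OF nz[unfolded rate_change_def]] by blast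
  then have i: "i < length ws - 1" "Gedge_of (ws ! i) (ws ! Suc i) = (f, v)"
    by (auto split: if_splits)
  then have "adjG E (ws ! i) (ws ! Suc i)" using w unfolding walk_def by auto
  then show ?thesis using adj_edge i(2) by metis
qed

lemma Gedge_eq:
  assumes "adjG E a b" "adjG E c d" "Gedge_of a b = Gedge_of c d"
  shows "(a = c \<and> b = d) \<or> (a = d \<and> b = c)"
  using adj_cases[OF assms(1)] adj_cases[OF assms(2)] assms(3) by auto

lemma rc_unique:
  assumes w: "walk E ws" and d: "distinct ws" and j: "Suc j < length ws"
  shows "rate_change ws s (fst (Gedge_of (ws ! j) (ws ! Suc j))) (snd (Gedge_of (ws ! j) (ws ! Suc j))) = s * (-1) ^ j"
proof -
  let ?e = "Gedge_of (ws ! j) (ws ! Suc j)"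
  have "rate_change ws s (fst ?e) (snd ?e) = (\<Sum>i<length ws - 1. if i = j then s * (-1) ^ i else 0)"
    unfolding rate_change_def
  proof (rule sum.cong[OF refl])
    fix i assume i: "i \<in> {..<length ws - 1}"
    have "Gedge_of (ws ! i) (ws ! Suc i) = ?e \<longleftrightarrow> i = j"
    proof
      assume eq: "Gedge_of (ws ! i) (ws ! Suc i) = ?e"
      have a1: "adjG E (ws ! i) (ws ! Suc i)" "adjG E (ws ! j) (ws ! Suc j)"
        using w i j unfolding walk_def by auto
      from Gedge_eq[OF a1 eq] have "(ws ! i = ws ! j \<and> ws ! Suc i = ws ! Suc j) \<or> (ws ! i = ws ! Suc j \<and> ws ! Suc i = ws ! j)" .
      then show "i = j"
      proof
        assume "ws ! i = ws ! j \<and> ws ! Suc i = ws ! Suc j"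
        then show "i = j" using nth_eq_iff_index_eq[OF d, of i j] i j by auto
      next
        assume h: "ws ! i = ws ! Suc j \<and> ws ! Suc i = ws ! j"
        then have "i = Suc j" using nth_eq_iff_index_eq[OF d, of i "Suc j"] i j by auto
        moreover have "Suc i = j" using h nth_eq_iff_index_eq[OF d, of "Suc i" j] i j by auto
        ultimately show "i = j" by simp
      qed
    qed simp
    then show "(if Gedge_of (ws ! i) (ws ! Suc i) = (fst ?e, snd ?e) then s * (-1) ^ i else 0) =
          (if i = j then s * (-1) ^ i else 0)" by simp
  qed
  also have "\<dots> = s * (-1) ^ j" using j by simp
  finally show ?thesis .
qed


definition acyc :: "'f set \<Rightarrow> 'v set \<Rightarrow> ('f \<times> 'v) set \<Rightarrow> bool" where
  "acyc F U E \<longleftrightarrow> (\<forall>d. (\<forall>f v. (f, v) \<notin> E \<longrightarrow> d f v = (0::real)) \<and> (\<forall>v\<in>U. (\<Sum>f\<in>F. d f v) = 0) \<and>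
      (\<forall>f\<in>F. (\<Sum>v\<in>U. d f v) = 0) \<longrightarrow> (\<forall>p\<in>E. d (fst p) (snd p) = 0))"

locale mca = net +
  fixes U
  assumes UV: "U \<subseteq> V"
    and lam_cap: "\<And>f v. f \<in> F \<Longrightarrow> v \<in> V \<Longrightarrow> lam f \<le> cap v"
begin

abbreviation G where "G y \<equiv> Gedges F pth U y"
abbreviation ar where "ar asg v \<equiv> assigned_rate F lam asg v"

lemma finUU: "finite U" using finU[OF UV] .

lemma G_iff: "(f, v) \<in> G y \<longleftrightarrow> f \<in> F \<and> v \<in> U \<and> v \<in> pth f \<and> 0 < y f v \<and> y f v < 1"
  unfolding Gedges_def by auto

lemma G_sub: "G y \<subseteq> F \<times> U" unfolding Gedges_def by auto

lemma finG: "finite (G y)" using G_sub finF finUU by (meson finite_SigmaI finite_subset)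

lemma acyc_mono: "acyc F U E \<Longrightarrow> E' \<subseteq> E \<Longrightarrow> acyc F U E'"
  unfolding acyc_def by blast

definition Asg :: "('b \<Rightarrow> 'a option) \<Rightarrow> real" where
  "Asg asg = (\<Sum>f\<in>F. if asg f \<noteq> None then lam f else 0)"
definition Afr :: "('b \<Rightarrow> 'a \<Rightarrow> real) \<Rightarrow> real" where
  "Afr y = (\<Sum>f\<in>F. \<Sum>w\<in>U. lam f * y f w)"
definition edgeless :: "('b \<Rightarrow> 'a \<Rightarrow> real) \<Rightarrow> 'a set" where
  "edgeless y = {v\<in>U. \<forall>f. (f, v) \<notin> G y}"
definition Dch :: "('b \<Rightarrow> 'a option) \<Rightarrow> ('b \<Rightarrow> 'a \<Rightarrow> real) \<Rightarrow> real" where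
  "Dch asg y = (\<Sum>v\<in>edgeless y. ar asg v)"

definition Inv :: "('b \<Rightarrow> 'a option) \<Rightarrow> ('b \<Rightarrow> 'a \<Rightarrow> real) \<Rightarrow> bool" where
  "Inv asg y \<longleftrightarrow>
    (\<forall>f\<in>F. \<forall>v. asg f = Some v \<longrightarrow> v \<in> U \<and> v \<in> pth f \<and> (\<forall>w\<in>U. y f w = 0)) \<and>
    (\<forall>f\<in>F. \<forall>w\<in>U. 0 \<le> y f w \<and> y f w < 1 \<and> (w \<notin> pth f \<longrightarrow> y f w = 0)) \<and>
    (\<forall>f\<in>F. (\<Sum>w\<in>U. y f w) \<le> 1) \<and>
    (\<forall>v\<in>U. ar asg v + (\<Sum>f\<in>F. lam f * y f v) \<le> cap v) \<and>
    acyc F U (G y) \<and>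
    R U \<le> Asg asg + Afr y + Dch asg y"

lemma ar_alt: "ar asg v = (\<Sum>f\<in>F. if asg f = Some v then lam f else 0)"
  unfolding assigned_rate_def using finF by (simp add: sum.inter_filter)

lemma ar_nonneg: "0 \<le> ar asg v"
  unfolding ar_alt using lam_pos by (intro sum_nonneg) (auto intro: less_imp_le)

lemma Dch_nonneg: "0 \<le> Dch asg y"
  unfolding Dch_def by (rule sum_nonneg) (rule ar_nonneg)

lemma fin_edgeless: "finite (edgeless y)" unfolding edgeless_def using finUU by auto

lemma Dch_grow:
  assumes sub: "edgeless y \<subseteq> edgeless y'" and arle: "\<And>w. w \<in> edgeless y \<Longrightarrow> ar asg w \<le> ar asg' w"
  shows "Dch asg y \<le> Dch asg' y'"
proof -
  have "Dch asg y \<le> (\<Sum>w\<in>edgeless y. ar asg' w)" unfolding Dch_def using arle by (intro sum_mono) auto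
  also have "\<dots> \<le> Dch asg' y'" unfolding Dch_def using sub fin_edgeless ar_nonneg by (intro sum_mono2) auto
  finally show ?thesis .
qed

lemma Dch_grow1:
  assumes sub: "edgeless y \<subseteq> edgeless y'" and v: "v \<in> edgeless y'" "v \<notin> edgeless y"
    and arle: "\<And>w. w \<in> edgeless y \<Longrightarrow> ar asg w \<le> ar asg' w"
  shows "Dch asg y + ar asg' v \<le> Dch asg' y'"
proof -
  have "Dch asg y \<le> (\<Sum>w\<in>edgeless y. ar asg' w)" unfolding Dch_def using arle by (intro sum_mono) auto
  also have "\<dots> + ar asg' v = (\<Sum>w\<in>insert v (edgeless y). ar asg' w)" using v(2) fin_edgeless by simp
  also have "\<dots> \<le> Dch asg' y'" unfolding Dch_def using sub v fin_edgeless ar_nonneg by (intro sum_mono2) auto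
  finally show ?thesis by simp
qed

lemma Inv_cap: "Inv asg y \<Longrightarrow> v \<in> U \<Longrightarrow> ar asg v \<le> cap v"
proof -
  assume I: "Inv asg y" and v: "v \<in> U"
  have "0 \<le> (\<Sum>f\<in>F. lam f * y f v)" using I v lam_pos unfolding Inv_def
    by (intro sum_nonneg mult_nonneg_nonneg) (auto intro: less_imp_le)
  then show ?thesis using I v unfolding Inv_def by force
qed

lemma Inv_final:
  assumes I: "Inv asg y" and G0: "G y = {}"
  shows "R U \<le> 2 * Asg asg"
proof -
  have y0: "y f w = 0" if "f \<in> F" "w \<in> U" for f w
  proof -
    have "0 \<le> y f w" "y f w < 1" "w \<notin> pth f \<longrightarrow> y f w = 0" using I that unfolding Inv_def by auto
    moreover have "(f, w) \<notin> G y" using G0 by auto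
    ultimately show ?thesis using that unfolding G_iff by force
  qed
  have "Afr y = 0" unfolding Afr_def using y0 by simp
  moreover have "edgeless y = U" unfolding edgeless_def using G0 by auto
  moreover have "(\<Sum>v\<in>U. ar asg v) = Asg asg"
  proof -
    have "(\<Sum>v\<in>U. ar asg v) = (\<Sum>v\<in>U. \<Sum>f\<in>F. if asg f = Some v then lam f else 0)" unfolding ar_alt ..
    also have "\<dots> = (\<Sum>f\<in>F. \<Sum>v\<in>U. if asg f = Some v then lam f else 0)" by (rule sum.swap)
    also have "\<dots> = (\<Sum>f\<in>F. if asg f \<noteq> None then lam f else 0)"
    proof (rule sum.cong[OF refl])
      fix f assume f: "f \<in> F"
      show "(\<Sum>v\<in>U. if asg f = Some v then lam f else 0) = (if asg f \<noteq> None then lam f else 0)"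
      proof (cases "asg f")
        case None then show ?thesis by simp
      next
        case (Some v)
        then have "v \<in> U" using I f unfolding Inv_def by auto
        then show ?thesis using Some finUU by (simp add: sum.delta)
      qed
    qed
    finally show ?thesis unfolding Asg_def .
  qed
  ultimately show ?thesis using I unfolding Inv_def Dch_def by simp
qed

lemma Inv_init:
  assumes xb: "basic U x0" and opt: "obj U x0 = R U"
    and y0: "y0 = (\<lambda>f v. x0 f v / lam f)"
    and a0: "\<forall>f. if f \<in> F \<and> (\<exists>v\<in>U \<inter> pth f. y0 f v = 1)
             then (\<exists>v\<in>U \<inter> pth f. y0 f v = 1 \<and> asg0 f = Some v)
             else asg0 f = None"
    and y1: "y1 = (\<lambda>f. if asg0 f \<noteq> None then (\<lambda>_. 0) else y0 f)"
  shows "Inv asg0 y1"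
proof -
  have fx: "feas U x0" using basic_feas[OF xb] .
  have fx': "(\<forall>f\<in>F. \<forall>v\<in>V. 0 \<le> x0 f v)" "(\<forall>v\<in>U. load x0 v \<le> cap v)" "supp U x0" "(\<forall>f\<in>F. fsum U x0 f \<le> lam f)"
    using fx unfolding feas_def2 by auto
  have xnn: "\<And>f w. f \<in> F \<Longrightarrow> w \<in> U \<Longrightarrow> 0 \<le> x0 f w" using fx'(1) UV by auto
  have xle: "x0 f w \<le> lam f" if "f \<in> F" "w \<in> U" for f w
  proof -
    have "x0 f w \<le> (\<Sum>w\<in>U. x0 f w)" using that xnn finUU by (intro member_le_sum) auto
    then show ?thesis using fx'(4) that unfolding fsum_def by auto
  qed
  have xoff: "\<And>f w. f \<in> F \<Longrightarrow> w \<in> U \<Longrightarrow> w \<notin> pth f \<Longrightarrow> x0 f w = 0"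
    using fx'(3) UV unfolding supp_def by auto
  have asgS: "asg0 f = Some v \<Longrightarrow> f \<in> F \<and> v \<in> U \<and> v \<in> pth f \<and> x0 f v = lam f" for f v
  proof -
    assume s: "asg0 f = Some v"
    have c: "f \<in> F \<and> (\<exists>v\<in>U \<inter> pth f. y0 f v = 1)"
      using a0[rule_format, of f] s by (auto split: if_splits)
    then obtain v' where v': "v' \<in> U \<inter> pth f" "y0 f v' = 1" "asg0 f = Some v'"
      using a0[rule_format, of f] by auto
    have "v' = v" using v'(3) s by simp
    moreover have "x0 f v' = lam f" using v'(2) lam_pos[of f] c unfolding y0 by (simp add: field_simps)
    ultimately show ?thesis using c v' by auto
  qed
  have asgN: "y0 f w \<noteq> 1" if h: "f \<in> F" "asg0 f = None" "w \<in> U" "w \<in> pth f" for f w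
  proof
    assume "y0 f w = 1"
    then have "f \<in> F \<and> (\<exists>v\<in>U \<inter> pth f. y0 f v = 1)" using h by blast
    then have "\<exists>v\<in>U \<inter> pth f. y0 f v = 1 \<and> asg0 f = Some v" using a0[rule_format, of f] by simp
    then show False using h(2) by auto
  qed
  have y0r: "y0 f w = x0 f w / lam f" for f w unfolding y0 by simp
  have lamx: "lam f * y0 f w = x0 f w" if "f \<in> F" for f w using lam_pos[OF that] unfolding y0r by simp
  have I1: "\<forall>f\<in>F. \<forall>v. asg0 f = Some v \<longrightarrow> v \<in> U \<and> v \<in> pth f \<and> (\<forall>w\<in>U. y1 f w = 0)"
    using asgS unfolding y1 by auto
  have I2: "\<forall>f\<in>F. \<forall>w\<in>U. 0 \<le> y1 f w \<and> y1 f w < 1 \<and> (w \<notin> pth f \<longrightarrow> y1 f w = 0)"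
  proof (intro ballI conjI impI)
    fix f w assume f: "f \<in> F" and w: "w \<in> U"
    show "0 \<le> y1 f w" unfolding y1 y0r using xnn[OF f w] lam_pos[OF f] by auto
    show "y1 f w < 1"
    proof (cases "asg0 f = None")
      case True
      have "y0 f w \<le> 1" unfolding y0r using xle[OF f w] lam_pos[OF f] by simp
      moreover have "y0 f w \<noteq> 1"
      proof (cases "w \<in> pth f")
        case True then show ?thesis using asgN[OF f \<open>asg0 f = None\<close> w] by auto
      next
        case False then show ?thesis unfolding y0r using xoff[OF f w] by simp
      qed
      ultimately show ?thesis unfolding y1 using True by auto
    qed (simp add: y1)
    show "w \<notin> pth f \<Longrightarrow> y1 f w = 0" unfolding y1 y0r using xoff[OF f w] by auto
  qed
  have I3: "\<forall>f\<in>F. (\<Sum>w\<in>U. y1 f w) \<le> 1"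
  proof
    fix f assume f: "f \<in> F"
    show "(\<Sum>w\<in>U. y1 f w) \<le> 1"
    proof (cases "asg0 f = None")
      case True
      have "(\<Sum>w\<in>U. y1 f w) = (\<Sum>w\<in>U. x0 f w) / lam f" unfolding y1 y0r using True by (simp add: sum_divide_distrib)
      also have "\<dots> \<le> 1" using fx'(4) f lam_pos[OF f] unfolding fsum_def by simp
      finally show ?thesis .
    qed (simp add: y1)
  qed
  have I4: "\<forall>v\<in>U. ar asg0 v + (\<Sum>f\<in>F. lam f * y1 f v) \<le> cap v"
  proof
    fix v assume v: "v \<in> U"
    have "ar asg0 v + (\<Sum>f\<in>F. lam f * y1 f v) =
        (\<Sum>f\<in>F. (if asg0 f = Some v then lam f else 0) + lam f * y1 f v)"
      unfolding ar_alt by (simp add: sum.distrib)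
    also have "\<dots> \<le> (\<Sum>f\<in>F. x0 f v)"
    proof (rule sum_mono)
      fix f assume f: "f \<in> F"
      show "(if asg0 f = Some v then lam f else 0) + lam f * y1 f v \<le> x0 f v"
      proof (cases "asg0 f")
        case None then show ?thesis unfolding y1 using lamx[OF f] by simp
      next
        case (Some u)
        then show ?thesis unfolding y1 using asgS[OF Some] xnn[OF f v] by auto
      qed
    qed
    also have "\<dots> \<le> cap v" using fx'(2) v unfolding load_def by auto
    finally show "ar asg0 v + (\<Sum>f\<in>F. lam f * y1 f v) \<le> cap v" .
  qed
  have I5: "acyc F U (G y1)"
    unfolding acyc_def
  proof (intro allI impI)
    fix d :: "'b \<Rightarrow> 'a \<Rightarrow> real" assume d: "(\<forall>f v. (f, v) \<notin> G y1 \<longrightarrow> d f v = 0) \<and> (\<forall>v\<in>U. (\<Sum>f\<in>F. d f v) = 0) \<and> (\<forall>f\<in>F. (\<Sum>v\<in>U. d f v) = 0)"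
    have "dcond U x0 d"
      unfolding dcond_def
    proof (intro conjI ballI impI)
      show "supp U d" unfolding supp_def using d G_iff by blast
    next
      fix f v assume "f \<in> F" "v \<in> U \<inter> pth f" "x0 f v = 0"
      then have "(f, v) \<notin> G y1" unfolding G_iff y1 y0r by auto
      then show "d f v = 0" using d by blast
    next
      fix v assume "v \<in> U" then show "load d v = 0" using d unfolding load_def by blast
    next
      fix f assume "f \<in> F" then show "fsum U d f = 0" using d unfolding fsum_def by blast
    qed
    then have z: "\<forall>f\<in>F. \<forall>v\<in>V. d f v = 0" using xb unfolding basic_iff by blast
    show "\<forall>p\<in>G y1. d (fst p) (snd p) = 0"
      using z G_sub UV by fastforce
  qed
  have I6: "R U \<le> Asg asg0 + Afr y1 + Dch asg0 y1"
  proof -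
    have "R U = (\<Sum>f\<in>F. fsum U x0 f)" using opt obj_fsum[OF UV fx'(3)] by simp
    also have "\<dots> = (\<Sum>f\<in>F. (if asg0 f \<noteq> None then lam f else 0) + (\<Sum>w\<in>U. lam f * y1 f w))"
    proof (rule sum.cong[OF refl])
      fix f assume f: "f \<in> F"
      show "fsum U x0 f = (if asg0 f \<noteq> None then lam f else 0) + (\<Sum>w\<in>U. lam f * y1 f w)"
      proof (cases "asg0 f")
        case None
        then show ?thesis unfolding y1 fsum_def using lamx[OF f] by simp
      next
        case (Some v)
        have v: "v \<in> U" "x0 f v = lam f" using asgS[OF Some] by auto
        have "x0 f v \<le> fsum U x0 f" unfolding fsum_def using v xnn f finUU by (intro member_le_sum) auto
        then have "fsum U x0 f = lam f" using fx'(4) f v by force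
        then show ?thesis unfolding y1 using Some by simp
      qed
    qed
    also have "\<dots> = Asg asg0 + Afr y1" unfolding Asg_def Afr_def by (simp add: sum.distrib)
    finally show ?thesis using Dch_nonneg[of asg0 y1] by simp
  qed
  show ?thesis unfolding Inv_def using I1 I2 I3 I4 I5 I6 by blast
qed

end


context mca begin

lemma Inv_D:
  assumes "Inv asg y"
  shows "\<And>f v. f \<in> F \<Longrightarrow> asg f = Some v \<Longrightarrow> v \<in> U \<and> v \<in> pth f \<and> (\<forall>w\<in>U. y f w = 0)"
    and "\<And>f w. f \<in> F \<Longrightarrow> w \<in> U \<Longrightarrow> 0 \<le> y f w \<and> y f w < 1 \<and> (w \<notin> pth f \<longrightarrow> y f w = 0)"
    and "\<And>f. f \<in> F \<Longrightarrow> (\<Sum>w\<in>U. y f w) \<le> 1"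
    and "\<And>v. v \<in> U \<Longrightarrow> ar asg v + (\<Sum>f\<in>F. lam f * y f v) \<le> cap v"
    and "acyc F U (G y)"
    and "R U \<le> Asg asg + Afr y + Dch asg y"
  using assms unfolding Inv_def by auto

lemma pos_in_G: "Inv asg y \<Longrightarrow> f \<in> F \<Longrightarrow> w \<in> U \<Longrightarrow> y f w \<noteq> 0 \<Longrightarrow> (f, w) \<in> G y"
  using Inv_D(2)[of asg y f w] unfolding G_iff by force

lemma edgeless_mono: "G y' \<subseteq> G y \<Longrightarrow> edgeless y \<subseteq> edgeless y'"
  unfolding edgeless_def by auto

lemma drop_pres:
  assumes I: "Inv asg y" and single: "{g. (g, v) \<in> G y} = {f}" and ge: "lam f * y f v \<le> ar asg v"
  defines "y' \<equiv> y(f := (y f)(v := 0))"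
  shows "Inv asg y' \<and> G y' \<subseteq> G y \<and> (f, v) \<notin> G y'"
proof -
  have fv: "(f, v) \<in> G y" using single by auto
  then have fvp: "f \<in> F" "v \<in> U" "v \<in> pth f" "0 < y f v" "y f v < 1" unfolding G_iff by auto
  have y'r: "y' g w = (if g = f \<and> w = v then 0 else y g w)" for g w unfolding y'_def by auto
  have Gs: "G y' \<subseteq> G y" unfolding Gedges_def y'r by auto
  have nfv: "(f, v) \<notin> G y'" unfolding G_iff y'r by auto
  have le: "\<And>g w. g \<in> F \<Longrightarrow> w \<in> U \<Longrightarrow> y' g w \<le> y g w" unfolding y'r using Inv_D(2)[OF I] by auto
  have I1: "\<forall>g\<in>F. \<forall>u. asg g = Some u \<longrightarrow> u \<in> U \<and> u \<in> pth g \<and> (\<forall>w\<in>U. y' g w = 0)"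
    using Inv_D(1)[OF I] unfolding y'r by auto
  have I2: "\<forall>g\<in>F. \<forall>w\<in>U. 0 \<le> y' g w \<and> y' g w < 1 \<and> (w \<notin> pth g \<longrightarrow> y' g w = 0)"
    using Inv_D(2)[OF I] unfolding y'r by auto
  have I3: "\<forall>g\<in>F. (\<Sum>w\<in>U. y' g w) \<le> 1"
    using Inv_D(3)[OF I] le by (meson order_trans sum_mono)
  have I4: "\<forall>u\<in>U. ar asg u + (\<Sum>g\<in>F. lam g * y' g u) \<le> cap u"
  proof
    fix u assume u: "u \<in> U"
    have "(\<Sum>g\<in>F. lam g * y' g u) \<le> (\<Sum>g\<in>F. lam g * y g u)"
      using le u lam_pos by (intro sum_mono mult_left_mono) (auto intro: less_imp_le)
    then show "ar asg u + (\<Sum>g\<in>F. lam g * y' g u) \<le> cap u" using Inv_D(4)[OF I u] by linarith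
  qed
  have I5: "acyc F U (G y')" using acyc_mono[OF Inv_D(5)[OF I] Gs] .
  have Afr: "Afr y = Afr y' + lam f * y f v"
  proof -
    have "Afr y = (\<Sum>g\<in>F. \<Sum>w\<in>U. lam g * y' g w + (if g = f \<and> w = v then lam f * y f v else 0))"
      unfolding Afr_def by (intro sum.cong refl) (auto simp: y'r)
    also have "\<dots> = Afr y' + (\<Sum>g\<in>F. \<Sum>w\<in>U. if g = f \<and> w = v then lam f * y f v else 0)"
      unfolding Afr_def by (simp add: sum.distrib)
    also have "(\<Sum>g\<in>F. \<Sum>w\<in>U. if g = f \<and> w = v then lam f * y f v else 0) = lam f * y f v"
    proof -
      have "(\<Sum>g\<in>F. \<Sum>w\<in>U. if g = f \<and> w = v then lam f * y f v else 0) =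
            (\<Sum>g\<in>F. if g = f then lam f * y f v else 0)"
        using fvp finUU by (intro sum.cong refl) (simp add: if_distrib sum.delta)
      also have "\<dots> = lam f * y f v" using fvp finF by (simp add: sum.delta)
      finally show ?thesis .
    qed
    finally show ?thesis .
  qed
  have D: "Dch asg y + ar asg v \<le> Dch asg y'"
  proof (rule Dch_grow1[OF edgeless_mono[OF Gs]])
    show "v \<in> edgeless y'" unfolding edgeless_def using fvp Gs single nfv by auto
    show "v \<notin> edgeless y" unfolding edgeless_def using fv by auto
  qed simp
  have I6: "R U \<le> Asg asg + Afr y' + Dch asg y'"
    using Inv_D(6)[OF I] Afr D ge by linarith
  show ?thesis unfolding Inv_def using I1 I2 I3 I4 I5 I6 Gs nfv by blast
qed

lemma swap_pres:
  assumes I: "Inv asg y" and single: "{g. (g, v) \<in> G y} = {f}" and lt: "ar asg v < lam f * y f v"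
  defines "asg' \<equiv> (\<lambda>g. if g = f then Some v else if asg g = Some v then None else asg g)"
  defines "y' \<equiv> y(f := (\<lambda>_. 0))"
  shows "Inv asg' y' \<and> G y' \<subseteq> G y \<and> (f, v) \<notin> G y'"
proof -
  have fv: "(f, v) \<in> G y" using single by auto
  then have fvp: "f \<in> F" "v \<in> U" "v \<in> pth f" "0 < y f v" "y f v < 1" unfolding G_iff by auto
  have fN: "asg f = None"
  proof (rule ccontr)
    assume "asg f \<noteq> None" then obtain u where "asg f = Some u" by auto
    then have "y f v = 0" using Inv_D(1)[OF I fvp(1)] fvp(2) by auto
    then show False using fvp by simp
  qed
  have y'r: "y' g w = (if g = f then 0 else y g w)" for g w unfolding y'_def by auto
  have Gs: "G y' \<subseteq> G y" unfolding Gedges_def y'r by auto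
  have nfv: "(f, v) \<notin> G y'" unfolding G_iff y'r by auto
  have le: "\<And>g w. g \<in> F \<Longrightarrow> w \<in> U \<Longrightarrow> y' g w \<le> y g w" unfolding y'r using Inv_D(2)[OF I] by auto
  have I1: "\<forall>g\<in>F. \<forall>u. asg' g = Some u \<longrightarrow> u \<in> U \<and> u \<in> pth g \<and> (\<forall>w\<in>U. y' g w = 0)"
  proof (intro ballI allI impI)
    fix g u assume g: "g \<in> F" and s: "asg' g = Some u"
    show "u \<in> U \<and> u \<in> pth g \<and> (\<forall>w\<in>U. y' g w = 0)"
    proof (cases "g = f")
      case True then show ?thesis using s fvp unfolding asg'_def y'r by auto
    next
      case False
      then have "asg g = Some u" using s unfolding asg'_def by (auto split: if_splits)
      then show ?thesis using Inv_D(1)[OF I g] False unfolding y'r by auto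
    qed
  qed
  have I2: "\<forall>g\<in>F. \<forall>w\<in>U. 0 \<le> y' g w \<and> y' g w < 1 \<and> (w \<notin> pth g \<longrightarrow> y' g w = 0)"
    using Inv_D(2)[OF I] unfolding y'r by auto
  have I3: "\<forall>g\<in>F. (\<Sum>w\<in>U. y' g w) \<le> 1"
    using Inv_D(3)[OF I] le by (meson order_trans sum_mono)
  have arv: "ar asg' v = lam f"
  proof -
    have "ar asg' v = (\<Sum>g\<in>F. if g = f then lam g else 0)"
      unfolding ar_alt by (intro sum.cong refl) (auto simp: asg'_def)
    also have "\<dots> = lam f" using fvp finF by (simp add: sum.delta)
    finally show ?thesis .
  qed
  have arw: "ar asg' w = ar asg w" if "w \<noteq> v" for w
    unfolding ar_alt using fN that by (intro sum.cong refl) (auto simp: asg'_def)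
  have I4: "\<forall>u\<in>U. ar asg' u + (\<Sum>g\<in>F. lam g * y' g u) \<le> cap u"
  proof
    fix u assume u: "u \<in> U"
    show "ar asg' u + (\<Sum>g\<in>F. lam g * y' g u) \<le> cap u"
    proof (cases "u = v")
      case True
      have "(\<Sum>g\<in>F. lam g * y' g v) = 0"
      proof (rule sum.neutral, rule ballI)
        fix g assume g: "g \<in> F"
        show "lam g * y' g v = 0"
        proof (cases "g = f")
          case True then show ?thesis by (simp add: y'r)
        next
          case False
          have "y g v = 0"
          proof (rule ccontr)
            assume "y g v \<noteq> 0"
            then have "(g, v) \<in> G y" using pos_in_G[OF I g fvp(2)] by simp
            then show False using single False by auto
          qed
          then show ?thesis by (simp add: y'r)
        qed
      qed
      then show ?thesis using True arv lam_cap[OF fvp(1)] fvp(2) UV by auto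
    next
      case False
      have "(\<Sum>g\<in>F. lam g * y' g u) \<le> (\<Sum>g\<in>F. lam g * y g u)"
        using le u lam_pos by (intro sum_mono mult_left_mono) (auto intro: less_imp_le)
      then show ?thesis using Inv_D(4)[OF I u] arw[OF False] by linarith
    qed
  qed
  have I5: "acyc F U (G y')" using acyc_mono[OF Inv_D(5)[OF I] Gs] .
  have AsgE: "Asg asg' = Asg asg + lam f - ar asg v"
  proof -
    have "Asg asg' = (\<Sum>g\<in>F. (if asg g \<noteq> None then lam g else 0) + (if g = f then lam g else 0)
         - (if asg g = Some v then lam g else 0))"
      unfolding Asg_def using fN by (intro sum.cong refl) (auto simp: asg'_def)
    also have "\<dots> = Asg asg + (\<Sum>g\<in>F. if g = f then lam g else 0) - ar asg v"
      unfolding Asg_def ar_alt by (simp add: sum.distrib sum_subtractf)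
    also have "(\<Sum>g\<in>F. if g = f then lam g else 0) = lam f" using fvp finF by (simp add: sum.delta)
    finally show ?thesis .
  qed
  have Afr: "Afr y = Afr y' + (\<Sum>w\<in>U. lam f * y f w)"
  proof -
    have "Afr y = (\<Sum>g\<in>F. (\<Sum>w\<in>U. lam g * y' g w) + (if g = f then (\<Sum>w\<in>U. lam f * y f w) else 0))"
      unfolding Afr_def by (intro sum.cong refl) (auto simp: y'r)
    also have "\<dots> = Afr y' + (\<Sum>w\<in>U. lam f * y f w)"
      unfolding Afr_def using fvp finF by (simp add: sum.distrib sum.delta)
    finally show ?thesis .
  qed
  have Afr2: "(\<Sum>w\<in>U. lam f * y f w) \<le> lam f"
  proof -
    have "(\<Sum>w\<in>U. lam f * y f w) = lam f * (\<Sum>w\<in>U. y f w)" by (simp add: sum_distrib_left)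
    also have "\<dots> \<le> lam f * 1" using Inv_D(3)[OF I fvp(1)] lam_pos[OF fvp(1)] by (intro mult_left_mono) auto
    finally show ?thesis by simp
  qed
  have D: "Dch asg y + ar asg' v \<le> Dch asg' y'"
  proof (rule Dch_grow1[OF edgeless_mono[OF Gs]])
    show "v \<in> edgeless y'" unfolding edgeless_def using fvp Gs single nfv by auto
    show "v \<notin> edgeless y" unfolding edgeless_def using fv by auto
    fix w assume "w \<in> edgeless y"
    then have "w \<noteq> v" unfolding edgeless_def using fv by auto
    then show "ar asg w \<le> ar asg' w" using arw by simp
  qed
  have ltf: "ar asg v < lam f" using lt fvp lam_pos[OF fvp(1)]
    by (smt (verit) mult_less_cancel_left1)
  have I6: "R U \<le> Asg asg' + Afr y' + Dch asg' y'"
    using Inv_D(6)[OF I] AsgE Afr Afr2 D arv ltf by linarith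
  show ?thesis unfolding Inv_def using I1 I2 I3 I4 I5 I6 Gs nfv by blast
qed

end


lemma Gpath_walk: "is_Gpath E v1 f1 xs \<Longrightarrow> walk E xs"
  unfolding is_Gpath_def walk_def by auto

lemma rc_single:
  assumes k: "k < length ws - 1" "Gedge_of (ws ! k) (ws ! Suc k) = e"
    and oth: "\<And>i. i < length ws - 1 \<Longrightarrow> i \<noteq> k \<Longrightarrow> Gedge_of (ws ! i) (ws ! Suc i) \<noteq> e"
  shows "rate_change ws s (fst e) (snd e) = s * (-1) ^ k"
proof -
  have "rate_change ws s (fst e) (snd e) = (\<Sum>i<length ws - 1. if i = k then s * (-1) ^ i else 0)"
    unfolding rate_change_def using k oth by (intro sum.cong refl) auto
  also have "\<dots> = s * (-1) ^ k" using k by simp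
  finally show ?thesis .
qed

lemma cycle_contra:
  fixes E :: "('f \<times> 'v) set"
  assumes w: "walk E xs" and d: "distinct xs" and j: "j + 2 < length xs"
    and adj: "adjG E (xs ! (length xs - 1)) (xs ! j)"
    and ac: "acyc F U E" and EFU: "E \<subseteq> F \<times> U" and finF: "finite F" and finU: "finite U"
  shows False
proof -
  let ?L = "length xs"
  define cyc where "cyc = drop j xs @ [xs ! j]"
  have lc: "length cyc = ?L - j + 1" unfolding cyc_def using j by simp
  have cn: "cyc ! i = xs ! (j + i)" if "i < ?L - j" for i
    unfolding cyc_def using that j by (simp add: nth_append)
  have cl: "cyc ! (?L - j) = xs ! j" unfolding cyc_def using j by (simp add: nth_append)
  have wc: "walk E cyc"
    unfolding walk_def
  proof (intro allI impI)
    fix i assume i: "Suc i < length cyc"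
    show "adjG E (cyc ! i) (cyc ! Suc i)"
    proof (cases "Suc i < ?L - j")
      case True
      then show ?thesis using cn[of i] cn[of "Suc i"] w j unfolding walk_def by auto
    next
      case False
      then have si: "Suc i = ?L - j" using i lc by simp
      then have ji: "j + i = ?L - 1" using j by simp
      have "cyc ! i = xs ! (?L - 1)" using cn[of i] si ji by simp
      moreover have "cyc ! Suc i = xs ! j" using cl si by simp
      ultimately show ?thesis using adj by simp
    qed
  qed
  have par: "even (?L - j)"
  proof -
    have a1: "isl (xs ! (?L - 1)) \<noteq> isl (xs ! j)" using adj_isl[OF adj] .
    have "isl (xs ! (?L - 1)) = (if even (?L - 1) then isl (xs ! 0) else \<not> isl (xs ! 0))"
      using walk_alt[OF w, of "?L - 1"] j by simp
    moreover have "isl (xs ! j) = (if even j then isl (xs ! 0) else \<not> isl (xs ! 0))"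
      using walk_alt[OF w, of j] j by simp
    ultimately have "even (?L - 1) \<noteq> even j" using a1 by auto
    then show ?thesis using j by (auto simp: even_diff_nat)
  qed
  have inc0: "inc cyc a = 0" for a
    unfolding inc_def using lc cl cn[of 0] j par by simp
  define dd where "dd = rate_change cyc 1"
  have EF: "\<forall>p\<in>E. fst p \<in> F" "\<forall>p\<in>E. snd p \<in> U" using EFU by auto
  have cne: "cyc \<noteq> []" unfolding cyc_def by simp
  have s1: "\<forall>f v. (f, v) \<notin> E \<longrightarrow> dd f v = 0" unfolding dd_def using rc_support[OF wc] by blast
  have s2: "\<forall>v\<in>U. (\<Sum>f\<in>F. dd f v) = 0" unfolding dd_def using rc_node_sum[OF wc EF(1) finF cne] inc0 by simp
  have s3: "\<forall>f\<in>F. (\<Sum>v\<in>U. dd f v) = 0" unfolding dd_def using rc_flow_sum[OF wc EF(2) finU cne] inc0 by simp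
  have z: "\<forall>p\<in>E. dd (fst p) (snd p) = 0" using ac s1 s2 s3 unfolding acyc_def by blast
  define e where "e = Gedge_of (xs ! j) (xs ! Suc j)"
  have eE: "e \<in> E" unfolding e_def using w j unfolding walk_def by (auto intro: adj_edge)
  have "dd (fst e) (snd e) = 1 * (-1) ^ 0" unfolding dd_def
  proof (rule rc_single)
    show "0 < length cyc - 1" using lc j by simp
    show "Gedge_of (cyc ! 0) (cyc ! Suc 0) = e" unfolding e_def using cn[of 0] cn[of 1] j by simp
    fix i assume i: "i < length cyc - 1" "i \<noteq> 0"
    have a0: "adjG E (xs ! j) (xs ! Suc j)" using w j unfolding walk_def by auto
    show "Gedge_of (cyc ! i) (cyc ! Suc i) \<noteq> e"
    proof
      assume eq: "Gedge_of (cyc ! i) (cyc ! Suc i) = e"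
      have ai: "adjG E (cyc ! i) (cyc ! Suc i)" using wc i unfolding walk_def by auto
      from Gedge_eq[OF ai a0 eq[unfolded e_def]]
      have h: "(cyc ! i = xs ! j \<and> cyc ! Suc i = xs ! Suc j) \<or> (cyc ! i = xs ! Suc j \<and> cyc ! Suc i = xs ! j)" .
      show False
      proof (cases "Suc i < ?L - j")
        case True
        have ci: "cyc ! i = xs ! (j + i)" "cyc ! Suc i = xs ! (j + Suc i)" using cn True by auto
        have "xs ! (j + i) = xs ! j \<longrightarrow> j + i = j" using nth_eq_iff_index_eq[OF d] True j by auto
        moreover have "xs ! (j + i) = xs ! Suc j \<longrightarrow> j + i = Suc j" using nth_eq_iff_index_eq[OF d] True j by auto
        moreover have "xs ! (j + Suc i) = xs ! j \<longrightarrow> j + Suc i = j" using nth_eq_iff_index_eq[OF d] True j by auto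
        ultimately show False using h ci i by auto
      next
        case False
        then have si: "Suc i = ?L - j" using i lc by simp
        have ji: "j + i = ?L - 1" using si j by simp
        have ci: "cyc ! i = xs ! (?L - 1)" using cn[of i] si ji by simp
        have "xs ! (?L - 1) = xs ! j \<longrightarrow> ?L - 1 = j" using nth_eq_iff_index_eq[OF d] j by auto
        moreover have "xs ! (?L - 1) = xs ! Suc j \<longrightarrow> ?L - 1 = Suc j" using nth_eq_iff_index_eq[OF d] j by auto
        ultimately show False using h ci j by auto
      qed
    qed
  qed
  then show False using z eE by simp
qed

lemma append_path:
  assumes p: "is_Gpath E v1 f1 xs" and c: "c \<notin> set xs" and adj: "adjG E (xs ! (length xs - 1)) c"
  shows "is_Gpath E v1 f1 (xs @ [c])"
  unfolding is_Gpath_def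
proof (intro conjI allI impI)
  have L: "2 \<le> length xs" using p unfolding is_Gpath_def by auto
  show "2 \<le> length (xs @ [c])" using L by simp
  have l0: "0 < length xs" "1 < length xs" using L by auto
  show "(xs @ [c]) ! 0 = Inr v1" using p l0 unfolding is_Gpath_def by (simp only: nth_append if_True)
  show "(xs @ [c]) ! 1 = Inl f1" using p l0 unfolding is_Gpath_def by (simp only: nth_append if_True)
  show "distinct (xs @ [c])" using p c unfolding is_Gpath_def by simp
  fix i assume i: "Suc i < length (xs @ [c])"
  show "adjG E ((xs @ [c]) ! i) ((xs @ [c]) ! Suc i)"
  proof (cases "Suc i < length xs")
    case True then show ?thesis using p unfolding is_Gpath_def by (simp add: nth_append)
  next
    case False
    then have si: "Suc i = length xs" using i by simp
    then have ii: "i = length xs - 1" by simp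
    have il: "i < length xs" using ii L by simp
    have "(xs @ [c]) ! i = xs ! (length xs - 1)" using ii il by (simp only: nth_append if_True)
    moreover have "(xs @ [c]) ! Suc i = c" using si by (simp add: nth_append)
    ultimately show ?thesis using adj by simp
  qed
qed

lemma longest_end:
  fixes E :: "('f \<times> 'v) set"
  assumes lp: "longest_Gpath E v1 f1 xs"
    and ac: "acyc F U E" and EFU: "E \<subseteq> F \<times> U" and finF: "finite F" and finU: "finite U"
    and nl: "\<not> (\<exists>v f. {g. (g, v) \<in> E} = {f})"
  shows "\<exists>fe w. xs ! (length xs - 1) = Inl fe \<and> xs ! (length xs - 2) = Inr w \<and>
           {w'. (fe, w') \<in> E} = {w} \<and> (fe, w) \<in> E \<and> odd (length xs - 1)"
proof -
  have p: "is_Gpath E v1 f1 xs" using lp unfolding longest_Gpath_def by auto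
  have w: "walk E xs" using Gpath_walk[OF p] .
  have d: "distinct xs" using p unfolding is_Gpath_def by auto
  let ?L = "length xs"
  have L: "2 \<le> ?L" using p unfolding is_Gpath_def by auto
  define a where "a = xs ! (?L - 1)"
  define b where "b = xs ! (?L - 2)"
  have ba: "adjG E b a"
  proof -
    have "Suc (?L - 2) < ?L" using L by simp
    then have "adjG E (xs ! (?L - 2)) (xs ! Suc (?L - 2))" using w unfolding walk_def by blast
    moreover have "Suc (?L - 2) = ?L - 1" using L by simp
    ultimately show ?thesis unfolding a_def b_def by simp
  qed
  have nb: "c = b" if ac': "adjG E a c" for c
  proof -
    have "c \<in> set xs"
    proof (rule ccontr)
      assume "c \<notin> set xs"
      then have "is_Gpath E v1 f1 (xs @ [c])" using append_path[OF p] ac' unfolding a_def by blast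
      then have "length (xs @ [c]) \<le> ?L" using lp unfolding longest_Gpath_def by blast
      then show False by simp
    qed
    then obtain j where j: "j < ?L" "xs ! j = c" by (auto simp: in_set_conv_nth)
    have "j \<noteq> ?L - 1" using adj_isl[OF ac'] j unfolding a_def by auto
    moreover have "\<not> j + 2 < ?L"
    proof
      assume j2: "j + 2 < ?L"
      have "adjG E (xs ! (?L - 1)) (xs ! j)" using ac' j(2) unfolding a_def by simp
      then show False using cycle_contra[OF w d j2 _ ac EFU finF finU] by blast
    qed
    ultimately have "j = ?L - 2" using j by linarith
    then show ?thesis using j unfolding b_def by simp
  qed
  show ?thesis
  proof (cases a)
    case (Inr v)
    from adj_cases[OF ba] obtain g where g: "b = Inl g" "(g, v) \<in> E" using Inr by auto
    have "{g'. (g', v) \<in> E} = {g}"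
    proof
      show "{g'. (g', v) \<in> E} \<subseteq> {g}"
      proof
        fix g' assume "g' \<in> {g'. (g', v) \<in> E}"
        then have "adjG E a (Inl g')" using Inr unfolding adjG_def by auto
        then show "g' \<in> {g}" using nb g by auto
      qed
    qed (use g in auto)
    then show ?thesis using nl by blast
  next
    case (Inl fe)
    from adj_cases[OF ba] obtain w where wv: "b = Inr w" "(fe, w) \<in> E" using Inl by auto
    have leaf: "{w'. (fe, w') \<in> E} = {w}"
    proof
      show "{w'. (fe, w') \<in> E} \<subseteq> {w}"
      proof
        fix w' assume "w' \<in> {w'. (fe, w') \<in> E}"
        then have "adjG E a (Inr w')" using Inl unfolding adjG_def by auto
        then show "w' \<in> {w}" using nb wv by auto
      qed
    qed (use wv in auto)
    have e1: "isl (xs ! (?L - 1)) = (if even (?L - 1) then isl (xs ! 0) else \<not> isl (xs ! 0))"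
      by (rule walk_alt[OF w]) (use L in simp)
    have x0: "\<not> isl (xs ! 0)" using p unfolding is_Gpath_def by auto
    have x1: "isl (xs ! (?L - 1))" using Inl unfolding a_def by simp
    have "odd (?L - 1)"
    proof (rule ccontr)
      assume "\<not> odd (?L - 1)"
      then have "isl (xs ! (?L - 1)) = isl (xs ! 0)" using e1 by presburger
      then show False using x0 x1 by simp
    qed
    then show ?thesis using Inl wv leaf unfolding a_def b_def by auto
  qed
qed


context mca begin

lemma path_facts:
  assumes I: "Inv asg y" and nl: "\<not> (\<exists>v f. {g. (g, v) \<in> G y} = {f})"
    and lp: "longest_Gpath (G y) v1 f1 p"
  shows "\<exists>fe w. walk (G y) p \<and> p \<noteq> [] \<and> (\<forall>v. inc p (Inr v) = (if v = v1 then 1 else 0)) \<and>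
     (\<forall>f. inc p (Inl f) = (if f = fe then 1 else 0)) \<and> {w'. (fe, w') \<in> G y} = {w} \<and> (fe, w) \<in> G y"
proof -
  have ac: "acyc F U (G y)" using Inv_D(5)[OF I] .
  obtain fe w where e: "p ! (length p - 1) = Inl fe" "p ! (length p - 2) = Inr w"
    "{w'. (fe, w') \<in> G y} = {w}" "(fe, w) \<in> G y" "odd (length p - 1)"
    using longest_end[OF lp ac G_sub finF finUU nl] by blast
  have gp: "is_Gpath (G y) v1 f1 p" using lp unfolding longest_Gpath_def by auto
  have w: "walk (G y) p" using Gpath_walk[OF gp] .
  have p0: "p ! 0 = Inr v1" using gp unfolding is_Gpath_def by auto
  have ne: "p \<noteq> []" using gp unfolding is_Gpath_def by auto
  have i1: "inc p (Inr v) = (if v = v1 then 1 else 0)" for v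
    unfolding inc_def using p0 e(1) by auto
  have i2: "inc p (Inl f) = (if f = fe then 1 else 0)" for f
    unfolding inc_def using p0 e(1) e(5) by (auto simp: power_minus_odd)
  show ?thesis using w ne i1 i2 e(3,4) by blast
qed

lemma step2_pres:
  assumes I: "Inv asg y"
    and nl: "\<not> (\<exists>v f. {g. (g, v) \<in> G y} = {f})"
    and lp1: "longest_Gpath (G y) v1 f1 p1" and lp2: "longest_Gpath (G y) v1 f2 p2"
    and dpos: "0 < \<delta>"
    and y'd: "y' = (\<lambda>f v. y f v + \<delta> * (rate_change p1 1 f v + rate_change p2 (-1) f v) / lam f)"
    and rng: "\<forall>(f, v)\<in>G y. 0 \<le> y' f v \<and> y' f v \<le> 1"
    and Hd: "H = {g. \<exists>v. (g, v) \<in> G y \<and> y' g v = 1}"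
    and ha: "\<forall>g. if g \<in> H then (\<exists>v. (g, v) \<in> G y \<and> y' g v = 1 \<and> asg' g = Some v) else asg' g = asg g"
    and y''d: "y'' = (\<lambda>g. if g \<in> H then (\<lambda>_. 0) else y' g)"
  shows "Inv asg' y'' \<and> G y'' \<subseteq> G y"
proof -
  let ?E = "G y"
  obtain fe1 w1 where P1: "walk ?E p1" "p1 \<noteq> []" "\<forall>v. inc p1 (Inr v) = (if v = v1 then 1 else 0)"
     "\<forall>f. inc p1 (Inl f) = (if f = fe1 then 1 else 0)" "{w'. (fe1, w') \<in> ?E} = {w1}" "(fe1, w1) \<in> ?E"
    using path_facts[OF I nl lp1] by blast
  obtain fe2 w2 where P2: "walk ?E p2" "p2 \<noteq> []" "\<forall>v. inc p2 (Inr v) = (if v = v1 then 1 else 0)"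
     "\<forall>f. inc p2 (Inl f) = (if f = fe2 then 1 else 0)" "{w'. (fe2, w') \<in> ?E} = {w2}" "(fe2, w2) \<in> ?E"
    using path_facts[OF I nl lp2] by blast
  have EF: "\<forall>p\<in>?E. fst p \<in> F" "\<forall>p\<in>?E. snd p \<in> U" using G_sub[of y] by auto
  define rcc where "rcc f v = rate_change p1 1 f v + rate_change p2 (-1) f v" for f v
  have y'r: "y' f v = y f v + \<delta> * rcc f v / lam f" for f v unfolding y'd rcc_def by simp
  have supp: "(f, v) \<in> ?E" if h: "rcc f v \<noteq> 0" for f v
  proof (rule ccontr)
    assume n: "(f, v) \<notin> ?E"
    then have "rate_change p1 1 f v = 0" using rc_support[OF P1(1), of 1 f v] by blast
    moreover have "rate_change p2 (-1) f v = 0" using n rc_support[OF P2(1), of "-1" f v] by blast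
    ultimately show False using h unfolding rcc_def by simp
  qed
  have yeq: "(f, v) \<notin> ?E \<Longrightarrow> y' f v = y f v" for f v using supp[of f v] unfolding y'r by auto
  have nsum: "(\<Sum>f\<in>F. rcc f v) = 0" for v
    unfolding rcc_def sum.distrib rc_node_sum[OF P1(1) EF(1) finF P1(2)] rc_node_sum[OF P2(1) EF(1) finF P2(2)]
    using P1(3) P2(3) by simp
  have fsum: "(\<Sum>v\<in>U. rcc f v) = (if f = fe1 then 1 else 0) - (if f = fe2 then 1 else 0)" for f
    unfolding rcc_def sum.distrib rc_flow_sum[OF P1(1) EF(2) finUU P1(2)] rc_flow_sum[OF P2(1) EF(2) finUU P2(2)]
    using P1(4) P2(4) by simp
  have fe: "fe1 \<in> F" "fe2 \<in> F" "w1 \<in> U" using P1(6) P2(6) G_sub by auto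
  have lamr: "lam f * y' f v = lam f * y f v + \<delta> * rcc f v" if "f \<in> F" for f v
    using lam_pos[OF that] unfolding y'r by (simp add: field_simps)
  have rowsum: "(\<Sum>w\<in>U. y' g w) = (\<Sum>w\<in>U. y g w) + \<delta> / lam g * (\<Sum>w\<in>U. rcc g w)" for g
    unfolding y'r by (simp add: sum.distrib sum_distrib_left sum_divide_distrib)
  have y'nn: "0 \<le> y' g w" if "g \<in> F" "w \<in> U" for g w
  proof (cases "(g, w) \<in> ?E")
    case True then show ?thesis using rng by auto
  next
    case False then show ?thesis using yeq Inv_D(2)[OF I that] by auto
  qed
  have y'sum: "(\<Sum>w\<in>U. y' g w) \<le> 1" if g: "g \<in> F" for g
  proof (cases "g = fe1")
    case True
    have "(\<Sum>w\<in>U. y' g w) = (\<Sum>w\<in>U. if w = w1 then y' g w1 else 0)"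
    proof (rule sum.cong[OF refl])
      fix w assume w: "w \<in> U"
      show "y' g w = (if w = w1 then y' g w1 else 0)"
      proof (cases "w = w1")
        case False
        then have nE: "(g, w) \<notin> ?E" using P1(5) True by auto
        then have "y g w = 0" using pos_in_G[OF I g w] by auto
        then show ?thesis using yeq[OF nE] False by simp
      qed simp
    qed
    also have "\<dots> = y' g w1" using fe(3) finUU by (simp add: sum.delta)
    also have "\<dots> \<le> 1" using rng P1(6) True by auto
    finally show ?thesis .
  next
    case False
    have "\<delta> / lam g * (\<Sum>w\<in>U. rcc g w) \<le> 0"
      unfolding fsum using False dpos lam_pos[OF g] by (auto intro: divide_nonneg_pos)
    then show ?thesis unfolding rowsum using Inv_D(3)[OF I g] by linarith
  qed
  have HF: "g \<in> F" if "g \<in> H" for g using that G_iff unfolding Hd by auto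
  have haH: "\<exists>v. (g, v) \<in> ?E \<and> y' g v = 1 \<and> asg' g = Some v" if gH: "g \<in> H" for g
  proof -
    have "if g \<in> H then (\<exists>v. (g, v) \<in> ?E \<and> y' g v = 1 \<and> asg' g = Some v) else asg' g = asg g"
      using ha by (rule spec)
    then show ?thesis using gH by simp
  qed
  have haN: "asg' g = asg g" if gH: "g \<notin> H" for g
  proof -
    have "if g \<in> H then (\<exists>v. (g, v) \<in> ?E \<and> y' g v = 1 \<and> asg' g = Some v) else asg' g = asg g"
      using ha by (rule spec)
    then show ?thesis using gH by simp
  qed
  have Hnone: "asg g = None" if gH: "g \<in> H" for g
  proof -
    obtain v where v: "(g, v) \<in> ?E" using gH unfolding Hd by auto
    show ?thesis
    proof (rule ccontr)
      assume "asg g \<noteq> None" then obtain u where "asg g = Some u" by auto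
      then have "y g v = 0" using Inv_D(1)[OF I HF[OF gH]] v G_iff by auto
      then show False using v unfolding G_iff by simp
    qed
  qed
  have Hrow: "y' g w = (if asg' g = Some w then 1 else 0)" if h: "g \<in> H" and w: "w \<in> U" for g w
  proof -
    obtain v where v: "(g, v) \<in> ?E" "y' g v = 1" "asg' g = Some v" using haH[OF h] by blast
    have gF: "g \<in> F" using HF[OF h] .
    have vU: "v \<in> U" using v G_sub by auto
    show ?thesis
    proof (cases "w = v")
      case True then show ?thesis using v by simp
    next
      case False
      have "y' g v + y' g w = (\<Sum>w'\<in>{v, w}. y' g w')" using False by simp
      also have "\<dots> \<le> (\<Sum>w'\<in>U. y' g w')"
        using vU w finUU y'nn[OF gF] by (intro sum_mono2) auto
      also have "\<dots> \<le> 1" using y'sum[OF gF] .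
      finally have "y' g w \<le> 0" using v(2) by simp
      then show ?thesis using y'nn[OF gF w] v(3) False by auto
    qed
  qed
  have Gs: "G y'' \<subseteq> ?E"
  proof
    fix p assume p: "p \<in> G y''"
    obtain g w where gw: "p = (g, w)" by (cases p)
    have pg: "(g, w) \<in> G y''" using p gw by simp
    then have "0 < y'' g w" unfolding G_iff by simp
    then have h: "g \<notin> H" unfolding y''d by auto
    show "p \<in> ?E"
    proof (rule ccontr)
      assume "p \<notin> ?E"
      then have nE: "(g, w) \<notin> ?E" using gw by simp
      then have "y'' g w = y g w" using yeq h unfolding y''d by auto
      then show False using pg nE unfolding G_iff by auto
    qed
  qed
  have I1: "\<forall>g\<in>F. \<forall>u. asg' g = Some u \<longrightarrow> u \<in> U \<and> u \<in> pth g \<and> (\<forall>w\<in>U. y'' g w = 0)"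
  proof (intro ballI allI impI)
    fix g u assume g: "g \<in> F" and s: "asg' g = Some u"
    show "u \<in> U \<and> u \<in> pth g \<and> (\<forall>w\<in>U. y'' g w = 0)"
    proof (cases "g \<in> H")
      case True
      obtain v where v: "(g, v) \<in> ?E" "asg' g = Some v" using haH[OF True] by blast
      then have "u = v" using s by simp
      then show ?thesis using v True unfolding G_iff y''d by auto
    next
      case False
      then have s': "asg g = Some u" using haN s by simp
      have r0: "\<forall>w\<in>U. y g w = 0" using Inv_D(1)[OF I g s'] by auto
      have "y' g w = 0" if w: "w \<in> U" for w
      proof -
        have "(g, w) \<notin> ?E" using r0 w unfolding G_iff by auto
        then show ?thesis using yeq r0 w by auto
      qed
      then show ?thesis using Inv_D(1)[OF I g s'] False unfolding y''d by auto
    qed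
  qed
  have I2: "\<forall>g\<in>F. \<forall>w\<in>U. 0 \<le> y'' g w \<and> y'' g w < 1 \<and> (w \<notin> pth g \<longrightarrow> y'' g w = 0)"
  proof (intro ballI)
    fix g w assume g: "g \<in> F" and w: "w \<in> U"
    show "0 \<le> y'' g w \<and> y'' g w < 1 \<and> (w \<notin> pth g \<longrightarrow> y'' g w = 0)"
    proof (cases "g \<in> H")
      case True then show ?thesis unfolding y''d by simp
    next
      case False
      show ?thesis
      proof (cases "(g, w) \<in> ?E")
        case True
        then have "y' g w \<noteq> 1" using False unfolding Hd by auto
        moreover have "y' g w \<le> 1" using rng True by auto
        ultimately show ?thesis using False y'nn[OF g w] True unfolding y''d G_iff by auto
      next
        case nE: False
        then show ?thesis using False yeq[OF nE] Inv_D(2)[OF I g w] unfolding y''d by auto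
      qed
    qed
  qed
  have I3: "\<forall>g\<in>F. (\<Sum>w\<in>U. y'' g w) \<le> 1"
    using y'sum unfolding y''d by auto
  have arE: "ar asg' v = ar asg v + (\<Sum>g\<in>F. if g \<in> H \<and> asg' g = Some v then lam g else 0)" for v
  proof -
    have "ar asg' v = (\<Sum>g\<in>F. (if asg g = Some v then lam g else 0) + (if g \<in> H \<and> asg' g = Some v then lam g else 0))"
      unfolding ar_alt
    proof (rule sum.cong[OF refl])
      fix g assume g: "g \<in> F"
      show "(if asg' g = Some v then lam g else 0) =
          (if asg g = Some v then lam g else 0) + (if g \<in> H \<and> asg' g = Some v then lam g else 0)"
      proof (cases "g \<in> H")
        case True then show ?thesis using Hnone[OF True] by auto
      next
        case False then show ?thesis using haN[OF False] by simp
      qed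
    qed
    then show ?thesis unfolding ar_alt by (simp add: sum.distrib)
  qed
  have arle: "ar asg v \<le> ar asg' v" for v
  proof -
    have "0 \<le> (\<Sum>g\<in>F. if g \<in> H \<and> asg' g = Some v then lam g else 0)"
      using lam_pos by (intro sum_nonneg) (auto intro: less_imp_le)
    then show ?thesis unfolding arE by simp
  qed
  have I4: "\<forall>v\<in>U. ar asg' v + (\<Sum>g\<in>F. lam g * y'' g v) \<le> cap v"
  proof
    fix v assume v: "v \<in> U"
    have "(\<Sum>g\<in>F. if g \<in> H \<and> asg' g = Some v then lam g else 0) + (\<Sum>g\<in>F. lam g * y'' g v)
        = (\<Sum>g\<in>F. lam g * y' g v)"
      unfolding sum.distrib[symmetric]
    proof (rule sum.cong[OF refl])
      fix g assume g: "g \<in> F"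
      show "(if g \<in> H \<and> asg' g = Some v then lam g else 0) + lam g * y'' g v = lam g * y' g v"
        using Hrow[of g v] v unfolding y''d by auto
    qed
    also have "\<dots> = (\<Sum>g\<in>F. lam g * y g v) + \<delta> * (\<Sum>g\<in>F. rcc g v)"
      using lamr by (simp add: sum.distrib sum_distrib_left)
    also have "\<dots> = (\<Sum>g\<in>F. lam g * y g v)" using nsum by simp
    finally show "ar asg' v + (\<Sum>g\<in>F. lam g * y'' g v) \<le> cap v"
      using Inv_D(4)[OF I v] unfolding arE by linarith
  qed
  have I5: "acyc F U (G y'')" using acyc_mono[OF Inv_D(5)[OF I] Gs] .
  have AA: "Asg asg' + Afr y'' = Asg asg + Afr y"
  proof -
    have "Asg asg' + Afr y'' = (\<Sum>g\<in>F. (if asg g \<noteq> None then lam g else 0) + (\<Sum>w\<in>U. lam g * y' g w))"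
      unfolding Asg_def Afr_def sum.distrib[symmetric]
    proof (rule sum.cong[OF refl])
      fix g assume g: "g \<in> F"
      show "(if asg' g \<noteq> None then lam g else 0) + (\<Sum>w\<in>U. lam g * y'' g w) =
          (if asg g \<noteq> None then lam g else 0) + (\<Sum>w\<in>U. lam g * y' g w)"
      proof (cases "g \<in> H")
        case True
        obtain v where v: "(g, v) \<in> ?E" "asg' g = Some v" using haH[OF True] by blast
        have vU: "v \<in> U" using v G_sub by auto
        have "(\<Sum>w\<in>U. lam g * y' g w) = (\<Sum>w\<in>U. if w = v then lam g else 0)"
          using Hrow[OF True] v(2) by (intro sum.cong refl) auto
        also have "\<dots> = lam g" using vU finUU by (simp add: sum.delta)
        finally show ?thesis using Hnone[OF True] v(2) True unfolding y''d by simp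
      next
        case False
        then show ?thesis using haN[OF False] unfolding y''d by simp
      qed
    qed
    also have "\<dots> = Asg asg + (\<Sum>g\<in>F. \<Sum>w\<in>U. lam g * y g w + \<delta> * rcc g w)"
      unfolding Asg_def using lamr by (simp add: sum.distrib)
    also have "\<dots> = Asg asg + Afr y + \<delta> * (\<Sum>g\<in>F. \<Sum>w\<in>U. rcc g w)"
      unfolding Afr_def by (simp add: sum.distrib sum_distrib_left)
    also have "(\<Sum>g\<in>F. \<Sum>w\<in>U. rcc g w) = 0"
    proof -
      have "(\<Sum>g\<in>F. \<Sum>w\<in>U. rcc g w) = (\<Sum>g\<in>F. if g = fe1 then 1 else 0) - (\<Sum>g\<in>F. if g = fe2 then 1 else 0)"
        unfolding fsum by (simp add: sum_subtractf)
      also have "\<dots> = 0" using fe finF by (simp add: sum.delta)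
      finally show ?thesis .
    qed
    finally show ?thesis by simp
  qed
  have D: "Dch asg y \<le> Dch asg' y''" by (rule Dch_grow[OF edgeless_mono[OF Gs] arle])
  have I6: "R U \<le> Asg asg' + Afr y'' + Dch asg' y''" using Inv_D(6)[OF I] AA D by linarith
  show ?thesis unfolding Inv_def using I1 I2 I3 I4 I5 I6 Gs by blast
qed

end


lemma longest_exists:
  assumes e: "(f1, v1) \<in> E" and finE: "finite E"
  shows "\<exists>xs. longest_Gpath E v1 f1 xs"
proof -
  define VS where "VS = Inl ` fst ` E \<union> Inr ` snd ` E"
  have finVS: "finite VS" unfolding VS_def using finE by auto
  have sub: "set xs \<subseteq> VS" if p: "is_Gpath E v1 f1 xs" for xs
  proof
    fix a assume "a \<in> set xs"
    then obtain i where i: "i < length xs" "xs ! i = a" by (auto simp: in_set_conv_nth)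
    have L: "2 \<le> length xs" using p unfolding is_Gpath_def by auto
    have w: "walk E xs" using Gpath_walk[OF p] .
    show "a \<in> VS"
    proof (cases "Suc i < length xs")
      case True
      then have "adjG E (xs ! i) (xs ! Suc i)" using w unfolding walk_def by auto
      then obtain f v where fv: "(f, v) \<in> E" "xs ! i = Inl f \<or> xs ! i = Inr v"
        using adj_cases[of E "xs ! i" "xs ! Suc i"] by blast
      have "Inl f \<in> VS" "Inr v \<in> VS" unfolding VS_def using fv(1) by force+
      then show ?thesis using fv(2) i(2) by auto
    next
      case False
      then have ii: "Suc (i - 1) < length xs" "Suc (i - 1) = i" using i L by auto
      then have "adjG E (xs ! (i - 1)) (xs ! Suc (i - 1))" using w unfolding walk_def by blast
      then have "adjG E (xs ! (i - 1)) a" using ii(2) i(2) by simp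
      then obtain f v where fv: "(f, v) \<in> E" "a = Inl f \<or> a = Inr v"
        using adj_cases[of E "xs ! (i - 1)" a] by blast
      have "Inl f \<in> VS" "Inr v \<in> VS" unfolding VS_def using fv(1) by force+
      then show ?thesis using fv(2) by auto
    qed
  qed
  have lenb: "length xs \<le> card VS" if p: "is_Gpath E v1 f1 xs" for xs
  proof -
    have "distinct xs" using p unfolding is_Gpath_def by auto
    then have "length xs = card (set xs)" by (simp add: distinct_card)
    also have "\<dots> \<le> card VS" using sub[OF p] finVS by (intro card_mono) auto
    finally show ?thesis .
  qed
  have p0: "is_Gpath E v1 f1 [Inr v1, Inl f1]"
  proof -
    have ad: "adjG E (Inr v1) (Inl f1)" unfolding adjG_def using e by simp
    have "\<forall>i. Suc i < length [Inr v1, Inl f1] \<longrightarrow> adjG E ([Inr v1, Inl f1] ! i) ([Inr v1, Inl f1] ! Suc i)"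
    proof (intro allI impI)
      fix i assume "Suc i < length [Inr v1, Inl f1]"
      then have "i = 0" by simp
      then show "adjG E ([Inr v1, Inl f1] ! i) ([Inr v1, Inl f1] ! Suc i)" using ad by simp
    qed
    then show ?thesis unfolding is_Gpath_def by simp
  qed
  have "\<forall>ys. is_Gpath E v1 f1 ys \<longrightarrow> length ys < Suc (card VS)" using lenb by (simp add: less_Suc_eq_le)
  then obtain xs where xs: "is_Gpath E v1 f1 xs" "\<forall>ys. is_Gpath E v1 f1 ys \<longrightarrow> length ys \<le> length xs"
    using ex_has_greatest_nat[of "is_Gpath E v1 f1" "[Inr v1, Inl f1]" length "Suc (card VS)"] p0 by blast
  have "longest_Gpath E v1 f1 xs" unfolding longest_Gpath_def using xs by blast
  then show ?thesis by blast
qed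

context mca begin

lemma step_pres:
  assumes st: "mca1_step F lam pth U (asg, y) (asg', y')" and I: "Inv asg y"
  shows "Inv asg' y' \<and> G y' \<subseteq> G y"
  using st
proof (cases rule: mca1_step.cases)
  case (step1_drop v f)
  then show ?thesis using drop_pres[OF I, of v f] by auto
next
  case (step1_swap v f)
  then show ?thesis using swap_pres[OF I, of v f] by auto
next
  case (step2 f1 v1 f2 p1 p2 \<delta> y'a H)
  then show ?thesis using step2_pres[OF I, of v1 f1 p1 f2 p2 \<delta> y'a H asg' y'] by auto
qed

lemma steps_pres:
  assumes "(mca1_step F lam pth U)\<^sup>*\<^sup>* s s'" and "Inv (fst s) (snd s)"
  shows "Inv (fst s') (snd s')"
  using assms
proof (induction rule: rtranclp_induct)
  case base then show ?case .
next
  case (step b c)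
  obtain a1 b1 where b: "b = (a1, b1)" by (cases b)
  obtain a2 b2 where c: "c = (a2, b2)" by (cases c)
  show ?case using step_pres[of a1 b1 a2 b2] step b c by auto
qed

end


context mca begin

lemma rc_first:
  assumes p: "is_Gpath E v1 f1 p"
  shows "rate_change p s f1 v1 = s"
proof -
  have w: "walk E p" using Gpath_walk[OF p] .
  have d: "distinct p" and L: "Suc 0 < length p" and p01: "p ! 0 = Inr v1" "p ! 1 = Inl f1"
    using p unfolding is_Gpath_def by auto
  have e: "Gedge_of (p ! 0) (p ! Suc 0) = (f1, v1)" using p01 unfolding Gedge_of_def by simp
  show ?thesis using rc_unique[OF w d L, of s] e by simp
qed

lemma rc_other:
  assumes p: "is_Gpath E v1 f2 p" and ne: "f1 \<noteq> f2"
  shows "rate_change p s f1 v1 = 0"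
  unfolding rate_change_def
proof (rule sum.neutral, rule ballI)
  have w: "walk E p" using Gpath_walk[OF p] .
  have d: "distinct p" and p01: "p ! 0 = Inr v1" "p ! 1 = Inl f2" and L: "2 \<le> length p"
    using p unfolding is_Gpath_def by auto
  fix i assume i: "i \<in> {..<length p - 1}"
  have "Gedge_of (p ! i) (p ! Suc i) \<noteq> (f1, v1)"
  proof
    assume eq: "Gedge_of (p ! i) (p ! Suc i) = (f1, v1)"
    have "adjG E (p ! i) (p ! Suc i)" using w i unfolding walk_def by auto
    from adj_cases[OF this] eq
    have h: "(p ! i = Inl f1 \<and> p ! Suc i = Inr v1) \<or> (p ! i = Inr v1 \<and> p ! Suc i = Inl f1)" by auto
    then show False
    proof
      assume "p ! i = Inl f1 \<and> p ! Suc i = Inr v1"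
      then have "p ! Suc i = p ! 0" using p01 by simp
      moreover have "Suc i < length p" "0 < length p" using i L by auto
      ultimately have "Suc i = 0" using nth_eq_iff_index_eq[OF d, of "Suc i" 0] by blast
      then show False by simp
    next
      assume h2: "p ! i = Inr v1 \<and> p ! Suc i = Inl f1"
      then have "p ! i = p ! 0" using p01 by simp
      moreover have "i < length p" "0 < length p" using i L by auto
      ultimately have "i = 0" using nth_eq_iff_index_eq[OF d, of i 0] by blast
      then show False using h2 p01 ne by simp
    qed
  qed
  then show "(if Gedge_of (p ! i) (p ! Suc i) = (f1, v1) then s * (-1) ^ i else 0) = 0" by simp
qed

lemma step_exists:
  assumes I: "Inv asg y" and ne: "G y \<noteq> {}"
  shows "\<exists>asg' y'. mca1_step F lam pth U (asg, y) (asg', y') \<and> card (G y') < card (G y)"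
proof (cases "\<exists>v f. {g. (g, v) \<in> G y} = {f}")
  case True
  then obtain v f where single: "{g. (g, v) \<in> G y} = {f}" by blast
  have fv: "(f, v) \<in> G y" using single by auto
  show ?thesis
  proof (cases "lam f * y f v \<le> ar asg v")
    case True
    let ?y' = "y(f := (y f)(v := 0))"
    have st: "mca1_step F lam pth U (asg, y) (asg, ?y')" by (rule mca1_step.step1_drop[OF single True])
    have "G ?y' \<subset> G y" using drop_pres[OF I single True] fv by auto
    then have "card (G ?y') < card (G y)" using finG by (rule psubset_card_mono[rotated])
    then show ?thesis using st by blast
  next
    case False
    then have lt: "ar asg v < lam f * y f v" by simp
    let ?a' = "\<lambda>g. if g = f then Some v else if asg g = Some v then None else asg g"
    let ?y' = "y(f := (\<lambda>_. 0))"
    have st: "mca1_step F lam pth U (asg, y) (?a', ?y')" by (rule mca1_step.step1_swap[OF single lt refl])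
    have "G ?y' \<subset> G y" using swap_pres[OF I single lt] fv by auto
    then have "card (G ?y') < card (G y)" using finG by (rule psubset_card_mono[rotated])
    then show ?thesis using st by blast
  qed
next
  case nl: False
  obtain f1 v1 where e1: "(f1, v1) \<in> G y" using ne by auto
  have "{g. (g, v1) \<in> G y} \<noteq> {f1}" using nl by blast
  then obtain f2 where e2: "(f2, v1) \<in> G y" "f2 \<noteq> f1" using e1 by auto
  obtain p1 where lp1: "longest_Gpath (G y) v1 f1 p1" using longest_exists[OF e1 finG] by blast
  obtain p2 where lp2: "longest_Gpath (G y) v1 f2 p2" using longest_exists[OF e2(1) finG] by blast
  have gp1: "is_Gpath (G y) v1 f1 p1" and gp2: "is_Gpath (G y) v1 f2 p2"
    using lp1 lp2 unfolding longest_Gpath_def by auto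
  define rcc where "rcc f v = rate_change p1 1 f v + rate_change p2 (-1) f v" for f v
  have r11: "rcc f1 v1 = 1" unfolding rcc_def using rc_first[OF gp1] rc_other[OF gp2 e2(2)[symmetric]] by simp
  define Ch where "Ch = {e \<in> G y. rcc (fst e) (snd e) \<noteq> 0}"
  define tt where "tt e = (if rcc (fst e) (snd e) > 0 then (1 - y (fst e) (snd e)) * lam (fst e) / rcc (fst e) (snd e)
                           else y (fst e) (snd e) * lam (fst e) / (- rcc (fst e) (snd e)))" for e
  have finCh: "finite Ch" unfolding Ch_def using finG by auto
  have neCh: "Ch \<noteq> {}" unfolding Ch_def using e1 r11 by force
  define \<delta> where "\<delta> = Min (tt ` Ch)"
  have ttpos: "0 < tt e" if "e \<in> Ch" for e
  proof -
    obtain f v where e: "e = (f, v)" by (cases e)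
    have "(f, v) \<in> G y" "rcc f v \<noteq> 0" using that e unfolding Ch_def by auto
    then have "0 < y f v" "y f v < 1" "0 < lam f" using lam_pos unfolding G_iff by auto
    show ?thesis
    proof (cases "rcc f v > 0")
      case True
      then show ?thesis unfolding tt_def e using \<open>y f v < 1\<close> \<open>0 < lam f\<close> by (simp add: divide_pos_pos)
    next
      case False
      then have "0 < - rcc f v" using \<open>rcc f v \<noteq> 0\<close> by simp
      then have "0 < y f v * lam f / (- rcc f v)" using \<open>0 < y f v\<close> \<open>0 < lam f\<close>
        by (intro divide_pos_pos mult_pos_pos)
      then show ?thesis unfolding tt_def e using False by simp
    qed
  qed
  have dle: "\<delta> \<le> tt e" if "e \<in> Ch" for e unfolding \<delta>_def using finCh that by simp
  obtain es where es: "es \<in> Ch" "tt es = \<delta>" unfolding \<delta>_def using finCh neCh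
    by (metis (mono_tags, lifting) Min_in finite_imageI image_iff image_is_empty)
  have dpos: "0 < \<delta>" using ttpos[OF es(1)] es(2) by simp
  define y' where "y' = (\<lambda>f v. y f v + \<delta> * (rate_change p1 1 f v + rate_change p2 (-1) f v) / lam f)"
  have y'r: "y' f v = y f v + \<delta> * rcc f v / lam f" for f v unfolding y'_def rcc_def by simp
  have rng: "0 \<le> y' f v \<and> y' f v \<le> 1" if fv: "(f, v) \<in> G y" for f v
  proof -
    have yb: "0 < y f v" "y f v < 1" "0 < lam f" using fv lam_pos unfolding G_iff by auto
    consider (z) "rcc f v = 0" | (p) "rcc f v > 0" | (n) "rcc f v < 0" by linarith
    then show ?thesis
    proof cases
      case z then show ?thesis unfolding y'r using yb by simp
    next
      case p
      then have "(f, v) \<in> Ch" using fv unfolding Ch_def by auto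
      then have "\<delta> \<le> (1 - y f v) * lam f / rcc f v" using dle[of "(f, v)"] p unfolding tt_def by auto
      then have "\<delta> * rcc f v \<le> (1 - y f v) * lam f" using p by (simp add: le_divide_eq)
      then have "\<delta> * rcc f v / lam f \<le> (1 - y f v) * lam f / lam f"
        by (rule divide_right_mono) (use yb in simp)
      then have "\<delta> * rcc f v / lam f \<le> 1 - y f v" using yb by simp
      moreover have "0 \<le> \<delta> * rcc f v / lam f" using p dpos yb by simp
      ultimately show ?thesis unfolding y'r using yb by simp
    next
      case n
      then have "(f, v) \<in> Ch" using fv unfolding Ch_def by auto
      then have "\<delta> \<le> y f v * lam f / (- rcc f v)" using dle[of "(f, v)"] n unfolding tt_def by auto
      moreover have nr: "0 < - rcc f v" using n by simp
      ultimately have "\<delta> * (- rcc f v) \<le> y f v * lam f" using pos_le_divide_eq[OF nr] by blast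
      then have "\<delta> * (- rcc f v) / lam f \<le> y f v * lam f / lam f"
        by (rule divide_right_mono) (use yb in simp)
      then have A: "\<delta> * (- rcc f v) / lam f \<le> y f v" using yb by simp
      have "\<delta> * rcc f v \<le> 0" using n dpos by (simp add: mult_pos_neg less_imp_le)
      then have B: "\<delta> * rcc f v / lam f \<le> 0" using yb by (simp add: divide_nonpos_pos)
      have eq: "\<delta> * (- rcc f v) / lam f = - (\<delta> * rcc f v / lam f)" by simp
      show ?thesis unfolding y'r using A B eq yb by linarith
    qed
  qed
  have hit: "y' (fst es) (snd es) = 0 \<or> y' (fst es) (snd es) = 1"
  proof -
    obtain f v where e: "es = (f, v)" by (cases es)
    have fv: "(f, v) \<in> G y" "rcc f v \<noteq> 0" using es(1) e unfolding Ch_def by auto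
    have yb: "0 < lam f" using fv lam_pos unfolding G_iff by auto
    show ?thesis
    proof (cases "rcc f v > 0")
      case True
      then have "\<delta> = (1 - y f v) * lam f / rcc f v" using es(2) e unfolding tt_def by auto
      then have "y' f v = 1" unfolding y'r using True yb by (simp add: field_simps)
      then show ?thesis using e by simp
    next
      case False
      then have "\<delta> = y f v * lam f / (- rcc f v)" using es(2) e unfolding tt_def by auto
      then have "y' f v = 0" unfolding y'r using False fv(2) yb by (simp add: field_simps)
      then show ?thesis using e by simp
    qed
  qed
  define H where "H = {g. \<exists>v. (g, v) \<in> G y \<and> y' g v = 1}"
  define asg' where "asg' g = (if g \<in> H then Some (SOME v. (g, v) \<in> G y \<and> y' g v = 1) else asg g)" for g
  define y'' where "y'' = (\<lambda>g. if g \<in> H then (\<lambda>_. 0) else y' g)"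
  have ha: "\<forall>g. if g \<in> H then (\<exists>v. (g, v) \<in> G y \<and> y' g v = 1 \<and> asg' g = Some v) else asg' g = asg g"
  proof
    fix g
    show "if g \<in> H then (\<exists>v. (g, v) \<in> G y \<and> y' g v = 1 \<and> asg' g = Some v) else asg' g = asg g"
    proof (cases "g \<in> H")
      case True
      then have "\<exists>v. (g, v) \<in> G y \<and> y' g v = 1" unfolding H_def by auto
      then have "(g, SOME v. (g, v) \<in> G y \<and> y' g v = 1) \<in> G y \<and> y' g (SOME v. (g, v) \<in> G y \<and> y' g v = 1) = 1"
        by (rule someI_ex)
      then show ?thesis using True unfolding asg'_def by auto
    next
      case False then show ?thesis unfolding asg'_def by simp
    qed
  qed
  have rngc: "\<forall>(f, v)\<in>G y. 0 \<le> y' f v \<and> y' f v \<le> 1" using rng by auto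
  have hitc: "\<exists>(f, v)\<in>G y. y' f v = 0 \<or> y' f v = 1"
    using hit es(1) unfolding Ch_def by (cases es) auto
  have st: "mca1_step F lam pth U (asg, y) (asg', y'')"
    by (rule mca1_step.step2[OF nl e1 e2(1) e2(2)[symmetric] lp1 lp2 dpos y'_def rngc hitc H_def ha y''_def])
  have pres: "Inv asg' y'' \<and> G y'' \<subseteq> G y"
    by (rule step2_pres[OF I nl lp1 lp2 dpos y'_def rngc H_def ha y''_def])
  have "es \<notin> G y''"
  proof -
    obtain f v where e: "es = (f, v)" by (cases es)
    have "(f, v) \<in> G y" using es(1) e unfolding Ch_def by auto
    then have "y'' f v = 0 \<or> y'' f v = 1 \<and> f \<notin> H \<or> f \<in> H"
      using hit e unfolding y''_def by auto
    moreover have "f \<in> H \<Longrightarrow> y'' f v = 0" unfolding y''_def by simp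
    moreover have "y' f v = 1 \<Longrightarrow> f \<in> H" using \<open>(f, v) \<in> G y\<close> unfolding H_def by auto
    ultimately have "y'' f v = 0" using hit e unfolding y''_def by auto
    then have "(f, v) \<notin> G y''" unfolding G_iff by simp
    then show ?thesis using e by simp
  qed
  then have "G y'' \<subset> G y" using pres es(1) unfolding Ch_def by auto
  then have "card (G y'') < card (G y)" using finG by (rule psubset_card_mono[rotated])
  then show ?thesis using st by blast
qed

lemma run_exists:
  assumes I: "Inv asg y"
  shows "\<exists>asg2 y2. (mca1_step F lam pth U)\<^sup>*\<^sup>* (asg, y) (asg2, y2) \<and> G y2 = {}"
  using I
proof (induction "card (G y)" arbitrary: asg y rule: less_induct)
  case less
  show ?case
  proof (cases "G y = {}")
    case True then show ?thesis by blast
  next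
    case False
    obtain asg' y' where st: "mca1_step F lam pth U (asg, y) (asg', y')" and c: "card (G y') < card (G y)"
      using step_exists[OF less.prems False] by blast
    have I': "Inv asg' y'" using step_pres[OF st less.prems] by blast
    obtain asg2 y2 where "(mca1_step F lam pth U)\<^sup>*\<^sup>* (asg', y') (asg2, y2)" "G y2 = {}"
      using less.hyps[OF c I'] by blast
    then show ?thesis using st by (meson converse_rtranclp_into_rtranclp)
  qed
qed

end


context mca begin

definition xa :: "('b \<Rightarrow> 'a option) \<Rightarrow> 'b \<Rightarrow> 'a \<Rightarrow> real" where
  "xa asg = (\<lambda>f v. if f \<in> F \<and> asg f = Some v then lam f else 0)"

definition Q2inv :: "('b \<Rightarrow> 'a option) \<Rightarrow> ('b \<Rightarrow> 'a \<Rightarrow> real) \<times> 'b set \<Rightarrow> bool" where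
  "Q2inv asg s \<longleftrightarrow> (let x = fst s; T = snd s in
     (\<forall>f\<in>F. \<forall>v\<in>V. 0 \<le> x f v) \<and> (\<forall>v\<in>U. (\<Sum>f\<in>F. x f v) \<le> cap v) \<and>
     (\<forall>f\<in>F. \<forall>v\<in>V. v \<notin> U \<inter> pth f \<longrightarrow> x f v = 0) \<and> T \<subseteq> F \<and>
     (\<forall>f\<in>T. asg f = None \<and> (\<forall>v. x f v = 0)) \<and>
     (\<forall>f\<in>F. asg f \<noteq> None \<longrightarrow> (\<forall>v. x f v = xa asg f v)))"

lemma Q2_init:
  assumes I: "Inv asg y"
  shows "Q2inv asg (xa asg, {f\<in>F. asg f = None})"
proof -
  have cap: "(\<Sum>f\<in>F. xa asg f v) \<le> cap v" if v: "v \<in> U" for v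
  proof -
    have "(\<Sum>f\<in>F. xa asg f v) = ar asg v" unfolding xa_def ar_alt by (intro sum.cong) auto
    then show ?thesis using Inv_cap[OF I v] by simp
  qed
  have sup: "xa asg f v = 0" if "f \<in> F" "v \<in> V" "v \<notin> U \<inter> pth f" for f v
    using that Inv_D(1)[OF I] unfolding xa_def by auto
  show ?thesis unfolding Q2inv_def Let_def using cap sup lam_pos
    by (auto simp: xa_def intro: less_imp_le)
qed

lemma Q2_step:
  assumes st: "mca2_step F lam pth cap U s s'" and Q: "Q2inv asg s"
  shows "Q2inv asg s'"
  using st
proof (cases rule: mca2_step.cases)
  case (assign f T x sv)
  have Q': "(\<forall>f\<in>F. \<forall>v\<in>V. 0 \<le> x f v)" "(\<forall>v\<in>U. (\<Sum>f\<in>F. x f v) \<le> cap v)"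
     "(\<forall>f\<in>F. \<forall>v\<in>V. v \<notin> U \<inter> pth f \<longrightarrow> x f v = 0)" "T \<subseteq> F"
     "(\<forall>f\<in>T. asg f = None \<and> (\<forall>v. x f v = 0))" "(\<forall>f\<in>F. asg f \<noteq> None \<longrightarrow> (\<forall>v. x f v = xa asg f v))"
    using Q assign(1) unfolding Q2inv_def Let_def by auto
  have fT: "f \<in> T" using assign by auto
  have fF: "f \<in> F" using Q'(4) fT by auto
  have x0: "\<forall>v. x f v = 0" using Q'(5) fT by auto
  have ld: "(\<Sum>g\<in>F. (x(f := sv)) g v) = (\<Sum>g\<in>F. x g v) + sv v" for v
  proof -
    have "(\<Sum>g\<in>F. (x(f := sv)) g v) = (\<Sum>g\<in>F. x g v + (if g = f then sv v else 0))"
      using x0 by (intro sum.cong) auto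
    also have "\<dots> = (\<Sum>g\<in>F. x g v) + sv v" using fF finF by (simp add: sum.distrib sum.delta)
    finally show ?thesis .
  qed
  have "Q2inv asg (x(f := sv), T - {f})"
    unfolding Q2inv_def Let_def fst_conv snd_conv
  proof (intro conjI ballI impI allI)
    fix g v assume "g \<in> F" "v \<in> V"
    then show "0 \<le> (x(f := sv)) g v" using Q'(1) assign by (cases "v \<in> U \<inter> pth f") auto
  next
    fix v assume v: "v \<in> U"
    show "(\<Sum>g\<in>F. (x(f := sv)) g v) \<le> cap v"
    proof (cases "v \<in> pth f")
      case True
      then have "sv v \<le> remaining_cap F cap x v" using assign v by auto
      then show ?thesis unfolding ld remaining_cap_def by simp
    next
      case False
      then have "sv v = 0" using assign by auto
      then show ?thesis unfolding ld using Q'(2) v by simp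
    qed
  next
    fix g v assume "g \<in> F" "v \<in> V" "v \<notin> U \<inter> pth g"
    then show "(x(f := sv)) g v = 0" using Q'(3) assign by auto
  next
    show "T - {f} \<subseteq> F" using Q'(4) by auto
  next
    fix g assume "g \<in> T - {f}"
    then show "asg g = None" using Q'(5) by auto
  next
    fix g v assume "g \<in> T - {f}"
    then show "(x(f := sv)) g v = 0" using Q'(5) by auto
  next
    fix g v assume g: "g \<in> F" "asg g \<noteq> None"
    then have "g \<noteq> f" using Q'(5) fT by auto
    then show "(x(f := sv)) g v = xa asg g v" using Q'(6) g by auto
  qed
  then show ?thesis using assign by simp
next
  case (skip f T x)
  then show ?thesis using Q unfolding Q2inv_def Let_def by auto
qed

lemma Q2_steps:
  assumes "(mca2_step F lam pth cap U)\<^sup>*\<^sup>* s s'" and "Q2inv asg s"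
  shows "Q2inv asg s'"
  using assms by (induction rule: rtranclp_induct) (auto intro: Q2_step)

lemma Q2_exists:
  assumes Q: "Q2inv asg (x, T)"
  shows "\<exists>x'. (mca2_step F lam pth cap U)\<^sup>*\<^sup>* (x, T) (x', {})"
  using Q
proof (induction "card T" arbitrary: x T rule: less_induct)
  case less
  have TF: "T \<subseteq> F" using less.prems unfolding Q2inv_def Let_def by auto
  have finT: "finite T" using TF finF finite_subset by blast
  show ?case
  proof (cases "T = {}")
    case True then show ?thesis by blast
  next
    case False
    then obtain f where fT: "f \<in> T" by auto
    have fF: "f \<in> F" using TF fT by auto
    have cT: "card (T - {f}) < card T" using fT finT by (intro psubset_card_mono) auto
    have remnn: "0 \<le> remaining_cap F cap x v" if "v \<in> U" for v
      using less.prems that unfolding Q2inv_def Let_def remaining_cap_def by auto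
    define S where "S = (\<Sum>v\<in>U \<inter> pth f. remaining_cap F cap x v)"
    show ?thesis
    proof (cases "lam f \<le> S")
      case True
      have Spos: "0 < S" using True lam_pos[OF fF] by simp
      define sv where "sv v = (if v \<in> U \<inter> pth f then remaining_cap F cap x v * lam f / S else 0)" for v
      have ratio: "lam f / S \<le> 1" using True Spos by simp
      have sb: "\<forall>v\<in>U \<inter> pth f. 0 \<le> sv v \<and> sv v \<le> remaining_cap F cap x v"
      proof
        fix v assume v: "v \<in> U \<inter> pth f"
        have r: "0 \<le> remaining_cap F cap x v" using remnn v by auto
        have "remaining_cap F cap x v * (lam f / S) \<le> remaining_cap F cap x v * 1"
          using ratio r by (intro mult_left_mono) auto
        then show "0 \<le> sv v \<and> sv v \<le> remaining_cap F cap x v"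
          unfolding sv_def using v r Spos lam_pos[OF fF] by (simp add: mult.assoc)
      qed
      have s0: "\<forall>v. v \<notin> U \<inter> pth f \<longrightarrow> sv v = 0" unfolding sv_def by auto
      have ssum: "(\<Sum>v\<in>U \<inter> pth f. sv v) = lam f"
      proof -
        have "(\<Sum>v\<in>U \<inter> pth f. sv v) = (\<Sum>v\<in>U \<inter> pth f. remaining_cap F cap x v * (lam f / S))"
          unfolding sv_def by (intro sum.cong) auto
        also have "\<dots> = (\<Sum>v\<in>U \<inter> pth f. remaining_cap F cap x v) * (lam f / S)"
          by (rule sum_distrib_right[symmetric])
        also have "\<dots> = lam f" unfolding S_def[symmetric] using Spos by simp
        finally show ?thesis .
      qed
      have st: "mca2_step F lam pth cap U (x, T) (x(f := sv), T - {f})"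
      proof -
        have Sle: "lam f \<le> (\<Sum>v\<in>U \<inter> pth f. remaining_cap F cap x v)" using True unfolding S_def .
        show ?thesis
          by (rule mca2_step.assign[where F=F and lam=lam and pth=pth and cap=cap and U=U and x=x and T=T
                and f=f and s=sv, OF fT Sle sb s0 ssum])
      qed
      have Q': "Q2inv asg (x(f := sv), T - {f})" by (rule Q2_step[OF st less.prems])
      obtain x' where "(mca2_step F lam pth cap U)\<^sup>*\<^sup>* (x(f := sv), T - {f}) (x', {})"
        using less.hyps[OF cT Q'] by blast
      then show ?thesis using st by (meson converse_rtranclp_into_rtranclp)
    next
      case False
      have st: "mca2_step F lam pth cap U (x, T) (x, T - {f})"
        by (rule mca2_step.skip[where F=F and lam=lam and pth=pth and cap=cap and U=U and x=x and T=T
                and f=f, OF fT]) (use False S_def in simp)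
      have Q': "Q2inv asg (x, T - {f})" by (rule Q2_step[OF st less.prems])
      obtain x' where "(mca2_step F lam pth cap U)\<^sup>*\<^sup>* (x, T - {f}) (x', {})"
        using less.hyps[OF cT Q'] by blast
      then show ?thesis using st by (meson converse_rtranclp_into_rtranclp)
    qed
  qed
qed

lemma J1_ge:
  assumes I: "Inv asg y" and Q: "Q2inv asg (x, T)"
  shows "Asg asg \<le> J1 F lam pth U x"
  unfolding Asg_def J1_def
proof (rule sum_mono)
  fix f assume f: "f \<in> F"
  show "(if asg f \<noteq> None then lam f else 0) \<le> lam f * (if lam f \<le> (\<Sum>v\<in>pth f \<inter> U. x f v) then 1 else 0)"
  proof (cases "asg f")
    case None then show ?thesis using lam_pos[OF f] by simp
  next
    case (Some v)
    have v: "v \<in> U" "v \<in> pth f" using Inv_D(1)[OF I f Some] by auto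
    have xr: "\<forall>w. x f w = xa asg f w" using Q f Some unfolding Q2inv_def Let_def by auto
    have "(\<Sum>w\<in>pth f \<inter> U. x f w) = (\<Sum>w\<in>pth f \<inter> U. if w = v then lam f else 0)"
      using xr f Some unfolding xa_def by (intro sum.cong) auto
    also have "\<dots> = lam f" using v finUU by (simp add: sum.delta)
    finally show ?thesis using Some by simp
  qed
qed

lemma MCA_props:
  assumes M: "MCA V F lam pth cap U x"
  shows "(\<forall>f\<in>F. \<forall>v\<in>V. 0 \<le> x f v) \<and> (\<forall>v\<in>U. (\<Sum>f\<in>F. x f v) \<le> cap v) \<and>
         (\<forall>f\<in>F. \<forall>v\<in>V - U. x f v = 0) \<and> R U \<le> 2 * J1 F lam pth U x"
proof -
  obtain x0 y0 asg0 y1 asg y where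
    ob: "optimal_basic_Q2 V F lam pth cap U x0" and y0: "y0 = (\<lambda>f v. x0 f v / lam f)"
    and a0: "\<forall>f. if f \<in> F \<and> (\<exists>v\<in>U \<inter> pth f. y0 f v = 1)
             then (\<exists>v\<in>U \<inter> pth f. y0 f v = 1 \<and> asg0 f = Some v)
             else asg0 f = None"
    and y1: "y1 = (\<lambda>f. if asg0 f \<noteq> None then (\<lambda>_. 0) else y0 f)"
    and r1: "(mca1_step F lam pth U)\<^sup>*\<^sup>* (asg0, y1) (asg, y)"
    and G0: "G y = {}"
    and r2: "(mca2_step F lam pth cap U)\<^sup>*\<^sup>*
           (\<lambda>f v. if f \<in> F \<and> asg f = Some v then lam f else 0, {f\<in>F. asg f = None}) (x, {})"
    using M unfolding MCA_def by blast
  have xb: "basic U x0" and opt: "obj U x0 = R U" using ob unfolding optimal_basic_Q2_def by auto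
  have I0: "Inv asg0 y1" by (rule Inv_init[OF xb opt y0 a0 y1])
  have I: "Inv asg y" using steps_pres[OF r1] I0 by simp
  have RA: "R U \<le> 2 * Asg asg" by (rule Inv_final[OF I G0])
  have Qi: "Q2inv asg (xa asg, {f\<in>F. asg f = None})" by (rule Q2_init[OF I])
  have "xa asg = (\<lambda>f v. if f \<in> F \<and> asg f = Some v then lam f else 0)" unfolding xa_def ..
  then have Qf: "Q2inv asg (x, {})" using Q2_steps[OF r2] Qi by simp
  have J: "Asg asg \<le> J1 F lam pth U x" by (rule J1_ge[OF I Qf])
  have "(\<forall>f\<in>F. \<forall>v\<in>V. 0 \<le> x f v) \<and> (\<forall>v\<in>U. (\<Sum>f\<in>F. x f v) \<le> cap v) \<and> (\<forall>f\<in>F. \<forall>v\<in>V - U. x f v = 0)"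
    using Qf unfolding Q2inv_def Let_def by auto
  then show ?thesis using RA J by linarith
qed

lemma MCA_exists: "\<exists>x. MCA V F lam pth cap U x"
proof -
  obtain x0 where xb: "basic U x0" and opt: "obj U x0 = R U" using opt_basic_exists[OF UV] by blast
  define y0 where "y0 = (\<lambda>f v. x0 f v / lam f)"
  define asg0 where "asg0 f = (if f \<in> F \<and> (\<exists>v\<in>U \<inter> pth f. y0 f v = 1)
      then Some (SOME v. v \<in> U \<inter> pth f \<and> y0 f v = 1) else None)" for f
  have a0: "\<forall>f. if f \<in> F \<and> (\<exists>v\<in>U \<inter> pth f. y0 f v = 1)
             then (\<exists>v\<in>U \<inter> pth f. y0 f v = 1 \<and> asg0 f = Some v)
             else asg0 f = None"
  proof
    fix f
    show "if f \<in> F \<and> (\<exists>v\<in>U \<inter> pth f. y0 f v = 1)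
             then (\<exists>v\<in>U \<inter> pth f. y0 f v = 1 \<and> asg0 f = Some v)
             else asg0 f = None"
    proof (cases "f \<in> F \<and> (\<exists>v\<in>U \<inter> pth f. y0 f v = 1)")
      case True
      then have "\<exists>v. v \<in> U \<inter> pth f \<and> y0 f v = 1" by auto
      then have "(SOME v. v \<in> U \<inter> pth f \<and> y0 f v = 1) \<in> U \<inter> pth f \<and> y0 f (SOME v. v \<in> U \<inter> pth f \<and> y0 f v = 1) = 1"
        by (rule someI_ex)
      then show ?thesis using True unfolding asg0_def by auto
    next
      case False then show ?thesis unfolding asg0_def by simp
    qed
  qed
  define y1 where "y1 = (\<lambda>f. if asg0 f \<noteq> None then (\<lambda>_. 0) else y0 f)"
  have I0: "Inv asg0 y1" by (rule Inv_init[OF xb opt y0_def a0 y1_def])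
  obtain asg y where r1: "(mca1_step F lam pth U)\<^sup>*\<^sup>* (asg0, y1) (asg, y)" and G0: "G y = {}"
    using run_exists[OF I0] by blast
  have I: "Inv asg y" using steps_pres[OF r1] I0 by simp
  have Qi: "Q2inv asg (xa asg, {f\<in>F. asg f = None})" by (rule Q2_init[OF I])
  obtain x where r2: "(mca2_step F lam pth cap U)\<^sup>*\<^sup>* (xa asg, {f\<in>F. asg f = None}) (x, {})"
    using Q2_exists[OF Qi] by blast
  have ob: "optimal_basic_Q2 V F lam pth cap U x0" unfolding optimal_basic_Q2_def using xb opt by simp
  have "MCA V F lam pth cap U x"
    unfolding MCA_def
    by (rule exI[of _ x0], rule exI[of _ y0], rule exI[of _ asg0], rule exI[of _ y1], rule exI[of _ asg],
        rule exI[of _ y]) (use ob y0_def a0 y1_def r1 G0 r2 in \<open>simp add: xa_def\<close>)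
  then show ?thesis by blast
qed

end


context net begin

lemma J1_le_R:
  assumes fp: "feasible_P1 V F cap cost B U' x'"
  shows "J1 F lam pth U' x' \<le> R U'"
proof -
  have U': "U' \<subseteq> V" and xn: "\<forall>f\<in>F. \<forall>v\<in>V. 0 \<le> x' f v" and xc: "\<forall>v\<in>U'. (\<Sum>f\<in>F. x' f v) \<le> cap v"
    using fp unfolding feasible_P1_def by auto
  define S where "S f = (\<Sum>w\<in>pth f \<inter> U'. x' f w)" for f
  define C where "C f = (f \<in> F \<and> lam f \<le> S f)" for f
  define z where "z f v = (if C f \<and> v \<in> U' \<inter> pth f then x' f v * lam f / S f else 0)" for f v
  have Spos: "C f \<Longrightarrow> 0 < S f" for f unfolding C_def using lam_pos by force
  have zle: "z f v \<le> x' f v" if "f \<in> F" "v \<in> V" for f v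
  proof (cases "C f \<and> v \<in> U' \<inter> pth f")
    case True
    have r: "lam f / S f \<le> 1" using True Spos[of f] unfolding C_def by simp
    have "x' f v * (lam f / S f) \<le> x' f v * 1" using xn that r by (intro mult_left_mono) auto
    then show ?thesis unfolding z_def using True by simp
  next
    case False then show ?thesis unfolding z_def using xn that by auto
  qed
  have znn: "0 \<le> z f v" if "f \<in> F" "v \<in> V" for f v
  proof (cases "C f \<and> v \<in> U' \<inter> pth f")
    case True
    have "0 \<le> x' f v * lam f" using xn that lam_pos[OF that(1)] by simp
    then have "0 \<le> x' f v * lam f / S f" using Spos[of f] True by simp
    then show ?thesis unfolding z_def using True by simp
  next
    case False then have "z f v = 0" unfolding z_def by auto
    then show ?thesis by simp
  qed
  have zsum: "(\<Sum>v\<in>U'. z f v) = (if C f then lam f else 0)" for f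
  proof (cases "C f")
    case True
    have "(\<Sum>v\<in>U'. z f v) = (\<Sum>v\<in>pth f \<inter> U'. x' f v * (lam f / S f))"
    proof -
      have "(\<Sum>v\<in>U'. z f v) = (\<Sum>v\<in>pth f \<inter> U'. z f v)"
        unfolding z_def using finU[OF U'] by (intro sum.mono_neutral_right) auto
      also have "\<dots> = (\<Sum>v\<in>pth f \<inter> U'. x' f v * (lam f / S f))"
        unfolding z_def using True by (intro sum.cong) auto
      finally show ?thesis .
    qed
    also have "\<dots> = S f * (lam f / S f)" unfolding S_def by (rule sum_distrib_right[symmetric])
    also have "\<dots> = lam f" using Spos[OF True] by simp
    finally show ?thesis using True by simp
  next
    case False then show ?thesis unfolding z_def by simp
  qed
  have fz: "feas U' z"
    unfolding feasible_Q2_def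
  proof (intro conjI ballI impI)
    fix f v assume "f \<in> F" "v \<in> V" then show "0 \<le> z f v" by (rule znn)
  next
    fix v assume v: "v \<in> U'"
    have "(\<Sum>f\<in>F. z f v) \<le> (\<Sum>f\<in>F. x' f v)" using zle v U' by (intro sum_mono) auto
    then show "(\<Sum>f\<in>F. z f v) \<le> cap v" using xc v by auto
  next
    fix f v assume "f \<in> F" "v \<in> V" "v \<notin> U' \<inter> pth f" then show "z f v = 0" unfolding z_def by auto
  next
    fix f assume f: "f \<in> F" then show "(\<Sum>v\<in>U'. z f v) \<le> lam f" unfolding zsum using lam_pos[OF f] by simp
  qed
  have "J1 F lam pth U' x' = obj U' z"
    unfolding J1_def Q2_obj_def
  proof (rule sum.cong[OF refl])
    fix f assume f: "f \<in> F"
    have "(\<Sum>v\<in>pth f \<inter> U'. z f v) = (\<Sum>v\<in>U'. z f v)"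
      unfolding z_def using finU[OF U'] by (intro sum.mono_neutral_left) auto
    then show "lam f * (if lam f \<le> (\<Sum>v\<in>pth f \<inter> U'. x' f v) then 1 else 0) = (\<Sum>v\<in>pth f \<inter> U'. z f v)"
      unfolding zsum C_def S_def using f by simp
  qed
  also have "\<dots> \<le> R U'" by (rule R_upper[OF U' fz])
  finally show ?thesis .
qed

end

theorem theorem2:
  fixes V :: "'v set" and F :: "'f set" and lam :: "'f \<Rightarrow> real" and pth :: "'f \<Rightarrow> 'v set"
    and cap :: "'v \<Rightarrow> real" and cost :: "'v \<Rightarrow> real" and B :: real
  assumes "finite V" and "finite F"
    and "\<forall>f\<in>F. 0 < lam f" and "\<forall>f\<in>F. pth f \<subseteq> V"
    and "\<forall>v\<in>V. 0 < cap v" and "\<forall>v\<in>V. 0 < cost v"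
    and "0 \<le> B"
    and "\<forall>f\<in>F. \<forall>v\<in>V. lam f \<le> cap v"
  shows "(\<exists>U x. RP_MCA V F lam pth cap cost B U x) \<and>
         (\<forall>U x. RP_MCA V F lam pth cap cost B U x \<longrightarrow>
            feasible_P1 V F cap cost B U x \<and>
            J1 F lam pth U x \<ge> 1/2 * (1 - 1 / exp 1) * OPT_P1 V F lam pth cap cost B)"
proof -
  note as = assms
  interpret N: net V F lam pth cap
    by unfold_locales (use as in auto)
  have cpos: "\<forall>v\<in>V. 0 < cost v" using as(6) .
  have B0: "0 \<le> B" using as(7) .
  have mcaI: "mca V F lam pth cap U" if "U \<subseteq> V" for U
    by (rule mca.intro[OF N.net_axioms]) (unfold_locales, use that as(8) in auto)
  have part1: "\<exists>U x. RP_MCA V F lam pth cap cost B U x"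
  proof -
    obtain U where pl: "placement V F lam pth cap cost B U" using N.placement_exists[OF cpos] by blast
    have UV: "U \<subseteq> V" using N.placement_bound[OF cpos B0 pl] by blast
    obtain x where "MCA V F lam pth cap U x" using mca.MCA_exists[OF mcaI[OF UV]] by blast
    then show ?thesis using pl unfolding RP_MCA_def by blast
  qed
  have part2: "feasible_P1 V F cap cost B U x \<and>
            J1 F lam pth U x \<ge> 1/2 * (1 - 1 / exp 1) * OPT_P1 V F lam pth cap cost B"
    if rp: "RP_MCA V F lam pth cap cost B U x" for U x
  proof -
    have pl: "placement V F lam pth cap cost B U" and M: "MCA V F lam pth cap U x"
      using rp unfolding RP_MCA_def by auto
    have PB: "U \<subseteq> V" "sum cost U \<le> B"
      "\<forall>Ob. Ob \<subseteq> V \<and> sum cost Ob \<le> B \<longrightarrow> (1 - exp (-1)) * R3 V F lam pth cap Ob \<le> R3 V F lam pth cap U"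
      using N.placement_bound[OF cpos B0 pl] by auto
    have MP: "(\<forall>f\<in>F. \<forall>v\<in>V. 0 \<le> x f v) \<and> (\<forall>v\<in>U. (\<Sum>f\<in>F. x f v) \<le> cap v) \<and>
         (\<forall>f\<in>F. \<forall>v\<in>V - U. x f v = 0) \<and> R3 V F lam pth cap U \<le> 2 * J1 F lam pth U x"
      using mca.MCA_props[OF mcaI[OF PB(1)] M] .
    have feas: "feasible_P1 V F cap cost B U x" unfolding feasible_P1_def using PB MP by blast
    define c where "c = 1 - exp (-1::real)"
    have c: "c = 1 - 1 / exp 1" unfolding c_def by (simp add: exp_minus inverse_eq_divide)
    have cpos': "0 < c" unfolding c_def by simp
    have ub: "s \<le> 2 * J1 F lam pth U x / c" if s: "s \<in> {J1 F lam pth U' x' | U' x'. feasible_P1 V F cap cost B U' x'}" for s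
    proof -
      obtain U' x' where sx: "s = J1 F lam pth U' x'" and fp: "feasible_P1 V F cap cost B U' x'" using s by blast
      have U'V: "U' \<subseteq> V" "sum cost U' \<le> B" using fp unfolding feasible_P1_def by auto
      have "s \<le> R3 V F lam pth cap U'" using N.J1_le_R[OF fp] sx by simp
      then have "c * s \<le> c * R3 V F lam pth cap U'" using cpos' by simp
      also have "\<dots> \<le> R3 V F lam pth cap U" using PB(3) U'V unfolding c_def by blast
      also have "\<dots> \<le> 2 * J1 F lam pth U x" using MP by simp
      finally show ?thesis using cpos' by (simp add: field_simps)
    qed
    have ne: "{J1 F lam pth U' x' | U' x'. feasible_P1 V F cap cost B U' x'} \<noteq> {}"
    proof -
      have "feasible_P1 V F cap cost B {} (\<lambda>f v. 0)" unfolding feasible_P1_def using B0 by simp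
      then show ?thesis by blast
    qed
    have "OPT_P1 V F lam pth cap cost B \<le> 2 * J1 F lam pth U x / c"
      unfolding OPT_P1_def by (rule cSup_least[OF ne ub])
    then have "c / 2 * OPT_P1 V F lam pth cap cost B \<le> c / 2 * (2 * J1 F lam pth U x / c)"
      using cpos' by (intro mult_left_mono) auto
    also have "\<dots> = J1 F lam pth U x" using cpos' by simp
    finally have "1/2 * c * OPT_P1 V F lam pth cap cost B \<le> J1 F lam pth U x" by simp
    then show ?thesis using feas unfolding c by simp
  qed
  show ?thesis using part1 part2 by blast
qed


end
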